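(* Let $l:R\to S$ be a Frobenius extension of two-sided Noetherian rings such that ${}_RS_R$ is centrally projective over $R$, and let ${}_R\omega$ be a Wakamatsu tilting left $R$-module. Put $T=\mathrm{End}_R(\omega)$ and $\Gamma=\mathrm{End}_S(S\otimes_R\omega)$, and let $\rho:T\to\Gamma$ be the ring homomorphism given by $\rho(f)(s\otimes w)=s\otimes (w\cdot f)$ for $f\in T$, $s\in S$, $w\in\omega$. If the projective dimension of the right $T$-module $\omega_T$ is finite, then $\rho:T\to\Gamma$ is a Frobenius extension, i.e. ${}_T\Gamma$ is finitely generated projective and ${}_\Gamma\Gamma_T\cong\mathrm{Hom}_T({}_T\Gamma_\Gamma,{}_TT_T)$ as $\Gamma$-$T$-bimodules.
   Context: All modules are finitely generated left modules unless stated otherwise; endomorphisms of a left module act on the right, so $\omega$ is an $R$-$T$-bimodule. A ring extension $S/R$ is a unital ring homomorphism $l:R\to S$; $S$ is an $R$-$R$-bimodule via $l$. $S/R$ is a Frobenius extension if ${}_RS$ is finitely generated projective and ${}_SS_R\cong \mathrm{Hom}_R({}_RS_S,{}_RR_R)$ as $S$-$R$-bimodules. ${}_RS_R$ is centrally projective over $R$ if it is isomorphic as an $R$-$R$-bimodule to a direct summand of a finite direct sum of copies of ${}_RR_R$. For a module $W$ over a ring $A$, $\mathrm{add}\,W$ is the class of direct summands of finite direct sums of copies of $W$; a map $g:N\to C$ with $C\in\mathrm{add}\,W$ is a left $\mathrm{add}\,W$-approximation if every map $N\to X$, $X\in\mathrm{add}\,W$, factors through $g$. $\mathrm{fadim}_AW\ge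 n$ means there is an exact sequence $0\to A\xrightarrow{f_1}W_1\to\cdots\xrightarrow{f_n}W_n$ with $W_i\in\mathrm{add}\,W$ and each $\mathrm{Im}f_i\to W_i$ a left $\mathrm{add}\,W$-approximation; $\mathrm{fadim}_AW=\infty$ if this holds for all $n$. $W$ is Wakamatsu tilting if $\mathrm{Ext}^i_A(W,W)=0$ for all $i\ge1$ and $\mathrm{fadim}_AW=\infty$. *)

theory Defs
  imports "HOL-Algebra.Ring"
begin

record ('a, 'm) lmod =
  mcar :: "'m set"
  madd :: "'m \<Rightarrow> 'm \<Rightarrow> 'm"
  mzero :: 'm
  msmul :: "'a \<Rightarrow> 'm \<Rightarrow> 'm"

definition is_lmod :: "'a ring \<Rightarrow> ('a, 'm) lmod \<Rightarrow> bool" where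
  "is_lmod A M \<longleftrightarrow> ring A \<and>
     (\<forall>x\<in>mcar M. \<forall>y\<in>mcar M. madd M x y \<in> mcar M) \<and>
     (\<forall>x\<in>mcar M. \<forall>y\<in>mcar M. \<forall>z\<in>mcar M. madd M (madd M x y) z = madd M x (madd M y z)) \<and>
     (\<forall>x\<in>mcar M. \<forall>y\<in>mcar M. madd M x y = madd M y x) \<and>
     mzero M \<in> mcar M \<and>
     (\<forall>x\<in>mcar M. madd M (mzero M) x = x) \<and>
     (\<forall>x\<in>mcar M. \<exists>y\<in>mcar M. madd M x y = mzero M) \<and>
     (\<forall>a\<in>carrier A. \<forall>x\<in>mcar M. msmul M a x \<in> mcar M) \<and>
     (\<forall>a\<in>carrier A. \<forall>x\<in>mcar M. \<forall>y\<in>mcar M. msmul M a (madd M x y) = madd M (msmul M a x) (msmul M a y)) \<and>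
     (\<forall>a\<in>carrier A. \<forall>b\<in>carrier A. \<forall>x\<in>mcar M. msmul M (a \<oplus>\<^bsub>A\<^esub> b) x = madd M (msmul M a x) (msmul M b x)) \<and>
     (\<forall>a\<in>carrier A. \<forall>b\<in>carrier A. \<forall>x\<in>mcar M. msmul M (a \<otimes>\<^bsub>A\<^esub> b) x = msmul M a (msmul M b x)) \<and>
     (\<forall>x\<in>mcar M. msmul M \<one>\<^bsub>A\<^esub> x = x)"

text \<open>A-linear maps, extensional on the source carrier (so that equality of maps is meaningful).\<close>
definition lin :: "'a ring \<Rightarrow> ('a, 'm) lmod \<Rightarrow> ('a, 'n) lmod \<Rightarrow> ('m \<Rightarrow> 'n) \<Rightarrow> bool" where
  "lin A M N f \<longleftrightarrow> f \<in> mcar M \<rightarrow> mcar N \<and> f \<in> extensional (mcar M) \<and>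
     (\<forall>x\<in>mcar M. \<forall>y\<in>mcar M. f (madd M x y) = madd N (f x) (f y)) \<and>
     (\<forall>a\<in>carrier A. \<forall>x\<in>mcar M. f (msmul M a x) = msmul N a (f x))"

definition regmod :: "'a ring \<Rightarrow> ('a, 'a) lmod" where
  "regmod A = \<lparr>mcar = carrier A, madd = (\<lambda>x y. x \<oplus>\<^bsub>A\<^esub> y), mzero = \<zero>\<^bsub>A\<^esub>,
               msmul = (\<lambda>a x. a \<otimes>\<^bsub>A\<^esub> x)\<rparr>"

definition freemod :: "'a ring \<Rightarrow> nat \<Rightarrow> ('a, nat \<Rightarrow> 'a) lmod" where
  "freemod A n = \<lparr>mcar = {v. (\<forall>i<n. v i \<in> carrier A) \<and> (\<forall>i\<ge>n. v i = \<zero>\<^bsub>A\<^esub>)},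
     madd = (\<lambda>v w i. if i < n then v i \<oplus>\<^bsub>A\<^esub> w i else \<zero>\<^bsub>A\<^esub>),
     mzero = (\<lambda>i. \<zero>\<^bsub>A\<^esub>),
     msmul = (\<lambda>a v i. if i < n then a \<otimes>\<^bsub>A\<^esub> v i else \<zero>\<^bsub>A\<^esub>)\<rparr>"

definition freemod_rsmul :: "'a ring \<Rightarrow> nat \<Rightarrow> (nat \<Rightarrow> 'a) \<Rightarrow> 'a \<Rightarrow> (nat \<Rightarrow> 'a)" where
  "freemod_rsmul A n v r = (\<lambda>i. if i < n then v i \<otimes>\<^bsub>A\<^esub> r else \<zero>\<^bsub>A\<^esub>)"

definition freeon :: "'a ring \<Rightarrow> 'i set \<Rightarrow> ('a, 'i \<Rightarrow> 'a) lmod" where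
  "freeon A I = \<lparr>mcar = {v. finite {i. v i \<noteq> \<zero>\<^bsub>A\<^esub>} \<and> (\<forall>i\<in>I. v i \<in> carrier A) \<and> (\<forall>i. i \<notin> I \<longrightarrow> v i = \<zero>\<^bsub>A\<^esub>)},
     madd = (\<lambda>v w i. if i \<in> I then v i \<oplus>\<^bsub>A\<^esub> w i else \<zero>\<^bsub>A\<^esub>),
     mzero = (\<lambda>i. \<zero>\<^bsub>A\<^esub>),
     msmul = (\<lambda>a v i. if i \<in> I then a \<otimes>\<^bsub>A\<^esub> v i else \<zero>\<^bsub>A\<^esub>)\<rparr>"

definition powmod :: "('a, 'm) lmod \<Rightarrow> nat \<Rightarrow> ('a, nat \<Rightarrow> 'm) lmod" where
  "powmod M m = \<lparr>mcar = {x. (\<forall>i<m. x i \<in> mcar M) \<and> (\<forall>i\<ge>m. x i = mzero M)},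
     madd = (\<lambda>x y i. if i < m then madd M (x i) (y i) else mzero M),
     mzero = (\<lambda>i. mzero M),
     msmul = (\<lambda>a x i. if i < m then msmul M a (x i) else mzero M)\<rparr>"

definition submod :: "('a, 'm) lmod \<Rightarrow> 'm set \<Rightarrow> ('a, 'm) lmod" where
  "submod M U = M\<lparr>mcar := U\<rparr>"

definition mker :: "('m \<Rightarrow> 'n) \<Rightarrow> ('a, 'm) lmod \<Rightarrow> ('a, 'n) lmod \<Rightarrow> 'm set" where
  "mker f M N = {x \<in> mcar M. f x = mzero N}"

definition fin_gen :: "'a ring \<Rightarrow> ('a, 'm) lmod \<Rightarrow> bool" where
  "fin_gen A M \<longleftrightarrow> (\<exists>n p. lin A (freemod A n) M p \<and> p ` mcar (freemod A n) = mcar M)"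

definition fg_proj :: "'a ring \<Rightarrow> ('a, 'm) lmod \<Rightarrow> bool" where
  "fg_proj A M \<longleftrightarrow> (\<exists>n p s. lin A (freemod A n) M p \<and> lin A M (freemod A n) s \<and>
                        (\<forall>x\<in>mcar M. p (s x) = x))"

text \<open>Projective = direct summand of a free module (w.l.o.g. free on the underlying set).\<close>
definition projective :: "'a ring \<Rightarrow> ('a, 'm) lmod \<Rightarrow> bool" where
  "projective A M \<longleftrightarrow> (\<exists>p s. lin A (freeon A (mcar M)) M p \<and> lin A M (freeon A (mcar M)) s \<and>
                        (\<forall>x\<in>mcar M. p (s x) = x))"

definition opring :: "'a ring \<Rightarrow> 'a ring" where
  "opring A = A\<lparr>mult := (\<lambda>x y. y \<otimes>\<^bsub>A\<^esub> x)\<rparr>"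

text \<open>Endomorphism ring of a left module; endomorphisms act on the right, so
  the product \<open>f g\<close> is "first f, then g".\<close>
definition endring :: "'a ring \<Rightarrow> ('a, 'm) lmod \<Rightarrow> ('m \<Rightarrow> 'm) ring" where
  "endring A M = \<lparr>carrier = {f. lin A M M f},
     mult = (\<lambda>f g. \<lambda>x\<in>mcar M. g (f x)),
     one = (\<lambda>x\<in>mcar M. x),
     zero = (\<lambda>x\<in>mcar M. mzero M),
     add = (\<lambda>f g. \<lambda>x\<in>mcar M. madd M (f x) (g x))\<rparr>"

definition left_ideal :: "'a ring \<Rightarrow> 'a set \<Rightarrow> bool" where
  "left_ideal A I \<longleftrightarrow> I \<subseteq> carrier A \<and> \<zero>\<^bsub>A\<^esub> \<in> I \<and>
     (\<forall>x\<in>I. \<forall>y\<in>I. x \<oplus>\<^bsub>A\<^esub> y \<in> I) \<and> (\<forall>x\<in>I. \<ominus>\<^bsub>A\<^esub> x \<in> I) \<and>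
     (\<forall>a\<in>carrier A. \<forall>x\<in>I. a \<otimes>\<^bsub>A\<^esub> x \<in> I)"

definition right_ideal :: "'a ring \<Rightarrow> 'a set \<Rightarrow> bool" where
  "right_ideal A I \<longleftrightarrow> I \<subseteq> carrier A \<and> \<zero>\<^bsub>A\<^esub> \<in> I \<and>
     (\<forall>x\<in>I. \<forall>y\<in>I. x \<oplus>\<^bsub>A\<^esub> y \<in> I) \<and> (\<forall>x\<in>I. \<ominus>\<^bsub>A\<^esub> x \<in> I) \<and>
     (\<forall>a\<in>carrier A. \<forall>x\<in>I. x \<otimes>\<^bsub>A\<^esub> a \<in> I)"

definition two_sided_noetherian :: "'a ring \<Rightarrow> bool" where
  "two_sided_noetherian A \<longleftrightarrow> ring A \<and>
     (\<forall>I :: nat \<Rightarrow> 'a set. (\<forall>n. left_ideal A (I n)) \<and> (\<forall>n. I n \<subseteq> I (Suc n)) \<longrightarrow>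
        (\<exists>N. \<forall>n\<ge>N. I n = I N)) \<and>
     (\<forall>I :: nat \<Rightarrow> 'a set. (\<forall>n. right_ideal A (I n)) \<and> (\<forall>n. I n \<subseteq> I (Suc n)) \<longrightarrow>
        (\<exists>N. \<forall>n\<ge>N. I n = I N))"

definition restr_mod :: "'a ring \<Rightarrow> 'b ring \<Rightarrow> ('a \<Rightarrow> 'b) \<Rightarrow> ('a, 'b) lmod" where
  "restr_mod A B l = \<lparr>mcar = carrier B, madd = (\<lambda>x y. x \<oplus>\<^bsub>B\<^esub> y), mzero = \<zero>\<^bsub>B\<^esub>,
                      msmul = (\<lambda>a x. l a \<otimes>\<^bsub>B\<^esub> x)\<rparr>"

text \<open>Frobenius extension: \<open>_AB\<close> f.g. projective and \<open>_BB_A \<cong> Hom_A(_AB_B, _AA_A)\<close>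
  as \<open>B\<close>-\<open>A\<close>-bimodules, where \<open>(b\<phi>a)(y) = \<phi>(y b) a\<close>.\<close>
definition frobenius_ext :: "'a ring \<Rightarrow> 'b ring \<Rightarrow> ('a \<Rightarrow> 'b) \<Rightarrow> bool" where
  "frobenius_ext A B l \<longleftrightarrow> ring A \<and> ring B \<and> l \<in> ring_hom A B \<and>
     fg_proj A (restr_mod A B l) \<and>
     (\<exists>\<psi>. bij_betw \<psi> (carrier B) {\<phi>. lin A (restr_mod A B l) (regmod A) \<phi>} \<and>
        (\<forall>x\<in>carrier B. \<forall>y\<in>carrier B.
            \<psi> (x \<oplus>\<^bsub>B\<^esub> y) = (\<lambda>z\<in>carrier B. \<psi> x z \<oplus>\<^bsub>A\<^esub> \<psi> y z)) \<and>
        (\<forall>s\<in>carrier B. \<forall>x\<in>carrier B. \<forall>r\<in>carrier A.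
            \<psi> (s \<otimes>\<^bsub>B\<^esub> x \<otimes>\<^bsub>B\<^esub> l r) = (\<lambda>y\<in>carrier B. \<psi> x (y \<otimes>\<^bsub>B\<^esub> s) \<otimes>\<^bsub>A\<^esub> r)))"

text \<open>\<open>_AB_A\<close> is a direct summand of \<open>A^n\<close> as an \<open>A\<close>-\<open>A\<close>-bimodule.\<close>
definition centrally_projective :: "'a ring \<Rightarrow> 'b ring \<Rightarrow> ('a \<Rightarrow> 'b) \<Rightarrow> bool" where
  "centrally_projective A B l \<longleftrightarrow> (\<exists>n p i.
     lin A (freemod A n) (restr_mod A B l) p \<and> lin A (restr_mod A B l) (freemod A n) i \<and>
     (\<forall>v\<in>mcar (freemod A n). \<forall>r\<in>carrier A. p (freemod_rsmul A n v r) = p v \<otimes>\<^bsub>B\<^esub> l r) \<and>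
     (\<forall>x\<in>carrier B. \<forall>r\<in>carrier A. i (x \<otimes>\<^bsub>B\<^esub> l r) = freemod_rsmul A n (i x) r) \<and>
     (\<forall>x\<in>carrier B. p (i x) = x))"

text \<open>A resolution of \<open>M\<close> by finitely generated free modules
  \<open>\<dots> \<rightarrow> A^{n 1} \<rightarrow>(d 0) A^{n 0} \<rightarrow>(\<epsilon>) M \<rightarrow> 0\<close>, with \<open>d k : A^{n (k+1)} \<rightarrow> A^{n k}\<close>.\<close>
definition fg_free_resolution :: "'a ring \<Rightarrow> ('a, 'm) lmod \<Rightarrow> (nat \<Rightarrow> nat) \<Rightarrow>
    (nat \<Rightarrow> (nat \<Rightarrow> 'a) \<Rightarrow> (nat \<Rightarrow> 'a)) \<Rightarrow> ((nat \<Rightarrow> 'a) \<Rightarrow> 'm) \<Rightarrow> bool" where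
  "fg_free_resolution A M n d \<epsilon> \<longleftrightarrow>
     lin A (freemod A (n 0)) M \<epsilon> \<and> \<epsilon> ` mcar (freemod A (n 0)) = mcar M \<and>
     (\<forall>k. lin A (freemod A (n (Suc k))) (freemod A (n k)) (d k)) \<and>
     mker \<epsilon> (freemod A (n 0)) M = d 0 ` mcar (freemod A (n 1)) \<and>
     (\<forall>k. mker (d k) (freemod A (n (Suc k))) (freemod A (n k)) =
          d (Suc k) ` mcar (freemod A (n (Suc (Suc k)))))"

text \<open>\<open>Ext^i_A(M,N) = 0\<close> for all \<open>i \<ge> 1\<close>: computed as the cohomology of
  \<open>Hom_A(P_\<bullet>, N)\<close> for a free resolution \<open>P_\<bullet>\<close> of \<open>M\<close> (the kernel of
  \<open>d_i^* : Hom(P_i,N) \<rightarrow> Hom(P_{i+1},N)\<close> equals the image of \<open>d_{i-1}^*\<close>);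
  required for every such resolution.\<close>
definition ext_vanish :: "'a ring \<Rightarrow> ('a, 'm) lmod \<Rightarrow> ('a, 'k) lmod \<Rightarrow> bool" where
  "ext_vanish A M N \<longleftrightarrow> (\<forall>n d \<epsilon>. fg_free_resolution A M n d \<epsilon> \<longrightarrow>
     (\<forall>i\<ge>1. \<forall>\<phi>. lin A (freemod A (n i)) N \<phi> \<and>
           (\<forall>x\<in>mcar (freemod A (n (Suc i))). \<phi> (d i x) = mzero N) \<longrightarrow>
         (\<exists>\<chi>. lin A (freemod A (n (i - 1))) N \<chi> \<and>
              (\<forall>x\<in>mcar (freemod A (n i)). \<phi> x = \<chi> (d (i - 1) x)))))"

definition in_add :: "'a ring \<Rightarrow> ('a, 'm) lmod \<Rightarrow> ('a, 'x) lmod \<Rightarrow> bool" where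
  "in_add A M X \<longleftrightarrow> is_lmod A X \<and> (\<exists>m p s. lin A (powmod M m) X p \<and> lin A X (powmod M m) s \<and>
                                 (\<forall>x\<in>mcar X. p (s x) = x))"

text \<open>Every module in \<open>add M\<close> is isomorphic to one with carrier in \<open>nat \<Rightarrow> 'm\<close>
  (a summand of \<open>M^m\<close>), so it suffices to test against those.\<close>
definition incl_left_add_approx :: "'a ring \<Rightarrow> ('a, 'm) lmod \<Rightarrow> ('a, 'x) lmod \<Rightarrow> 'x set \<Rightarrow> bool" where
  "incl_left_add_approx A M W U \<longleftrightarrow> in_add A M W \<and> U \<subseteq> mcar W \<and>
     (\<forall>X :: ('a, nat \<Rightarrow> 'm) lmod. in_add A M X \<longrightarrow>
        (\<forall>h. lin A (submod W U) X h \<longrightarrow>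
           (\<exists>h'. lin A W X h' \<and> (\<forall>x\<in>U. h' x = h x))))"

text \<open>\<open>fadim_A M \<ge> k\<close>: an exact sequence \<open>0 \<rightarrow> A \<rightarrow>(f0) W 1 \<rightarrow>(f 1) W 2 \<rightarrow> \<dots> \<rightarrow>(f (k-1)) W k\<close>
  with \<open>W i \<in> add M\<close> and each \<open>Im \<rightarrow> W i\<close> a left \<open>add M\<close>-approximation.
  (All modules of \<open>add M\<close> are realised, up to isomorphism, with carriers in \<open>nat \<Rightarrow> 'm\<close>.)\<close>
definition fadim_ge :: "'a ring \<Rightarrow> ('a, 'm) lmod \<Rightarrow> nat \<Rightarrow> bool" where
  "fadim_ge A M k \<longleftrightarrow> k = 0 \<or>
     (\<exists>(W :: nat \<Rightarrow> ('a, nat \<Rightarrow> 'm) lmod) f0 f.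
        lin A (regmod A) (W 1) f0 \<and> inj_on f0 (carrier A) \<and>
        incl_left_add_approx A M (W 1) (f0 ` carrier A) \<and>
        (\<forall>i. 1 \<le> i \<and> i < k \<longrightarrow>
           lin A (W i) (W (Suc i)) (f i) \<and>
           mker (f i) (W i) (W (Suc i)) = (if i = 1 then f0 ` carrier A else f (i - 1) ` mcar (W (i - 1))) \<and>
           incl_left_add_approx A M (W (Suc i)) (f i ` mcar (W i))))"

definition fadim_infinite :: "'a ring \<Rightarrow> ('a, 'm) lmod \<Rightarrow> bool" where
  "fadim_infinite A M \<longleftrightarrow> (\<forall>k. fadim_ge A M k)"

definition wakamatsu_tilting :: "'a ring \<Rightarrow> ('a, 'm) lmod \<Rightarrow> bool" where
  "wakamatsu_tilting A M \<longleftrightarrow> is_lmod A M \<and> fin_gen A M \<and> ext_vanish A M M \<and> fadim_infinite A M"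

text \<open>\<open>pd_A M \<le> k\<close>, witnessed by a projective resolution
  \<open>0 \<rightarrow> P k \<rightarrow> \<dots> \<rightarrow> P 1 \<rightarrow>(d 0) P 0 \<rightarrow>(\<epsilon>) M \<rightarrow> 0\<close> whose modules have carriers in type \<open>'p\<close>.\<close>
definition pd_le :: "'a ring \<Rightarrow> ('a, 'm) lmod \<Rightarrow> nat \<Rightarrow> (nat \<Rightarrow> ('a, 'p) lmod) \<Rightarrow>
    (nat \<Rightarrow> 'p \<Rightarrow> 'p) \<Rightarrow> ('p \<Rightarrow> 'm) \<Rightarrow> bool" where
  "pd_le A M k P d \<epsilon> \<longleftrightarrow>
     (\<forall>i\<le>k. is_lmod A (P i) \<and> projective A (P i)) \<and>
     lin A (P 0) M \<epsilon> \<and> \<epsilon> ` mcar (P 0) = mcar M \<and>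
     (\<forall>i<k. lin A (P (Suc i)) (P i) (d i)) \<and>
     mker \<epsilon> (P 0) M = (if k = 0 then {mzero (P 0)} else d 0 ` mcar (P 1)) \<and>
     (\<forall>i<k. mker (d i) (P (Suc i)) (P i) =
            (if Suc i = k then {mzero (P (Suc i))} else d (Suc i) ` mcar (P (Suc (Suc i)))))"

text \<open>A right \<open>T\<close>-module \<open>M\<close> with \<open>T \<subseteq> End(M)\<close> acting on the right (\<open>m\<cdot>f = f m\<close>),
  viewed as a left module over the opposite ring.\<close>
definition right_end_mod :: "'a ring \<Rightarrow> ('a, 'm) lmod \<Rightarrow> ('m \<Rightarrow> 'm, 'm) lmod" where
  "right_end_mod A M = \<lparr>mcar = mcar M, madd = madd M, mzero = mzero M, msmul = (\<lambda>f x. f x)\<rparr>"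

text \<open>Free abelian group on \<open>S \<times> \<omega>\<close>: finitely supported integer-valued functions.\<close>
definition tfree :: "'s ring \<Rightarrow> ('r, 'w) lmod \<Rightarrow> ('s \<times> 'w \<Rightarrow> int) set" where
  "tfree S W = {g. finite {x. g x \<noteq> 0} \<and> (\<forall>s w. g (s, w) \<noteq> 0 \<longrightarrow> s \<in> carrier S \<and> w \<in> mcar W)}"

definition tdelta :: "'s \<Rightarrow> 'w \<Rightarrow> ('s \<times> 'w \<Rightarrow> int)" where
  "tdelta s w = (\<lambda>x. if x = (s, w) then 1 else 0)"

definition tgens :: "'r ring \<Rightarrow> 's ring \<Rightarrow> ('r \<Rightarrow> 's) \<Rightarrow> ('r, 'w) lmod \<Rightarrow> ('s \<times> 'w \<Rightarrow> int) set" where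
  "tgens R S l W =
     {(\<lambda>x. tdelta (s \<oplus>\<^bsub>S\<^esub> s') w x - tdelta s w x - tdelta s' w x) | s s' w.
         s \<in> carrier S \<and> s' \<in> carrier S \<and> w \<in> mcar W} \<union>
     {(\<lambda>x. tdelta s (madd W w w') x - tdelta s w x - tdelta s w' x) | s w w'.
         s \<in> carrier S \<and> w \<in> mcar W \<and> w' \<in> mcar W} \<union>
     {(\<lambda>x. tdelta (s \<otimes>\<^bsub>S\<^esub> l r) w x - tdelta s (msmul W r w) x) | s r w.
         s \<in> carrier S \<and> r \<in> carrier R \<and> w \<in> mcar W}"

inductive_set trel :: "'r ring \<Rightarrow> 's ring \<Rightarrow> ('r \<Rightarrow> 's) \<Rightarrow> ('r, 'w) lmod \<Rightarrow> ('s \<times> 'w \<Rightarrow> int) set"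
  for R S l W where
  trel_zero: "(\<lambda>x. 0) \<in> trel R S l W"
| trel_gen: "g \<in> tgens R S l W \<Longrightarrow> g \<in> trel R S l W"
| trel_diff: "g \<in> trel R S l W \<Longrightarrow> h \<in> trel R S l W \<Longrightarrow> (\<lambda>x. g x - h x) \<in> trel R S l W"

definition tcoset :: "('s \<times> 'w \<Rightarrow> int) set \<Rightarrow> ('s \<times> 'w \<Rightarrow> int) \<Rightarrow> ('s \<times> 'w \<Rightarrow> int) set" where
  "tcoset N g = {(\<lambda>x. g x + h x) | h. h \<in> N}"

text \<open>Left action of \<open>s \<in> S\<close> on the free group: \<open>(u,w) \<mapsto> (s u, w)\<close>.\<close>
definition tact_S :: "'s ring \<Rightarrow> 's \<Rightarrow> ('s \<times> 'w \<Rightarrow> int) \<Rightarrow> ('s \<times> 'w \<Rightarrow> int)" where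
  "tact_S S s g = (\<lambda>(t, w). \<Sum>u\<in>{u. g (u, w) \<noteq> 0 \<and> s \<otimes>\<^bsub>S\<^esub> u = t}. g (u, w))"

text \<open>Action of \<open>f \<in> End(\<omega>)\<close> on the free group: \<open>(s,w) \<mapsto> (s, f w)\<close>.\<close>
definition tact_W :: "('w \<Rightarrow> 'w) \<Rightarrow> ('s \<times> 'w \<Rightarrow> int) \<Rightarrow> ('s \<times> 'w \<Rightarrow> int)" where
  "tact_W f g = (\<lambda>(s, w'). \<Sum>w\<in>{w. g (s, w) \<noteq> 0 \<and> f w = w'}. g (s, w))"

text \<open>The left \<open>S\<close>-module \<open>S \<otimes>_R \<omega>\<close> (elements are cosets of the relation subgroup).\<close>
definition tensor_mod :: "'r ring \<Rightarrow> 's ring \<Rightarrow> ('r \<Rightarrow> 's) \<Rightarrow> ('r, 'w) lmod \<Rightarrow>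
    ('s, ('s \<times> 'w \<Rightarrow> int) set) lmod" where
  "tensor_mod R S l W =
    (let N = trel R S l W in
     \<lparr>mcar = {tcoset N g | g. g \<in> tfree S W},
      madd = (\<lambda>X Y. {(\<lambda>x. g x + h x) | g h. g \<in> X \<and> h \<in> Y}),
      mzero = N,
      msmul = (\<lambda>s X. {(\<lambda>x. tact_S S s g x + h x) | g h. g \<in> X \<and> h \<in> N})\<rparr>)"

definition tensor_rho :: "'r ring \<Rightarrow> 's ring \<Rightarrow> ('r \<Rightarrow> 's) \<Rightarrow> ('r, 'w) lmod \<Rightarrow>
    ('w \<Rightarrow> 'w) \<Rightarrow> ('s \<times> 'w \<Rightarrow> int) set \<Rightarrow> ('s \<times> 'w \<Rightarrow> int) set" where
  "tensor_rho R S l W f =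
    (\<lambda>X\<in>mcar (tensor_mod R S l W).
       {(\<lambda>x. tact_W f g x + h x) | g h. g \<in> X \<and> h \<in> trel R S l W})"

end

theory Submission
  imports Defs
begin


definition agrp :: "('a,'m) lmod \<Rightarrow> 'm monoid" where
  "agrp M = \<lparr>carrier = mcar M, mult = madd M, one = mzero M\<rparr>"

lemma agrp_simps[simp]: "carrier (agrp M) = mcar M" "mult (agrp M) = madd M" "one (agrp M) = mzero M"
  by (simp_all add: agrp_def)

lemma is_lmodD:
  assumes "is_lmod A M"
  shows "ring A"
   "\<And>x y. x\<in>mcar M \<Longrightarrow> y\<in>mcar M \<Longrightarrow> madd M x y \<in> mcar M"
   "\<And>x y z. x\<in>mcar M \<Longrightarrow> y\<in>mcar M \<Longrightarrow> z\<in>mcar M \<Longrightarrow> madd M (madd M x y) z = madd M x (madd M y z)"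
   "\<And>x y. x\<in>mcar M \<Longrightarrow> y\<in>mcar M \<Longrightarrow> madd M x y = madd M y x"
   "mzero M \<in> mcar M"
   "\<And>x. x\<in>mcar M \<Longrightarrow> madd M (mzero M) x = x"
   "\<And>x. x\<in>mcar M \<Longrightarrow> \<exists>y\<in>mcar M. madd M x y = mzero M"
   "\<And>a x. a\<in>carrier A \<Longrightarrow> x\<in>mcar M \<Longrightarrow> msmul M a x \<in> mcar M"
   "\<And>a x y. a\<in>carrier A \<Longrightarrow> x\<in>mcar M \<Longrightarrow> y\<in>mcar M \<Longrightarrow> msmul M a (madd M x y) = madd M (msmul M a x) (msmul M a y)"
   "\<And>a b x. a\<in>carrier A \<Longrightarrow> b\<in>carrier A \<Longrightarrow> x\<in>mcar M \<Longrightarrow> msmul M (a \<oplus>\<^bsub>A\<^esub> b) x = madd M (msmul M a x) (msmul M b x)"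
   "\<And>a b x. a\<in>carrier A \<Longrightarrow> b\<in>carrier A \<Longrightarrow> x\<in>mcar M \<Longrightarrow> msmul M (a \<otimes>\<^bsub>A\<^esub> b) x = msmul M a (msmul M b x)"
   "\<And>x. x\<in>mcar M \<Longrightarrow> msmul M \<one>\<^bsub>A\<^esub> x = x"
  using assms unfolding is_lmod_def by auto

lemma lmod_comm_group: assumes "is_lmod A M" shows "comm_group (agrp M)"
proof (rule comm_groupI, simp_all)
  note D = is_lmodD[OF assms]
  show "\<And>x y. x \<in> mcar M \<Longrightarrow> y \<in> mcar M \<Longrightarrow> madd M x y \<in> mcar M" by (rule D)
  show "mzero M \<in> mcar M" by (rule D)
  show "\<And>x y z. x\<in>mcar M \<Longrightarrow> y\<in>mcar M \<Longrightarrow> z\<in>mcar M \<Longrightarrow> madd M (madd M x y) z = madd M x (madd M y z)" by (rule D)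
  show "\<And>x y. x\<in>mcar M \<Longrightarrow> y\<in>mcar M \<Longrightarrow> madd M x y = madd M y x" by (rule D)
  show "\<And>x. x\<in>mcar M \<Longrightarrow> madd M (mzero M) x = x" by (rule D)
  show "\<And>x. x\<in>mcar M \<Longrightarrow> \<exists>y\<in>mcar M. madd M y x = mzero M"
    using D(7) D(4) by metis
qed

locale lmodule =
  fixes A :: "'a ring" and M :: "('a,'m) lmod"
  assumes lm: "is_lmod A M"
begin

sublocale R: ring A using is_lmodD(1)[OF lm] .
sublocale G: comm_group "agrp M" using lmod_comm_group[OF lm] .

abbreviation "mneg x \<equiv> inv\<^bsub>agrp M\<^esub> x"

lemma add_closed[simp,intro]: "x\<in>mcar M \<Longrightarrow> y\<in>mcar M \<Longrightarrow> madd M x y \<in> mcar M"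
  using is_lmodD(2)[OF lm] by blast
lemma zero_closed[simp,intro]: "mzero M \<in> mcar M"
  using is_lmodD(5)[OF lm] by blast
lemma smul_closed[simp,intro]: "a\<in>carrier A \<Longrightarrow> x\<in>mcar M \<Longrightarrow> msmul M a x \<in> mcar M"
  using is_lmodD(8)[OF lm] by blast
lemma neg_closed[simp,intro]: "x\<in>mcar M \<Longrightarrow> mneg x \<in> mcar M"
  using G.inv_closed by simp
lemma add_assoc: "x\<in>mcar M \<Longrightarrow> y\<in>mcar M \<Longrightarrow> z\<in>mcar M \<Longrightarrow> madd M (madd M x y) z = madd M x (madd M y z)"
  using is_lmodD(3)[OF lm] by blast
lemma add_comm: "x\<in>mcar M \<Longrightarrow> y\<in>mcar M \<Longrightarrow> madd M x y = madd M y x"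
  using is_lmodD(4)[OF lm] by blast
lemma add_lcomm: "x\<in>mcar M \<Longrightarrow> y\<in>mcar M \<Longrightarrow> z\<in>mcar M \<Longrightarrow> madd M x (madd M y z) = madd M y (madd M x z)"
  by (metis add_assoc add_comm)
lemma zero_add[simp]: "x\<in>mcar M \<Longrightarrow> madd M (mzero M) x = x"
  using is_lmodD(6)[OF lm] by blast
lemma add_zero[simp]: "x\<in>mcar M \<Longrightarrow> madd M x (mzero M) = x"
  using zero_add add_comm by simp
lemma neg_r[simp]: "x\<in>mcar M \<Longrightarrow> madd M x (mneg x) = mzero M"
  using G.r_inv by simp
lemma neg_l[simp]: "x\<in>mcar M \<Longrightarrow> madd M (mneg x) x = mzero M"
  using G.l_inv by simp
lemma smul_add: "a\<in>carrier A \<Longrightarrow> x\<in>mcar M \<Longrightarrow> y\<in>mcar M \<Longrightarrow> msmul M a (madd M x y) = madd M (msmul M a x) (msmul M a y)"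
  using is_lmodD(9)[OF lm] by blast
lemma add_smul: "a\<in>carrier A \<Longrightarrow> b\<in>carrier A \<Longrightarrow> x\<in>mcar M \<Longrightarrow> msmul M (a \<oplus>\<^bsub>A\<^esub> b) x = madd M (msmul M a x) (msmul M b x)"
  using is_lmodD(10)[OF lm] by blast
lemma mult_smul: "a\<in>carrier A \<Longrightarrow> b\<in>carrier A \<Longrightarrow> x\<in>mcar M \<Longrightarrow> msmul M (a \<otimes>\<^bsub>A\<^esub> b) x = msmul M a (msmul M b x)"
  using is_lmodD(11)[OF lm] by blast
lemma one_smul[simp]: "x\<in>mcar M \<Longrightarrow> msmul M \<one>\<^bsub>A\<^esub> x = x"
  using is_lmodD(12)[OF lm] by blast

lemma add_left_cancel: "x\<in>mcar M \<Longrightarrow> y\<in>mcar M \<Longrightarrow> z\<in>mcar M \<Longrightarrow> madd M x y = madd M x z \<Longrightarrow> y = z"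
proof -
  assume x: "x\<in>mcar M" and y: "y\<in>mcar M" and z: "z\<in>mcar M" and e: "madd M x y = madd M x z"
  have "madd M (mneg x) (madd M x y) = madd M (mneg x) (madd M x z)" using e by simp
  then show "y = z" using x y z by (simp flip: add_assoc)
qed

lemma smul_zero[simp]: "a\<in>carrier A \<Longrightarrow> msmul M a (mzero M) = mzero M"
proof -
  assume a: "a\<in>carrier A"
  have "madd M (msmul M a (mzero M)) (msmul M a (mzero M)) = madd M (msmul M a (mzero M)) (mzero M)"
    using smul_add[OF a zero_closed zero_closed] a by simp
  then show ?thesis using add_left_cancel a by blast
qed

lemma zero_smul[simp]: "x\<in>mcar M \<Longrightarrow> msmul M \<zero>\<^bsub>A\<^esub> x = mzero M"
proof -
  assume x: "x\<in>mcar M"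
  have "madd M (msmul M \<zero>\<^bsub>A\<^esub> x) (msmul M \<zero>\<^bsub>A\<^esub> x) = madd M (msmul M \<zero>\<^bsub>A\<^esub> x) (mzero M)"
    using add_smul[OF R.zero_closed R.zero_closed x] x by simp
  then show ?thesis using add_left_cancel x by blast
qed

lemma smul_neg: "a\<in>carrier A \<Longrightarrow> x\<in>mcar M \<Longrightarrow> msmul M a (mneg x) = mneg (msmul M a x)"
proof -
  assume a: "a\<in>carrier A" and x: "x\<in>mcar M"
  have "madd M (msmul M a x) (msmul M a (mneg x)) = mzero M"
    using smul_add[OF a x neg_closed[OF x]] a x by simp
  then show ?thesis using G.inv_equality[of "msmul M a (mneg x)" "msmul M a x"] a x
    by (simp add: add_comm)
qed

lemma neg_smul: "a\<in>carrier A \<Longrightarrow> x\<in>mcar M \<Longrightarrow> msmul M (\<ominus>\<^bsub>A\<^esub> a) x = mneg (msmul M a x)"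
proof -
  assume a: "a\<in>carrier A" and x: "x\<in>mcar M"
  have "madd M (msmul M (\<ominus>\<^bsub>A\<^esub> a) x) (msmul M a x) = mzero M"
    using add_smul[OF R.a_inv_closed[OF a] a x, symmetric] a x by (simp add: R.l_neg)
  then show ?thesis using G.inv_equality[of "msmul M (\<ominus>\<^bsub>A\<^esub> a) x" "msmul M a x"] a x
    by simp
qed

lemma neg_add: "x\<in>mcar M \<Longrightarrow> y\<in>mcar M \<Longrightarrow> mneg (madd M x y) = madd M (mneg x) (mneg y)"
  using G.inv_mult by (simp add: add_comm)

lemma neg_neg[simp]: "x\<in>mcar M \<Longrightarrow> mneg (mneg x) = x"
  using G.inv_inv by simp

lemma neg_zero[simp]: "mneg (mzero M) = mzero M"
  using G.inv_one by simp

lemma smul_pow: "a\<in>carrier A \<Longrightarrow> x\<in>mcar M \<Longrightarrow> msmul M a (x [^]\<^bsub>agrp M\<^esub> (n::int)) = (msmul M a x) [^]\<^bsub>agrp M\<^esub> n"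
proof -
  assume a: "a\<in>carrier A" and x: "x\<in>mcar M"
  have h: "msmul M a \<in> hom (agrp M) (agrp M)"
    unfolding hom_def using a by (auto simp: smul_add)
  show ?thesis using hom_int_pow[OF h] x G.is_group by simp
qed

lemma smul_finprod: "a\<in>carrier A \<Longrightarrow> f \<in> I \<rightarrow> mcar M \<Longrightarrow>
   msmul M a (finprod (agrp M) f I) = finprod (agrp M) (\<lambda>i. msmul M a (f i)) I"
proof (induct I rule: infinite_finite_induct)
  case (infinite A) then show ?case by simp
next
  case empty then show ?case by simp
next
  case (insert i I)
  then show ?case
    by (simp add: Pi_iff smul_add G.finprod_closed[simplified])
qed

lemma finprod_smul: "f \<in> I \<rightarrow> carrier A \<Longrightarrow> x\<in>mcar M \<Longrightarrow>
   msmul M (finsum A f I) x = finprod (agrp M) (\<lambda>i. msmul M (f i) x) I"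
proof (induct I rule: infinite_finite_induct)
  case (infinite A) then show ?case by simp
next
  case empty then show ?case by simp
next
  case (insert i I)
  then show ?case
    by (simp add: Pi_iff add_smul R.finsum_closed)
qed

end

lemma hom_finprod_gen:
  assumes G: "comm_group G" and H: "comm_group H" and h: "h \<in> hom G H" and f: "f \<in> I \<rightarrow> carrier G"
  shows "h (finprod G f I) = finprod H (\<lambda>i. h (f i)) I"
  using f
proof (induct I rule: infinite_finite_induct)
  case (infinite A)
  then show ?case using group_hom.hom_one[of G H h] G H h
    by (simp add: comm_monoid.finprod_infinite comm_group.axioms(1) group_hom_def group_hom_axioms_def comm_group.axioms(2))
next
  case empty
  then show ?case using group_hom.hom_one[of G H h] G H h
    by (simp add: comm_monoid.finprod_empty comm_group.axioms(1) group_hom_def group_hom_axioms_def comm_group.axioms(2))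
next
  case (insert i I)
  have hi: "h \<in> carrier G \<rightarrow> carrier H" using h by (simp add: hom_def)
  have "h (finprod G f (insert i I)) = h (f i \<otimes>\<^bsub>G\<^esub> finprod G f I)"
    using insert G by (simp add: comm_group.axioms(1) comm_monoid.finprod_insert Pi_iff)
  also have "\<dots> = h (f i) \<otimes>\<^bsub>H\<^esub> h (finprod G f I)"
    using h insert G by (simp add: hom_def comm_group.axioms(1) comm_monoid.finprod_closed Pi_iff)
  also have "\<dots> = finprod H (\<lambda>i. h (f i)) (insert i I)"
    using insert H hi by (auto simp add: comm_group.axioms(1) comm_monoid.finprod_insert Pi_iff)
  finally show ?case .
qed


section \<open>Pushforward of finitely supported integer functions\<close>

definition supp :: "('x \<Rightarrow> int) \<Rightarrow> 'x set" where "supp g = {x. g x \<noteq> 0}"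

definition push :: "('x \<Rightarrow> 'y) \<Rightarrow> ('x \<Rightarrow> int) \<Rightarrow> ('y \<Rightarrow> int)" where
  "push \<phi> g = (\<lambda>y. \<Sum>x\<in>{x. g x \<noteq> 0 \<and> \<phi> x = y}. g x)"

lemma push_eq_sum:
  assumes "finite U" "supp g \<subseteq> U"
  shows "push \<phi> g y = (\<Sum>x\<in>{x\<in>U. \<phi> x = y}. g x)"
  unfolding push_def
  by (rule sum.mono_neutral_left) (use assms in \<open>auto simp: supp_def\<close>)

lemma push_add:
  assumes "finite (supp g)" "finite (supp h)"
  shows "push \<phi> (\<lambda>x. g x + h x) = (\<lambda>y. push \<phi> g y + push \<phi> h y)"
proof
  fix y
  let ?U = "supp g \<union> supp h"
  have "supp (\<lambda>x. g x + h x) \<subseteq> ?U" by (auto simp: supp_def)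
  then show "push \<phi> (\<lambda>x. g x + h x) y = push \<phi> g y + push \<phi> h y"
    using assms by (simp add: push_eq_sum[of ?U] sum.distrib)
qed

lemma push_diff:
  assumes "finite (supp g)" "finite (supp h)"
  shows "push \<phi> (\<lambda>x. g x - h x) = (\<lambda>y. push \<phi> g y - push \<phi> h y)"
proof
  fix y
  let ?U = "supp g \<union> supp h"
  have "supp (\<lambda>x. g x - h x) \<subseteq> ?U" by (auto simp: supp_def)
  then show "push \<phi> (\<lambda>x. g x - h x) y = push \<phi> g y - push \<phi> h y"
    using assms by (simp add: push_eq_sum[of ?U] sum_subtractf)
qed

lemma push_zero: "push \<phi> (\<lambda>x. 0) = (\<lambda>y. 0)"
  unfolding push_def by simp

lemma push_delta: "push \<phi> (\<lambda>x. if x = a then 1 else 0) = (\<lambda>y. if y = \<phi> a then 1 else 0)"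
proof
  fix y
  have "push \<phi> (\<lambda>x. if x = a then 1 else 0) y = (\<Sum>x\<in>{x\<in>{a}. \<phi> x = y}. (if x = a then 1 else 0))"
    by (rule push_eq_sum) (auto simp: supp_def)
  moreover have "{x\<in>{a}. \<phi> x = y} = (if \<phi> a = y then {a} else {})" by auto
  ultimately show "push \<phi> (\<lambda>x. if x = a then 1 else 0) y = (if y = \<phi> a then 1 else 0)"
    by auto
qed

lemma supp_push: "finite (supp g) \<Longrightarrow> supp (push \<phi> g) \<subseteq> \<phi> ` supp g"
proof
  fix y assume "y \<in> supp (push \<phi> g)"
  then have "(\<Sum>x\<in>{x. g x \<noteq> 0 \<and> \<phi> x = y}. g x) \<noteq> 0" by (simp add: supp_def push_def)
  then obtain x where "x \<in> {x. g x \<noteq> 0 \<and> \<phi> x = y}" by (meson sum.neutral)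
  then show "y \<in> \<phi> ` supp g" by (auto simp: supp_def)
qed

lemma finite_supp_push: "finite (supp g) \<Longrightarrow> finite (supp (push \<phi> g))"
  by (rule finite_subset[OF supp_push finite_imageI])

lemma tact_S_push: "tact_S S s g = push (\<lambda>(u,w). (s \<otimes>\<^bsub>S\<^esub> u, w)) g"
proof
  fix y :: "'a \<times> 'b"
  obtain t w where y: "y = (t,w)" by (cases y)
  have "(\<Sum>u\<in>{u. g (u, w) \<noteq> 0 \<and> s \<otimes>\<^bsub>S\<^esub> u = t}. g (u, w)) =
        (\<Sum>x\<in>(\<lambda>u. (u,w)) ` {u. g (u, w) \<noteq> 0 \<and> s \<otimes>\<^bsub>S\<^esub> u = t}. g x)"
    by (subst sum.reindex) (auto simp: inj_on_def)
  also have "(\<lambda>u. (u,w)) ` {u. g (u, w) \<noteq> 0 \<and> s \<otimes>\<^bsub>S\<^esub> u = t} =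
       {x. g x \<noteq> 0 \<and> (case x of (u,w) \<Rightarrow> (s \<otimes>\<^bsub>S\<^esub> u, w)) = (t,w)}"
    by auto
  finally show "tact_S S s g y = push (\<lambda>(u,w). (s \<otimes>\<^bsub>S\<^esub> u, w)) g y"
    unfolding tact_S_def push_def y by simp
qed

lemma tact_W_push: "tact_W f g = push (\<lambda>(s,w). (s, f w)) g"
proof
  fix y :: "'a \<times> 'b"
  obtain s w' where y: "y = (s,w')" by (cases y)
  have "(\<Sum>w\<in>{w. g (s, w) \<noteq> 0 \<and> f w = w'}. g (s, w)) =
        (\<Sum>x\<in>(\<lambda>w. (s,w)) ` {w. g (s, w) \<noteq> 0 \<and> f w = w'}. g x)"
    by (subst sum.reindex) (auto simp: inj_on_def)
  also have "(\<lambda>w. (s,w)) ` {w. g (s, w) \<noteq> 0 \<and> f w = w'} =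
       {x. g x \<noteq> 0 \<and> (case x of (s,w) \<Rightarrow> (s, f w)) = (s,w')}"
    by auto
  finally show "tact_W f g y = push (\<lambda>(s,w). (s, f w)) g y"
    unfolding tact_W_def push_def y by simp
qed

section \<open>Cosets of a subgroup of integer functions\<close>

definition gsubgrp :: "('x \<Rightarrow> int) set \<Rightarrow> bool" where
  "gsubgrp N \<longleftrightarrow> (\<lambda>x. 0) \<in> N \<and> (\<forall>g\<in>N. \<forall>h\<in>N. (\<lambda>x. g x - h x) \<in> N)"

lemma gsubgrp_add: "gsubgrp N \<Longrightarrow> g\<in>N \<Longrightarrow> h\<in>N \<Longrightarrow> (\<lambda>x. g x + h x) \<in> N"
proof -
  assume N: "gsubgrp N" and g: "g\<in>N" and h: "h\<in>N"
  have "(\<lambda>x. 0 - h x) \<in> N" using N h unfolding gsubgrp_def by fastforce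
  then have "(\<lambda>x. g x - (0 - h x)) \<in> N" using N g unfolding gsubgrp_def
    by (metis (no_types))
  then show ?thesis by simp
qed

lemma gsubgrp_diff: "gsubgrp N \<Longrightarrow> g\<in>N \<Longrightarrow> h\<in>N \<Longrightarrow> (\<lambda>x. g x - h x) \<in> N"
  unfolding gsubgrp_def by blast

lemma gsubgrp_neg: "gsubgrp N \<Longrightarrow> h\<in>N \<Longrightarrow> (\<lambda>x. - h x) \<in> N"
  using gsubgrp_diff[of N "\<lambda>x. 0" h] unfolding gsubgrp_def by simp

lemma gsubgrp_zero: "gsubgrp N \<Longrightarrow> (\<lambda>x. 0) \<in> N"
  unfolding gsubgrp_def by blast

lemma tcoset_eq0: "tcoset N g = {f. (\<lambda>x. f x - g x) \<in> N}"
proof (intro Set.set_eqI iffI)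
  fix f assume "f \<in> tcoset N g"
  then obtain h where "h \<in> N" "f = (\<lambda>x. g x + h x)" unfolding tcoset_def by blast
  then show "f \<in> {f. (\<lambda>x. f x - g x) \<in> N}" by simp
next
  fix f assume "f \<in> {f. (\<lambda>x. f x - g x) \<in> N}"
  define h where "h = (\<lambda>x. f x - g x)"
  have "h \<in> N" using \<open>f \<in> {f. (\<lambda>x. f x - g x) \<in> N}\<close> by (simp add: h_def)
  moreover have "f = (\<lambda>x. g x + h x)" by (simp add: h_def)
  ultimately show "f \<in> tcoset N g" unfolding tcoset_def by blast
qed

lemma tcoset_eq: "gsubgrp N \<Longrightarrow> tcoset N g = {f. (\<lambda>x. f x - g x) \<in> N}"
  by (rule tcoset_eq0)

lemma tcoset_self: "gsubgrp N \<Longrightarrow> g \<in> tcoset N g"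
  by (simp add: tcoset_eq gsubgrp_zero)

lemma tcoset_eq_iff: "gsubgrp N \<Longrightarrow> tcoset N g = tcoset N h \<longleftrightarrow> (\<lambda>x. g x - h x) \<in> N"
proof
  assume N: "gsubgrp N" and e: "tcoset N g = tcoset N h"
  then show "(\<lambda>x. g x - h x) \<in> N" using tcoset_self[OF N, of g] by (simp add: tcoset_eq)
next
  assume N: "gsubgrp N" and d: "(\<lambda>x. g x - h x) \<in> N"
  show "tcoset N g = tcoset N h"
  proof (simp add: tcoset_eq[OF N], rule Collect_cong)
    fix f
    have 1: "(\<lambda>x. f x - h x) = (\<lambda>x. (f x - g x) + (g x - h x))" by simp
    have 2: "(\<lambda>x. f x - g x) = (\<lambda>x. (f x - h x) - (g x - h x))" by simp
    show "((\<lambda>x. f x - g x) \<in> N) = ((\<lambda>x. f x - h x) \<in> N)"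
    proof
      assume "(\<lambda>x. f x - g x) \<in> N"
      from gsubgrp_add[OF N this d] show "(\<lambda>x. f x - h x) \<in> N" by (subst 1)
    next
      assume "(\<lambda>x. f x - h x) \<in> N"
      from gsubgrp_diff[OF N this d] show "(\<lambda>x. f x - g x) \<in> N" by (subst 2)
    qed
  qed
qed

lemma tcoset_mem_eq: "gsubgrp N \<Longrightarrow> f \<in> tcoset N g \<Longrightarrow> tcoset N f = tcoset N g"
  by (simp add: tcoset_eq_iff) (simp add: tcoset_eq)

lemma tcoset_add: "gsubgrp N \<Longrightarrow>
  {(\<lambda>x. g' x + h' x) | g' h'. g' \<in> tcoset N g \<and> h' \<in> tcoset N h} = tcoset N (\<lambda>x. g x + h x)"
proof (intro Set.set_eqI iffI)
  fix f assume N: "gsubgrp N" and "f \<in> {(\<lambda>x. g' x + h' x) | g' h'. g' \<in> tcoset N g \<and> h' \<in> tcoset N h}"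
  then obtain g' h' where f: "f = (\<lambda>x. g' x + h' x)" and g': "(\<lambda>x. g' x - g x) \<in> N" and h': "(\<lambda>x. h' x - h x) \<in> N"
    by (auto simp: tcoset_eq)
  have "(\<lambda>x. f x - (g x + h x)) = (\<lambda>x. (g' x - g x) + (h' x - h x))" using f by auto
  then show "f \<in> tcoset N (\<lambda>x. g x + h x)" using gsubgrp_add[OF N g' h'] by (simp add: tcoset_eq[OF N])
next
  fix f assume N: "gsubgrp N" and "f \<in> tcoset N (\<lambda>x. g x + h x)"
  then have d: "(\<lambda>x. f x - (g x + h x)) \<in> N" by (simp add: tcoset_eq)
  define k where "k = (\<lambda>x. f x - h x)"
  have "k \<in> tcoset N g" using d by (simp add: k_def tcoset_eq[OF N] algebra_simps)
  moreover have "h \<in> tcoset N h" by (rule tcoset_self[OF N])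
  moreover have "f = (\<lambda>x. k x + h x)" by (simp add: k_def)
  ultimately show "f \<in> {(\<lambda>x. g' x + h' x) | g' h'. g' \<in> tcoset N g \<and> h' \<in> tcoset N h}" by blast
qed

lemma tcoset_zero: "gsubgrp N \<Longrightarrow> tcoset N (\<lambda>x. 0) = N"
  by (simp add: tcoset_eq)


definition dlt :: "'x \<Rightarrow> 'x \<Rightarrow> int" where "dlt a = (\<lambda>x. if x = a then 1 else 0)"

lemma tdelta_dlt: "tdelta s w = dlt (s,w)"
  unfolding tdelta_def dlt_def by simp

lemma dlt_self[simp]: "dlt a a = 1" by (simp add: dlt_def)

lemma supp_dlt[simp]: "supp (dlt a) = {a}"
  unfolding supp_def dlt_def by auto

lemma push_dlt: "push \<phi> (dlt a) = dlt (\<phi> a)"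
  unfolding dlt_def by (rule push_delta)

lemma push_gen3: "push \<phi> (\<lambda>x. dlt a x - dlt b x - dlt c x) = (\<lambda>x. dlt (\<phi> a) x - dlt (\<phi> b) x - dlt (\<phi> c) x)"
proof -
  have "push \<phi> (\<lambda>x. dlt a x - dlt b x - dlt c x) = (\<lambda>y. push \<phi> (\<lambda>x. dlt a x - dlt b x) y - push \<phi> (dlt c) y)"
    by (rule push_diff[of "\<lambda>x. dlt a x - dlt b x" "dlt c", simplified])
      (rule finite_subset[of _ "{a,b}"], auto simp: supp_def dlt_def)
  also have "push \<phi> (\<lambda>x. dlt a x - dlt b x) = (\<lambda>y. push \<phi> (dlt a) y - push \<phi> (dlt b) y)"
    by (rule push_diff) auto
  finally show ?thesis by (simp add: push_dlt)
qed

lemma push_gen2: "push \<phi> (\<lambda>x. dlt a x - dlt b x) = (\<lambda>x. dlt (\<phi> a) x - dlt (\<phi> b) x)"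
  by (simp add: push_diff push_dlt)

section \<open>The tensor product\<close>

locale tens =
  fixes R :: "'r ring" and S :: "'s ring" and l :: "'r \<Rightarrow> 's" and W :: "('r,'w) lmod"
  assumes ringS: "ring S" and lhom: "l \<in> ring_hom R S" and Wm: "is_lmod R W"
begin

sublocale W: lmodule R W by (rule lmodule.intro[OF Wm])
sublocale S: ring S by (rule ringS)

abbreviation "N \<equiv> trel R S l W"
abbreviation "TF \<equiv> tfree S W"
abbreviation "TM \<equiv> tensor_mod R S l W"

lemma l_closed[simp,intro]: "r \<in> carrier R \<Longrightarrow> l r \<in> carrier S"
  using lhom by (simp add: ring_hom_def Pi_iff)
lemma l_add: "r \<in> carrier R \<Longrightarrow> r' \<in> carrier R \<Longrightarrow> l (r \<oplus>\<^bsub>R\<^esub> r') = l r \<oplus>\<^bsub>S\<^esub> l r'"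
  using lhom by (simp add: ring_hom_def)
lemma l_mult: "r \<in> carrier R \<Longrightarrow> r' \<in> carrier R \<Longrightarrow> l (r \<otimes>\<^bsub>R\<^esub> r') = l r \<otimes>\<^bsub>S\<^esub> l r'"
  using lhom by (simp add: ring_hom_def)
lemma l_one[simp]: "l \<one>\<^bsub>R\<^esub> = \<one>\<^bsub>S\<^esub>"
  using lhom by (simp add: ring_hom_def)

lemma tfree_iff: "g \<in> TF \<longleftrightarrow> finite (supp g) \<and> supp g \<subseteq> carrier S \<times> mcar W"
  unfolding tfree_def supp_def by auto

lemma tfree_zero[simp,intro]: "(\<lambda>x. 0) \<in> TF"
  by (simp add: tfree_iff supp_def)

lemma tfree_add[intro]: "g \<in> TF \<Longrightarrow> h \<in> TF \<Longrightarrow> (\<lambda>x. g x + h x) \<in> TF"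
proof -
  assume "g \<in> TF" "h \<in> TF"
  moreover have "supp (\<lambda>x. g x + h x) \<subseteq> supp g \<union> supp h" by (auto simp: supp_def)
  ultimately show ?thesis unfolding tfree_iff by (meson finite_Un le_sup_iff rev_finite_subset subset_trans)
qed

lemma tfree_diff[intro]: "g \<in> TF \<Longrightarrow> h \<in> TF \<Longrightarrow> (\<lambda>x. g x - h x) \<in> TF"
proof -
  assume "g \<in> TF" "h \<in> TF"
  moreover have "supp (\<lambda>x. g x - h x) \<subseteq> supp g \<union> supp h" by (auto simp: supp_def)
  ultimately show ?thesis unfolding tfree_iff by (meson finite_Un le_sup_iff rev_finite_subset subset_trans)
qed

lemma tfree_neg[intro]: "g \<in> TF \<Longrightarrow> (\<lambda>x. - g x) \<in> TF"
  using tfree_diff[of "\<lambda>x. 0" g] by simp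

lemma tfree_smult[intro]: "g \<in> TF \<Longrightarrow> (\<lambda>x. (n::int) * g x) \<in> TF"
proof -
  assume "g \<in> TF"
  moreover have "supp (\<lambda>x. n * g x) \<subseteq> supp g" by (auto simp: supp_def)
  ultimately show ?thesis unfolding tfree_iff by (meson rev_finite_subset subset_trans)
qed

lemma tfree_dlt[intro]: "a \<in> carrier S \<times> mcar W \<Longrightarrow> dlt a \<in> TF"
  by (simp add: tfree_iff)

lemma tgens_tfree: "g \<in> tgens R S l W \<Longrightarrow> g \<in> TF"
  unfolding tgens_def tdelta_dlt
  by (auto intro!: tfree_diff tfree_dlt W.add_closed W.smul_closed S.m_closed S.add.m_closed)

lemma trel_tfree: "g \<in> N \<Longrightarrow> g \<in> TF"
  by (induct rule: trel.induct) (auto intro: tgens_tfree)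

lemma N_subgrp: "gsubgrp N"
  unfolding gsubgrp_def by (auto intro: trel.intros)

lemma N_add: "g \<in> N \<Longrightarrow> h \<in> N \<Longrightarrow> (\<lambda>x. g x + h x) \<in> N"
  by (rule gsubgrp_add[OF N_subgrp])

lemma push_trel:
  assumes gens: "\<And>g. g \<in> tgens R S l W \<Longrightarrow> push \<phi> g \<in> N"
  shows "g \<in> N \<Longrightarrow> push \<phi> g \<in> N"
proof (induct rule: trel.induct)
  case trel_zero then show ?case by (simp add: push_zero trel.trel_zero)
next
  case (trel_gen g) then show ?case by (rule gens)
next
  case (trel_diff g h)
  then have "finite (supp g)" "finite (supp h)" using trel_tfree tfree_iff by blast+
  then show ?case using trel_diff by (simp add: push_diff trel.trel_diff)
qed

lemma push_tfree:
  assumes "\<And>a. a \<in> carrier S \<times> mcar W \<Longrightarrow> \<phi> a \<in> carrier S \<times> mcar W"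
  shows "g \<in> TF \<Longrightarrow> push \<phi> g \<in> TF"
  unfolding tfree_iff using supp_push[of g \<phi>] finite_supp_push[of g \<phi>] assms by blast

lemma gen_a: "s1 \<in> carrier S \<Longrightarrow> s2 \<in> carrier S \<Longrightarrow> w \<in> mcar W \<Longrightarrow>
  (\<lambda>x. dlt (s1 \<oplus>\<^bsub>S\<^esub> s2, w) x - dlt (s1, w) x - dlt (s2, w) x) \<in> N"
  apply (rule trel_gen) unfolding tgens_def tdelta_dlt by blast
lemma gen_b: "s1 \<in> carrier S \<Longrightarrow> w \<in> mcar W \<Longrightarrow> w' \<in> mcar W \<Longrightarrow>
  (\<lambda>x. dlt (s1, madd W w w') x - dlt (s1, w) x - dlt (s1, w') x) \<in> N"
  apply (rule trel_gen) unfolding tgens_def tdelta_dlt by blast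
lemma gen_c: "s1 \<in> carrier S \<Longrightarrow> r \<in> carrier R \<Longrightarrow> w \<in> mcar W \<Longrightarrow>
  (\<lambda>x. dlt (s1 \<otimes>\<^bsub>S\<^esub> l r, w) x - dlt (s1, msmul W r w) x) \<in> N"
  apply (rule trel_gen) unfolding tgens_def tdelta_dlt by blast

definition phS :: "'s \<Rightarrow> 's \<times> 'w \<Rightarrow> 's \<times> 'w" where "phS s = (\<lambda>(u,w). (s \<otimes>\<^bsub>S\<^esub> u, w))"
definition phW :: "('w \<Rightarrow> 'w) \<Rightarrow> 's \<times> 'w \<Rightarrow> 's \<times> 'w" where "phW f = (\<lambda>(s,w). (s, f w))"

lemma phS_gens: "s \<in> carrier S \<Longrightarrow> g \<in> tgens R S l W \<Longrightarrow> push (phS s) g \<in> N"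
proof -
  assume s: "s \<in> carrier S" and "g \<in> tgens R S l W"
  then consider
    (a) s1 s2 w where "g = (\<lambda>x. dlt (s1 \<oplus>\<^bsub>S\<^esub> s2, w) x - dlt (s1, w) x - dlt (s2, w) x)" "s1 \<in> carrier S" "s2 \<in> carrier S" "w \<in> mcar W"
  | (b) s1 w w' where "g = (\<lambda>x. dlt (s1, madd W w w') x - dlt (s1, w) x - dlt (s1, w') x)" "s1 \<in> carrier S" "w \<in> mcar W" "w' \<in> mcar W"
  | (c) s1 r w where "g = (\<lambda>x. dlt (s1 \<otimes>\<^bsub>S\<^esub> l r, w) x - dlt (s1, msmul W r w) x)" "s1 \<in> carrier S" "r \<in> carrier R" "w \<in> mcar W"
    unfolding tgens_def tdelta_dlt by blast
  then show ?thesis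
  proof cases
    case a
    then have "push (phS s) g = (\<lambda>x. dlt (s \<otimes>\<^bsub>S\<^esub> s1 \<oplus>\<^bsub>S\<^esub> s \<otimes>\<^bsub>S\<^esub> s2, w) x - dlt (s \<otimes>\<^bsub>S\<^esub> s1, w) x - dlt (s \<otimes>\<^bsub>S\<^esub> s2, w) x)"
      using s by (simp add: push_gen3 phS_def S.r_distr)
    also have "\<dots> \<in> N" using a s by (auto intro!: gen_a gen_b gen_c)
    finally show ?thesis .
  next
    case b
    then have "push (phS s) g = (\<lambda>x. dlt (s \<otimes>\<^bsub>S\<^esub> s1, madd W w w') x - dlt (s \<otimes>\<^bsub>S\<^esub> s1, w) x - dlt (s \<otimes>\<^bsub>S\<^esub> s1, w') x)"
      using s by (simp add: push_gen3 phS_def)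
    also have "\<dots> \<in> N" using b s by (auto intro!: gen_a gen_b gen_c)
    finally show ?thesis .
  next
    case c
    then have "push (phS s) g = (\<lambda>x. dlt ((s \<otimes>\<^bsub>S\<^esub> s1) \<otimes>\<^bsub>S\<^esub> l r, w) x - dlt (s \<otimes>\<^bsub>S\<^esub> s1, msmul W r w) x)"
      using s by (simp add: push_gen2 phS_def S.m_assoc)
    also have "\<dots> \<in> N" using c s by (auto intro!: gen_a gen_b gen_c)
    finally show ?thesis .
  qed
qed

lemma phW_gens: "lin R W W f \<Longrightarrow> g \<in> tgens R S l W \<Longrightarrow> push (phW f) g \<in> N"
proof -
  assume f: "lin R W W f" and "g \<in> tgens R S l W"
  have fc: "\<And>w. w \<in> mcar W \<Longrightarrow> f w \<in> mcar W" using f by (auto simp: lin_def)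
  have fa: "\<And>w w'. w \<in> mcar W \<Longrightarrow> w' \<in> mcar W \<Longrightarrow> f (madd W w w') = madd W (f w) (f w')" using f by (auto simp: lin_def)
  have fs: "\<And>r w. r \<in> carrier R \<Longrightarrow> w \<in> mcar W \<Longrightarrow> f (msmul W r w) = msmul W r (f w)" using f by (auto simp: lin_def)
  from \<open>g \<in> tgens R S l W\<close> consider
    (a) s1 s2 w where "g = (\<lambda>x. dlt (s1 \<oplus>\<^bsub>S\<^esub> s2, w) x - dlt (s1, w) x - dlt (s2, w) x)" "s1 \<in> carrier S" "s2 \<in> carrier S" "w \<in> mcar W"
  | (b) s1 w w' where "g = (\<lambda>x. dlt (s1, madd W w w') x - dlt (s1, w) x - dlt (s1, w') x)" "s1 \<in> carrier S" "w \<in> mcar W" "w' \<in> mcar W"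
  | (c) s1 r w where "g = (\<lambda>x. dlt (s1 \<otimes>\<^bsub>S\<^esub> l r, w) x - dlt (s1, msmul W r w) x)" "s1 \<in> carrier S" "r \<in> carrier R" "w \<in> mcar W"
    unfolding tgens_def tdelta_dlt by blast
  then show ?thesis
  proof cases
    case a
    then have "push (phW f) g = (\<lambda>x. dlt (s1 \<oplus>\<^bsub>S\<^esub> s2, f w) x - dlt (s1, f w) x - dlt (s2, f w) x)"
      by (simp add: push_gen3 phW_def)
    also have "\<dots> \<in> N" using a fc by (auto intro!: gen_a gen_b gen_c)
    finally show ?thesis .
  next
    case b
    then have "push (phW f) g = (\<lambda>x. dlt (s1, madd W (f w) (f w')) x - dlt (s1, f w) x - dlt (s1, f w') x)"
      by (simp add: push_gen3 phW_def fa)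
    also have "\<dots> \<in> N" using b fc by (auto intro!: gen_a gen_b gen_c)
    finally show ?thesis .
  next
    case c
    then have "push (phW f) g = (\<lambda>x. dlt (s1 \<otimes>\<^bsub>S\<^esub> l r, f w) x - dlt (s1, msmul W r (f w)) x)"
      by (simp add: push_gen2 phW_def fs)
    also have "\<dots> \<in> N" using c fc by (auto intro!: gen_a gen_b gen_c)
    finally show ?thesis .
  qed
qed

lemma phS_closed: "s \<in> carrier S \<Longrightarrow> a \<in> carrier S \<times> mcar W \<Longrightarrow> phS s a \<in> carrier S \<times> mcar W"
  by (auto simp: phS_def)
lemma phW_closed: "lin R W W f \<Longrightarrow> a \<in> carrier S \<times> mcar W \<Longrightarrow> phW f a \<in> carrier S \<times> mcar W"
  by (auto simp: phW_def lin_def)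

lemma coset_push:
  assumes NN: "\<And>g. g \<in> N \<Longrightarrow> push \<phi> g \<in> N"
    and g: "g \<in> TF"
  shows "{(\<lambda>x. push \<phi> g' x + h x) | g' h. g' \<in> tcoset N g \<and> h \<in> N} = tcoset N (push \<phi> g)"
proof (intro Set.set_eqI iffI)
  fix f assume "f \<in> {(\<lambda>x. push \<phi> g' x + h x) | g' h. g' \<in> tcoset N g \<and> h \<in> N}"
  then obtain g' h where f: "f = (\<lambda>x. push \<phi> g' x + h x)" and g': "(\<lambda>x. g' x - g x) \<in> N" and h: "h \<in> N"
    by (auto simp: tcoset_eq[OF N_subgrp])
  have fg: "finite (supp g)" using g tfree_iff by blast
  have "finite (supp (\<lambda>x. g' x - g x))" using g' trel_tfree tfree_iff by blast
  moreover have "supp g' \<subseteq> supp (\<lambda>x. g' x - g x) \<union> supp g" by (auto simp: supp_def)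
  ultimately have fg': "finite (supp g')" using fg by (meson finite_Un rev_finite_subset)
  have "push \<phi> (\<lambda>x. g' x - g x) \<in> N" by (rule NN[OF g'])
  then have "(\<lambda>y. push \<phi> g' y - push \<phi> g y) \<in> N" by (simp add: push_diff[OF fg' fg])
  from N_add[OF this h] show "f \<in> tcoset N (push \<phi> g)"
    by (simp add: f tcoset_eq[OF N_subgrp] algebra_simps)
next
  fix f assume "f \<in> tcoset N (push \<phi> g)"
  then have d: "(\<lambda>x. f x - push \<phi> g x) \<in> N" by (simp add: tcoset_eq[OF N_subgrp])
  define h where "h = (\<lambda>x. f x - push \<phi> g x)"
  have "f = (\<lambda>x. push \<phi> g x + h x)" by (simp add: h_def)
  moreover have "h \<in> N" using d by (simp add: h_def)
  moreover have "g \<in> tcoset N g" by (rule tcoset_self[OF N_subgrp])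
  ultimately show "f \<in> {(\<lambda>x. push \<phi> g' x + h x) | g' h. g' \<in> tcoset N g \<and> h \<in> N}" by blast
qed

lemma TM_simps:
  "mcar TM = {tcoset N g | g. g \<in> TF}"
  "madd TM X Y = {(\<lambda>x. g x + h x) | g h. g \<in> X \<and> h \<in> Y}"
  "mzero TM = N"
  "msmul TM s X = {(\<lambda>x. tact_S S s g x + h x) | g h. g \<in> X \<and> h \<in> N}"
  unfolding tensor_mod_def Let_def by simp_all

lemma TM_cases: "X \<in> mcar TM \<Longrightarrow> (\<And>g. g \<in> TF \<Longrightarrow> X = tcoset N g \<Longrightarrow> P) \<Longrightarrow> P"
  unfolding TM_simps by blast

lemma TM_ex: "X \<in> mcar TM \<Longrightarrow> \<exists>g. g \<in> TF \<and> X = tcoset N g"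
  unfolding TM_simps by blast

lemma TM_coset[simp,intro]: "g \<in> TF \<Longrightarrow> tcoset N g \<in> mcar TM"
  unfolding TM_simps by blast

lemma TM_add: "madd TM (tcoset N g) (tcoset N h) = tcoset N (\<lambda>x. g x + h x)"
  unfolding TM_simps by (rule tcoset_add[OF N_subgrp])

lemma TM_zero: "mzero TM = tcoset N (\<lambda>x. 0)"
  unfolding TM_simps by (simp add: tcoset_zero[OF N_subgrp])

lemma TM_smul: "s \<in> carrier S \<Longrightarrow> g \<in> TF \<Longrightarrow> msmul TM s (tcoset N g) = tcoset N (push (phS s) g)"
  unfolding TM_simps tact_S_push phS_def[symmetric]
  by (rule coset_push) (auto intro: push_trel phS_gens)

lemma TM_smul_closed: "s \<in> carrier S \<Longrightarrow> g \<in> TF \<Longrightarrow> push (phS s) g \<in> TF"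
  by (rule push_tfree) (auto intro: phS_closed)

end


context tens begin

lemma TM_comm_group: "comm_group (agrp TM)"
proof (rule comm_groupI, simp_all)
  show "\<And>x y. x \<in> mcar TM \<Longrightarrow> y \<in> mcar TM \<Longrightarrow> madd TM x y \<in> mcar TM"
    by (elim TM_cases) (auto simp: TM_add)
  show "mzero TM \<in> mcar TM" by (simp add: TM_zero)
  show "\<And>x y z. x \<in> mcar TM \<Longrightarrow> y \<in> mcar TM \<Longrightarrow> z \<in> mcar TM \<Longrightarrow>
      madd TM (madd TM x y) z = madd TM x (madd TM y z)"
    by (elim TM_cases) (simp add: TM_add add.assoc)
  show "\<And>x y. x \<in> mcar TM \<Longrightarrow> y \<in> mcar TM \<Longrightarrow> madd TM x y = madd TM y x"
    by (elim TM_cases) (simp add: TM_add add.commute)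
  show "\<And>x. x \<in> mcar TM \<Longrightarrow> madd TM (mzero TM) x = x"
    by (elim TM_cases) (simp add: TM_add TM_zero)
  show "\<And>x. x \<in> mcar TM \<Longrightarrow> \<exists>y\<in>mcar TM. madd TM y x = mzero TM"
  proof (elim TM_cases)
    fix x g assume g: "g \<in> TF" and x: "x = tcoset N g"
    have "madd TM (tcoset N (\<lambda>x. - g x)) x = mzero TM" by (simp add: x TM_add TM_zero)
    then show "\<exists>y\<in>mcar TM. madd TM y x = mzero TM" using g by blast
  qed
qed

sublocale T: comm_group "agrp TM" by (rule TM_comm_group)

lemma TM_inv: "g \<in> TF \<Longrightarrow> inv\<^bsub>agrp TM\<^esub> (tcoset N g) = tcoset N (\<lambda>x. - g x)"
  by (rule T.inv_equality) (auto simp: TM_add TM_zero)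

lemma TM_nat_pow: "g \<in> TF \<Longrightarrow> (tcoset N g) [^]\<^bsub>agrp TM\<^esub> (n::nat) = tcoset N (\<lambda>x. int n * g x)"
proof (induct n)
  case 0 then show ?case by (simp add: TM_zero)
next
  case (Suc n)
  have "(tcoset N g) [^]\<^bsub>agrp TM\<^esub> (Suc n) = madd TM ((tcoset N g) [^]\<^bsub>agrp TM\<^esub> n) (tcoset N g)"
    by (simp only: nat_pow_Suc agrp_simps)
  also have "\<dots> = tcoset N (\<lambda>x. int n * g x + g x)" using Suc by (simp only: TM_add)
  also have "(\<lambda>x. int n * g x + g x) = (\<lambda>x. int (Suc n) * g x)" by (rule ext) (simp add: algebra_simps)
  finally show ?case .
qed

lemma TM_int_pow: "g \<in> TF \<Longrightarrow> (tcoset N g) [^]\<^bsub>agrp TM\<^esub> (n::int) = tcoset N (\<lambda>x. n * g x)"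
proof -
  assume g: "g \<in> TF"
  show ?thesis
  proof (cases "n < 0")
    case True
    have "(tcoset N g) [^]\<^bsub>agrp TM\<^esub> n = inv\<^bsub>agrp TM\<^esub> ((tcoset N g) [^]\<^bsub>agrp TM\<^esub> (nat (- n)))"
      unfolding int_pow_def2 using True by (simp only: if_True)
    also have "\<dots> = inv\<^bsub>agrp TM\<^esub> (tcoset N (\<lambda>x. int (nat (- n)) * g x))"
      by (simp only: TM_nat_pow g)
    also have "\<dots> = tcoset N (\<lambda>x. - (int (nat (- n)) * g x))"
      by (rule TM_inv) (use g in auto)
    also have "(\<lambda>x. - (int (nat (- n)) * g x)) = (\<lambda>x. n * g x)" using True by (intro ext) simp
    finally show ?thesis .
  next
    case False
    have "(tcoset N g) [^]\<^bsub>agrp TM\<^esub> n = (tcoset N g) [^]\<^bsub>agrp TM\<^esub> (nat n)"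
      unfolding int_pow_def2 using False by (simp only: if_False)
    also have "\<dots> = tcoset N (\<lambda>x. int (nat n) * g x)" by (simp only: TM_nat_pow g)
    also have "(\<lambda>x. int (nat n) * g x) = (\<lambda>x. n * g x)" using False by (intro ext) simp
    finally show ?thesis .
  qed
qed

abbreviation "tt a \<equiv> tcoset N (dlt a)"

lemma tt_closed[simp,intro]: "a \<in> carrier S \<times> mcar W \<Longrightarrow> tt a \<in> mcar TM"
  by (auto intro: tfree_dlt)

lemma tt_pow_closed[simp,intro]: "a \<in> carrier S \<times> mcar W \<Longrightarrow> tt a [^]\<^bsub>agrp TM\<^esub> (n::int) \<in> mcar TM"
  using T.int_pow_closed[of "tt a" n] by simp

lemma decomp_gen:
  assumes "finite D" "D \<subseteq> carrier S \<times> mcar W"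
  shows "g \<in> TF \<Longrightarrow> supp g \<subseteq> D \<Longrightarrow> tcoset N g = finprod (agrp TM) (\<lambda>a. tt a [^]\<^bsub>agrp TM\<^esub> g a) D"
  using assms
proof (induct D arbitrary: g rule: finite_induct)
  case empty
  then have "g = (\<lambda>x. 0)" by (auto simp: supp_def)
  then show ?case by (simp add: TM_zero[symmetric])
next
  case (insert a D)
  define g' where "g' = (\<lambda>x. if x = a then 0 else g x)"
  have sg': "supp g' \<subseteq> supp g" by (auto simp: supp_def g'_def)
  have g'F: "g' \<in> TF" using insert(4) sg' unfolding tfree_iff by (meson rev_finite_subset subset_trans)
  have sg'D: "supp g' \<subseteq> D" using insert(5) by (auto simp: supp_def g'_def)
  have IH: "tcoset N g' = finprod (agrp TM) (\<lambda>a. tt a [^]\<^bsub>agrp TM\<^esub> g' a) D"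
    using insert g'F sg'D by auto
  have aC: "a \<in> carrier S \<times> mcar W" using insert by auto
  have "finprod (agrp TM) (\<lambda>a. tt a [^]\<^bsub>agrp TM\<^esub> g a) (insert a D) =
        madd TM (tt a [^]\<^bsub>agrp TM\<^esub> g a) (finprod (agrp TM) (\<lambda>a. tt a [^]\<^bsub>agrp TM\<^esub> g a) D)"
    using insert aC by (subst T.finprod_insert) (auto simp: Pi_iff subset_iff)
  also have "finprod (agrp TM) (\<lambda>a. tt a [^]\<^bsub>agrp TM\<^esub> g a) D = finprod (agrp TM) (\<lambda>a. tt a [^]\<^bsub>agrp TM\<^esub> g' a) D"
    using insert by (intro T.finprod_cong') (auto simp: g'_def Pi_iff)
  also have "\<dots> = tcoset N g'" by (rule IH[symmetric])
  also have "tt a [^]\<^bsub>agrp TM\<^esub> g a = tcoset N (\<lambda>x. g a * dlt a x)"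
    using aC by (simp add: TM_int_pow tfree_dlt)
  also have "madd TM (tcoset N (\<lambda>x. g a * dlt a x)) (tcoset N g') = tcoset N g"
    by (simp add: TM_add) (rule arg_cong[where f="tcoset N"], auto simp: g'_def dlt_def)
  finally show ?case by simp
qed

lemma decomp: "g \<in> TF \<Longrightarrow> tcoset N g = finprod (agrp TM) (\<lambda>a. tt a [^]\<^bsub>agrp TM\<^esub> g a) (supp g)"
  by (rule decomp_gen) (auto simp: tfree_iff)

lemma hom_ext:
  assumes H: "comm_group H" and h1: "h1 \<in> hom (agrp TM) H" and h2: "h2 \<in> hom (agrp TM) H"
    and eq: "\<And>a. a \<in> carrier S \<times> mcar W \<Longrightarrow> h1 (tt a) = h2 (tt a)"
    and X: "X \<in> mcar TM"
  shows "h1 X = h2 X"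
proof -
  obtain g where g: "g \<in> TF" and Xg: "X = tcoset N g" using X by (rule TM_cases)
  have sub: "supp g \<subseteq> carrier S \<times> mcar W" using g tfree_iff by blast
  have Hg: "group H" using H comm_group.axioms(2) by blast
  have fc: "(\<lambda>a. tt a [^]\<^bsub>agrp TM\<^esub> g a) \<in> supp g \<rightarrow> carrier (agrp TM)"
    using sub by auto
  have "\<And>h. h \<in> hom (agrp TM) H \<Longrightarrow> h X = finprod H (\<lambda>a. (h (tt a)) [^]\<^bsub>H\<^esub> g a) (supp g)"
  proof -
    fix h assume h: "h \<in> hom (agrp TM) H"
    have "h X = finprod H (\<lambda>a. h (tt a [^]\<^bsub>agrp TM\<^esub> g a)) (supp g)"
      unfolding Xg decomp[OF g] by (rule hom_finprod_gen[OF TM_comm_group H h fc])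
    also have "\<dots> = finprod H (\<lambda>a. (h (tt a)) [^]\<^bsub>H\<^esub> g a) (supp g)"
    proof (intro comm_monoid.finprod_cong' comm_group.axioms(1)[OF H] refl)
      show "(\<lambda>a. h (tt a) [^]\<^bsub>H\<^esub> g a) \<in> supp g \<rightarrow> carrier H"
      proof
        fix a assume "a \<in> supp g"
        then have "tt a \<in> mcar TM" using sub by auto
        then have "h (tt a) \<in> carrier H" using h unfolding hom_def by auto
        then show "h (tt a) [^]\<^bsub>H\<^esub> g a \<in> carrier H" by (rule group.int_pow_closed[OF Hg])
      qed
      show "\<And>a. a \<in> supp g \<Longrightarrow> h (tt a [^]\<^bsub>agrp TM\<^esub> g a) = h (tt a) [^]\<^bsub>H\<^esub> g a"
        by (rule hom_int_pow[OF h _ T.is_group Hg]) (use sub in auto)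
    qed
    finally show "h X = finprod H (\<lambda>a. (h (tt a)) [^]\<^bsub>H\<^esub> g a) (supp g)" .
  qed
  note e = this[OF h1] this[OF h2]
  have "finprod H (\<lambda>a. (h1 (tt a)) [^]\<^bsub>H\<^esub> g a) (supp g) = finprod H (\<lambda>a. (h2 (tt a)) [^]\<^bsub>H\<^esub> g a) (supp g)"
  proof (intro comm_monoid.finprod_cong' comm_group.axioms(1)[OF H] refl)
    show "(\<lambda>a. h2 (tt a) [^]\<^bsub>H\<^esub> g a) \<in> supp g \<rightarrow> carrier H"
    proof
      fix a assume "a \<in> supp g"
      then have "tt a \<in> mcar TM" using sub by auto
        then have "h2 (tt a) \<in> carrier H" using h2 unfolding hom_def by auto
      then show "h2 (tt a) [^]\<^bsub>H\<^esub> g a \<in> carrier H" by (rule group.int_pow_closed[OF Hg])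
    qed
    show "\<And>a. a \<in> supp g \<Longrightarrow> h1 (tt a) [^]\<^bsub>H\<^esub> g a = h2 (tt a) [^]\<^bsub>H\<^esub> g a"
    proof -
      fix a assume "a \<in> supp g"
      then have "a \<in> carrier S \<times> mcar W" using sub by blast
      then show "h1 (tt a) [^]\<^bsub>H\<^esub> g a = h2 (tt a) [^]\<^bsub>H\<^esub> g a" using eq by simp
    qed
  qed
  then show ?thesis by (rule trans[OF e(1) trans[OF _ e(2)[symmetric]]])
qed

end


lemma hom_add_gen:
  assumes H: "comm_group H" and f: "f \<in> hom G H" and g: "g \<in> hom G H"
  shows "(\<lambda>x. f x \<otimes>\<^bsub>H\<^esub> g x) \<in> hom G H"
proof -
  interpret H: comm_group H by (rule H)
  show ?thesis using f g unfolding hom_def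
    by (auto simp: Pi_iff H.m_ac)
qed

lemma hom_comp_gen:
  assumes f: "f \<in> hom G H" and g: "g \<in> hom H K"
  shows "(\<lambda>x. g (f x)) \<in> hom G K"
  using f g unfolding hom_def by (auto simp: Pi_iff)

definition Fhat :: "'h monoid \<Rightarrow> ('x \<Rightarrow> 'h) \<Rightarrow> ('x \<Rightarrow> int) \<Rightarrow> 'h" where
  "Fhat H F g = finprod H (\<lambda>x. F x [^]\<^bsub>H\<^esub> g x) (supp g)"

definition tlift :: "'h monoid \<Rightarrow> ('x \<Rightarrow> 'h) \<Rightarrow> ('x \<Rightarrow> int) set \<Rightarrow> 'h" where
  "tlift H F X = Fhat H F (SOME g. g \<in> X)"

locale tlift_ctx = tens R S l W for R :: "'r ring" and S :: "'s ring" and l and W :: "('r,'w) lmod" +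
  fixes H :: "'h monoid" and F :: "'s \<times> 'w \<Rightarrow> 'h"
  assumes H: "comm_group H"
    and Fc: "\<And>a. a \<in> carrier S \<times> mcar W \<Longrightarrow> F a \<in> carrier H"
    and bal1: "\<And>s s' w. s \<in> carrier S \<Longrightarrow> s' \<in> carrier S \<Longrightarrow> w \<in> mcar W \<Longrightarrow>
        F (s \<oplus>\<^bsub>S\<^esub> s', w) = F (s, w) \<otimes>\<^bsub>H\<^esub> F (s', w)"
    and bal2: "\<And>s w w'. s \<in> carrier S \<Longrightarrow> w \<in> mcar W \<Longrightarrow> w' \<in> mcar W \<Longrightarrow>
        F (s, madd W w w') = F (s, w) \<otimes>\<^bsub>H\<^esub> F (s, w')"
    and bal3: "\<And>s r w. s \<in> carrier S \<Longrightarrow> r \<in> carrier R \<Longrightarrow> w \<in> mcar W \<Longrightarrow>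
        F (s \<otimes>\<^bsub>S\<^esub> l r, w) = F (s, msmul W r w)"
begin

sublocale HG: comm_group H by (rule H)

lemma Fpow_closed[simp,intro]: "a \<in> carrier S \<times> mcar W \<Longrightarrow> F a [^]\<^bsub>H\<^esub> (n::int) \<in> carrier H"
  using Fc HG.int_pow_closed by blast

lemma Fhat_superset:
  assumes "finite D" "supp g \<subseteq> D" "D \<subseteq> carrier S \<times> mcar W"
  shows "Fhat H F g = finprod H (\<lambda>x. F x [^]\<^bsub>H\<^esub> g x) D"
  unfolding Fhat_def
proof (rule HG.finprod_mono_neutral_cong_left)
  show "finite D" "supp g \<subseteq> D" by fact+
  show "\<And>i. i \<in> D - supp g \<Longrightarrow> F i [^]\<^bsub>H\<^esub> g i = \<one>\<^bsub>H\<^esub>" by (simp add: supp_def)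
  show "\<And>x. x \<in> supp g \<Longrightarrow> F x [^]\<^bsub>H\<^esub> g x = F x [^]\<^bsub>H\<^esub> g x" by simp
  show "(\<lambda>x. F x [^]\<^bsub>H\<^esub> g x) \<in> D \<rightarrow> carrier H" using assms(3) by auto
qed

lemma Fhat_closed[simp,intro]: "g \<in> TF \<Longrightarrow> Fhat H F g \<in> carrier H"
  unfolding Fhat_def by (rule HG.finprod_closed) (auto simp: tfree_iff)

lemma inv3: "x \<in> carrier H \<Longrightarrow> y \<in> carrier H \<Longrightarrow> z \<in> carrier H \<Longrightarrow> x = y \<otimes>\<^bsub>H\<^esub> z \<Longrightarrow>
   x \<otimes>\<^bsub>H\<^esub> inv\<^bsub>H\<^esub> y \<otimes>\<^bsub>H\<^esub> inv\<^bsub>H\<^esub> z = \<one>\<^bsub>H\<^esub>"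
proof -
  assume c: "x \<in> carrier H" "y \<in> carrier H" "z \<in> carrier H" and e: "x = y \<otimes>\<^bsub>H\<^esub> z"
  have "x \<otimes>\<^bsub>H\<^esub> inv\<^bsub>H\<^esub> y \<otimes>\<^bsub>H\<^esub> inv\<^bsub>H\<^esub> z = x \<otimes>\<^bsub>H\<^esub> (inv\<^bsub>H\<^esub> y \<otimes>\<^bsub>H\<^esub> inv\<^bsub>H\<^esub> z)"
    using c by (simp add: HG.m_assoc)
  also have "inv\<^bsub>H\<^esub> y \<otimes>\<^bsub>H\<^esub> inv\<^bsub>H\<^esub> z = inv\<^bsub>H\<^esub> x"
    using c e by (simp add: HG.inv_mult)
  finally show ?thesis using c by simp
qed

lemma Fhat_add:
  assumes g: "g \<in> TF" and h: "h \<in> TF"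
  shows "Fhat H F (\<lambda>x. g x + h x) = Fhat H F g \<otimes>\<^bsub>H\<^esub> Fhat H F h"
proof -
  let ?D = "supp g \<union> supp h"
  have D: "finite ?D" "?D \<subseteq> carrier S \<times> mcar W" using g h tfree_iff by auto
  have s: "supp (\<lambda>x. g x + h x) \<subseteq> ?D" by (auto simp: supp_def)
  have "Fhat H F (\<lambda>x. g x + h x) = finprod H (\<lambda>x. F x [^]\<^bsub>H\<^esub> (g x + h x)) ?D"
    by (rule Fhat_superset[OF D(1) s D(2)])
  also have "\<dots> = finprod H (\<lambda>x. F x [^]\<^bsub>H\<^esub> g x \<otimes>\<^bsub>H\<^esub> F x [^]\<^bsub>H\<^esub> h x) ?D"
    using D(2) by (intro HG.finprod_cong') (auto simp: HG.int_pow_mult Fc Pi_iff subset_iff)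
  also have "\<dots> = finprod H (\<lambda>x. F x [^]\<^bsub>H\<^esub> g x) ?D \<otimes>\<^bsub>H\<^esub> finprod H (\<lambda>x. F x [^]\<^bsub>H\<^esub> h x) ?D"
    using D(2) by (intro HG.finprod_multf) (auto simp: Pi_iff subset_iff)
  also have "finprod H (\<lambda>x. F x [^]\<^bsub>H\<^esub> g x) ?D = Fhat H F g"
    by (rule Fhat_superset[symmetric]) (use D in auto)
  also have "finprod H (\<lambda>x. F x [^]\<^bsub>H\<^esub> h x) ?D = Fhat H F h"
    by (rule Fhat_superset[symmetric]) (use D in auto)
  finally show ?thesis .
qed

lemma Fhat_zero: "Fhat H F (\<lambda>x. 0) = \<one>\<^bsub>H\<^esub>"
  unfolding Fhat_def supp_def by simp

lemma Fhat_neg: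
  assumes g: "g \<in> TF"
  shows "Fhat H F (\<lambda>x. - g x) = inv\<^bsub>H\<^esub> (Fhat H F g)"
proof -
  have "Fhat H F (\<lambda>x. - g x) \<otimes>\<^bsub>H\<^esub> Fhat H F g = Fhat H F (\<lambda>x. - g x + g x)"
    by (rule Fhat_add[symmetric]) (use g in auto)
  also have "(\<lambda>x. - g x + g x) = (\<lambda>x. 0)" by simp
  also have "Fhat H F (\<lambda>x. 0) = \<one>\<^bsub>H\<^esub>" by (rule Fhat_zero)
  finally have e: "Fhat H F (\<lambda>x. - g x) \<otimes>\<^bsub>H\<^esub> Fhat H F g = \<one>\<^bsub>H\<^esub>" .
  show ?thesis using HG.inv_equality[OF e Fhat_closed[OF g] Fhat_closed[OF tfree_neg[OF g]]] by (rule sym)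
qed

lemma Fhat_diff:
  assumes g: "g \<in> TF" and h: "h \<in> TF"
  shows "Fhat H F (\<lambda>x. g x - h x) = Fhat H F g \<otimes>\<^bsub>H\<^esub> inv\<^bsub>H\<^esub> (Fhat H F h)"
proof -
  have "Fhat H F (\<lambda>x. g x - h x) = Fhat H F (\<lambda>x. g x + - h x)" by simp
  also have "\<dots> = Fhat H F g \<otimes>\<^bsub>H\<^esub> Fhat H F (\<lambda>x. - h x)" by (rule Fhat_add[OF g tfree_neg[OF h]])
  also have "Fhat H F (\<lambda>x. - h x) = inv\<^bsub>H\<^esub> (Fhat H F h)" by (rule Fhat_neg[OF h])
  finally show ?thesis .
qed

lemma Fhat_dlt: "a \<in> carrier S \<times> mcar W \<Longrightarrow> Fhat H F (dlt a) = F a"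
  unfolding Fhat_def by (simp add: Fc)

lemma Fhat_gen2:
  assumes "a \<in> carrier S \<times> mcar W" "b \<in> carrier S \<times> mcar W"
  shows "Fhat H F (\<lambda>x. dlt a x - dlt b x) = F a \<otimes>\<^bsub>H\<^esub> inv\<^bsub>H\<^esub> (F b)"
  using Fhat_diff[OF tfree_dlt[OF assms(1)] tfree_dlt[OF assms(2)]] Fhat_dlt[OF assms(1)] Fhat_dlt[OF assms(2)]
  by simp

lemma Fhat_gen3:
  assumes "a \<in> carrier S \<times> mcar W" "b \<in> carrier S \<times> mcar W" "c \<in> carrier S \<times> mcar W"
  shows "Fhat H F (\<lambda>x. dlt a x - dlt b x - dlt c x) = F a \<otimes>\<^bsub>H\<^esub> inv\<^bsub>H\<^esub> (F b) \<otimes>\<^bsub>H\<^esub> inv\<^bsub>H\<^esub> (F c)"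
  using Fhat_diff[OF tfree_diff[OF tfree_dlt[OF assms(1)] tfree_dlt[OF assms(2)]] tfree_dlt[OF assms(3)]]
     Fhat_gen2[OF assms(1,2)] Fhat_dlt[OF assms(3)]
  by simp

lemma Fhat_N: "g \<in> N \<Longrightarrow> Fhat H F g = \<one>\<^bsub>H\<^esub>"
proof (induct rule: trel.induct)
  case trel_zero then show ?case by (rule Fhat_zero)
next
  case (trel_gen g)
  then consider
    (a) s1 s2 w where "g = (\<lambda>x. dlt (s1 \<oplus>\<^bsub>S\<^esub> s2, w) x - dlt (s1, w) x - dlt (s2, w) x)" "s1 \<in> carrier S" "s2 \<in> carrier S" "w \<in> mcar W"
  | (b) s1 w w' where "g = (\<lambda>x. dlt (s1, madd W w w') x - dlt (s1, w) x - dlt (s1, w') x)" "s1 \<in> carrier S" "w \<in> mcar W" "w' \<in> mcar W"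
  | (c) s1 r w where "g = (\<lambda>x. dlt (s1 \<otimes>\<^bsub>S\<^esub> l r, w) x - dlt (s1, msmul W r w) x)" "s1 \<in> carrier S" "r \<in> carrier R" "w \<in> mcar W"
    unfolding tgens_def tdelta_dlt by blast
  then show ?case
  proof cases
    case a
    then show ?thesis using Fc[of "(s1,w)"] Fc[of "(s2,w)"] Fc[of "(s1 \<oplus>\<^bsub>S\<^esub> s2,w)"]
      by (simp add: Fhat_gen3 inv3 bal1)
  next
    case b
    then show ?thesis using Fc[of "(s1,w)"] Fc[of "(s1,w')"] Fc[of "(s1,madd W w w')"]
      by (simp add: Fhat_gen3 inv3 bal2)
  next
    case c
    then show ?thesis using Fc[of "(s1,msmul W r w)"]
      by (simp add: Fhat_gen2 bal3 HG.r_inv)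
  qed
next
  case (trel_diff g h)
  then show ?case by (simp add: Fhat_diff trel_tfree)
qed

lemma tlift_coset: assumes g: "g \<in> TF" shows "tlift H F (tcoset N g) = Fhat H F g"
proof -
  have ex: "\<exists>g'. g' \<in> tcoset N g" using tcoset_self[OF N_subgrp] by blast
  define g' where "g' = (SOME g'. g' \<in> tcoset N g)"
  have "g' \<in> tcoset N g" unfolding g'_def using someI_ex[OF ex] .
  then have d: "(\<lambda>x. g' x - g x) \<in> N" by (simp add: tcoset_eq[OF N_subgrp])
  have e: "g' = (\<lambda>x. g x + (\<lambda>x. g' x - g x) x)" by simp
  have "Fhat H F g' = Fhat H F g \<otimes>\<^bsub>H\<^esub> Fhat H F (\<lambda>x. g' x - g x)"
    by (subst e) (rule Fhat_add[OF g trel_tfree[OF d]])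
  also have "\<dots> = Fhat H F g" using Fhat_N[OF d] Fhat_closed[OF g] by simp
  finally show ?thesis unfolding tlift_def g'_def .
qed

lemma tlift_hom: "tlift H F \<in> hom (agrp TM) H"
proof (rule homI)
  fix X assume "X \<in> carrier (agrp TM)"
  then have "X \<in> mcar TM" by simp
  then obtain g where "g \<in> TF" "X = tcoset N g" using TM_ex by blast
  then show "tlift H F X \<in> carrier H" by (simp add: tlift_coset)
next
  fix X Y assume "X \<in> carrier (agrp TM)" "Y \<in> carrier (agrp TM)"
  then have "X \<in> mcar TM" "Y \<in> mcar TM" by simp_all
  then obtain g h where "g \<in> TF" "X = tcoset N g" "h \<in> TF" "Y = tcoset N h" using TM_ex by blast
  then show "tlift H F (X \<otimes>\<^bsub>agrp TM\<^esub> Y) = tlift H F X \<otimes>\<^bsub>H\<^esub> tlift H F Y"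
    by (simp add: tlift_coset TM_add Fhat_add tfree_add)
qed

lemma tlift_tt: "a \<in> carrier S \<times> mcar W \<Longrightarrow> tlift H F (tt a) = F a"
  by (simp add: tlift_coset tfree_dlt Fhat_dlt)

end

context tens begin

lemma smul_hom: "s \<in> carrier S \<Longrightarrow> msmul TM s \<in> hom (agrp TM) (agrp TM)"
proof (rule homI)
  fix X assume s: "s \<in> carrier S" and "X \<in> carrier (agrp TM)"
  then have "X \<in> mcar TM" by simp
  then obtain g where "g \<in> TF" "X = tcoset N g" using TM_ex by blast
  then show "msmul TM s X \<in> carrier (agrp TM)" using s by (simp add: TM_smul TM_smul_closed)
next
  fix X Y assume s: "s \<in> carrier S" and "X \<in> carrier (agrp TM)" "Y \<in> carrier (agrp TM)"
  then have "X \<in> mcar TM" "Y \<in> mcar TM" by simp_all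
  then obtain g h where g: "g \<in> TF" "X = tcoset N g" and h: "h \<in> TF" "Y = tcoset N h"
    using TM_ex by blast
  have "push (phS s) (\<lambda>x. g x + h x) = (\<lambda>y. push (phS s) g y + push (phS s) h y)"
    using g h by (intro push_add) (auto simp: tfree_iff)
  then show "msmul TM s (X \<otimes>\<^bsub>agrp TM\<^esub> Y) = msmul TM s X \<otimes>\<^bsub>agrp TM\<^esub> msmul TM s Y"
    using g h s by (simp add: TM_add TM_smul tfree_add)
qed

lemma smul_tt: "s \<in> carrier S \<Longrightarrow> a \<in> carrier S \<times> mcar W \<Longrightarrow> msmul TM s (tt a) = tt (phS s a)"
  by (simp add: TM_smul tfree_dlt push_dlt)

lemma tt_add_left: "s \<in> carrier S \<Longrightarrow> s' \<in> carrier S \<Longrightarrow> w \<in> mcar W \<Longrightarrow>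
  tt (s \<oplus>\<^bsub>S\<^esub> s', w) = madd TM (tt (s, w)) (tt (s', w))"
  using gen_a[of s s' w] by (simp add: TM_add tcoset_eq_iff[OF N_subgrp] diff_diff_eq)

lemma tt_add_right: "s \<in> carrier S \<Longrightarrow> w \<in> mcar W \<Longrightarrow> w' \<in> mcar W \<Longrightarrow>
  tt (s, madd W w w') = madd TM (tt (s, w)) (tt (s, w'))"
  using gen_b[of s w w'] by (simp add: TM_add tcoset_eq_iff[OF N_subgrp] diff_diff_eq)

lemma tt_bal: "s \<in> carrier S \<Longrightarrow> r \<in> carrier R \<Longrightarrow> w \<in> mcar W \<Longrightarrow>
  tt (s \<otimes>\<^bsub>S\<^esub> l r, w) = tt (s, msmul W r w)"
  by (simp add: tcoset_eq_iff[OF N_subgrp] gen_c)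

lemma TM_lmod: "is_lmod S TM"
proof -
  have C: "\<And>X. X \<in> mcar TM \<Longrightarrow> X \<in> carrier (agrp TM)" by simp
  show ?thesis unfolding is_lmod_def
  proof (intro conjI ballI)
    show "ring S" by (rule ringS)
    show "\<And>x y. x \<in> mcar TM \<Longrightarrow> y \<in> mcar TM \<Longrightarrow> madd TM x y \<in> mcar TM" using T.m_closed by simp
    show "\<And>x y z. x \<in> mcar TM \<Longrightarrow> y \<in> mcar TM \<Longrightarrow> z \<in> mcar TM \<Longrightarrow> madd TM (madd TM x y) z = madd TM x (madd TM y z)"
      using T.m_assoc by simp
    show "\<And>x y. x \<in> mcar TM \<Longrightarrow> y \<in> mcar TM \<Longrightarrow> madd TM x y = madd TM y x" using T.m_comm by simp
    show "mzero TM \<in> mcar TM" using T.one_closed by simp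
    show "\<And>x. x \<in> mcar TM \<Longrightarrow> madd TM (mzero TM) x = x" using T.l_one by simp
    show "\<And>x. x \<in> mcar TM \<Longrightarrow> \<exists>y\<in>mcar TM. madd TM x y = mzero TM"
      using T.r_inv T.inv_closed by (metis agrp_simps)
    show "\<And>a x. a \<in> carrier S \<Longrightarrow> x \<in> mcar TM \<Longrightarrow> msmul TM a x \<in> mcar TM"
      using smul_hom unfolding hom_def by auto
    show "\<And>a x y. a \<in> carrier S \<Longrightarrow> x \<in> mcar TM \<Longrightarrow> y \<in> mcar TM \<Longrightarrow> msmul TM a (madd TM x y) = madd TM (msmul TM a x) (msmul TM a y)"
      using smul_hom unfolding hom_def by auto
    fix a b X assume a: "a \<in> carrier S" and b: "b \<in> carrier S" and X: "X \<in> mcar TM"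
    show "msmul TM (a \<oplus>\<^bsub>S\<^esub> b) X = madd TM (msmul TM a X) (msmul TM b X)"
    proof (rule hom_ext[OF TM_comm_group _ _ _ X])
      show "msmul TM (a \<oplus>\<^bsub>S\<^esub> b) \<in> hom (agrp TM) (agrp TM)" using a b by (simp add: smul_hom)
      show "(\<lambda>X. madd TM (msmul TM a X) (msmul TM b X)) \<in> hom (agrp TM) (agrp TM)"
        using hom_add_gen[OF TM_comm_group smul_hom[OF a] smul_hom[OF b]] by simp
      fix c assume c: "c \<in> carrier S \<times> mcar W"
      then show "msmul TM (a \<oplus>\<^bsub>S\<^esub> b) (tt c) = madd TM (msmul TM a (tt c)) (msmul TM b (tt c))"
        using a b by (auto simp: smul_tt phS_def S.l_distr tt_add_left)
    qed
    show "msmul TM (a \<otimes>\<^bsub>S\<^esub> b) X = msmul TM a (msmul TM b X)"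
    proof (rule hom_ext[OF TM_comm_group _ _ _ X])
      show "msmul TM (a \<otimes>\<^bsub>S\<^esub> b) \<in> hom (agrp TM) (agrp TM)" using a b by (simp add: smul_hom)
      show "(\<lambda>X. msmul TM a (msmul TM b X)) \<in> hom (agrp TM) (agrp TM)"
        by (rule hom_comp_gen[OF smul_hom[OF b] smul_hom[OF a]])
      fix c assume c: "c \<in> carrier S \<times> mcar W"
      then show "msmul TM (a \<otimes>\<^bsub>S\<^esub> b) (tt c) = msmul TM a (msmul TM b (tt c))"
        using a b by (auto simp: smul_tt phS_def S.m_assoc)
    qed
  next
    fix X assume X: "X \<in> mcar TM"
    show "msmul TM \<one>\<^bsub>S\<^esub> X = X"
    proof (rule hom_ext[OF TM_comm_group _ _ _ X])
      show "msmul TM \<one>\<^bsub>S\<^esub> \<in> hom (agrp TM) (agrp TM)" by (simp add: smul_hom)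
      show "(\<lambda>X. X) \<in> hom (agrp TM) (agrp TM)" by (rule homI) auto
      fix c assume c: "c \<in> carrier S \<times> mcar W"
      then show "msmul TM \<one>\<^bsub>S\<^esub> (tt c) = tt c" by (auto simp: smul_tt phS_def)
    qed
  qed
qed

end


lemma lin_hom: "lin A M N f \<Longrightarrow> f \<in> hom (agrp M) (agrp N)"
  unfolding lin_def hom_def by auto

lemma lin_ext: "lin A M N f \<Longrightarrow> lin A M N g \<Longrightarrow> (\<And>x. x \<in> mcar M \<Longrightarrow> f x = g x) \<Longrightarrow> f = g"
  unfolding lin_def by (auto intro: extensionalityI)

lemma lin_closed: "lin A M N f \<Longrightarrow> x \<in> mcar M \<Longrightarrow> f x \<in> mcar N"
  unfolding lin_def by auto
lemma lin_add: "lin A M N f \<Longrightarrow> x \<in> mcar M \<Longrightarrow> y \<in> mcar M \<Longrightarrow> f (madd M x y) = madd N (f x) (f y)"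
  unfolding lin_def by auto
lemma lin_smul: "lin A M N f \<Longrightarrow> a \<in> carrier A \<Longrightarrow> x \<in> mcar M \<Longrightarrow> f (msmul M a x) = msmul N a (f x)"
  unfolding lin_def by auto
lemma lin_extensional: "lin A M N f \<Longrightarrow> x \<notin> mcar M \<Longrightarrow> f x = undefined"
  unfolding lin_def extensional_def by auto

lemma linI:
  assumes "\<And>x. x \<in> mcar M \<Longrightarrow> f x \<in> mcar N" "\<And>x. x \<notin> mcar M \<Longrightarrow> f x = undefined"
    "\<And>x y. x \<in> mcar M \<Longrightarrow> y \<in> mcar M \<Longrightarrow> f (madd M x y) = madd N (f x) (f y)"
    "\<And>a x. a \<in> carrier A \<Longrightarrow> x \<in> mcar M \<Longrightarrow> f (msmul M a x) = msmul N a (f x)"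
  shows "lin A M N f"
  unfolding lin_def extensional_def using assms by auto

lemma hom_finprod_fun:
  assumes H: "comm_group H" and G: "group G" and fin: "finite I" and f: "\<And>i. i \<in> I \<Longrightarrow> f i \<in> hom G H"
  shows "(\<lambda>x. finprod H (\<lambda>i. f i x) I) \<in> hom G H"
  using fin f
proof (induct I rule: finite_induct)
  case empty
  interpret H: comm_group H by (rule H)
  show ?case by (rule homI) auto
next
  case (insert i I)
  interpret H: comm_group H by (rule H)
  have fi: "f i \<in> hom G H" using insert by auto
  have "(\<lambda>x. f i x \<otimes>\<^bsub>H\<^esub> finprod H (\<lambda>i. f i x) I) \<in> hom G H"
    by (rule hom_add_gen[OF H fi insert(3)]) (use insert in auto)
  moreover have "\<And>x. x \<in> carrier G \<Longrightarrow> finprod H (\<lambda>i. f i x) (insert i I) = f i x \<otimes>\<^bsub>H\<^esub> finprod H (\<lambda>i. f i x) I"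
    using insert by (intro H.finprod_insert) (auto simp: hom_def Pi_iff)
  ultimately show ?case unfolding hom_def by (auto simp: Pi_iff group.is_monoid[OF G] monoid.m_closed)
qed

context lmodule begin

abbreviation "E \<equiv> endring A M"

lemma E_simps:
  "carrier E = {f. lin A M M f}"
  "f \<otimes>\<^bsub>E\<^esub> g = (\<lambda>x\<in>mcar M. g (f x))"
  "\<one>\<^bsub>E\<^esub> = (\<lambda>x\<in>mcar M. x)"
  "\<zero>\<^bsub>E\<^esub> = (\<lambda>x\<in>mcar M. mzero M)"
  "f \<oplus>\<^bsub>E\<^esub> g = (\<lambda>x\<in>mcar M. madd M (f x) (g x))"
  unfolding endring_def by simp_all

lemma lin_id: "lin A M M (\<lambda>x\<in>mcar M. x)"
  by (rule linI) auto

lemma lin_comp: "lin A M M f \<Longrightarrow> lin A M M g \<Longrightarrow> lin A M M (\<lambda>x\<in>mcar M. g (f x))"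
  by (rule linI) (auto simp: lin_closed lin_add lin_smul)

lemma lin_addf: "lin A M M f \<Longrightarrow> lin A M M g \<Longrightarrow> lin A M M (\<lambda>x\<in>mcar M. madd M (f x) (g x))"
  by (rule linI) (auto simp: lin_closed lin_add lin_smul smul_add add_assoc add_lcomm)

lemma lin_zerof: "lin A M M (\<lambda>x\<in>mcar M. mzero M)"
  by (rule linI) auto

lemma lin_negf: "lin A M M f \<Longrightarrow> lin A M M (\<lambda>x\<in>mcar M. mneg (f x))"
  by (rule linI) (auto simp: lin_closed lin_add lin_smul smul_neg neg_add)

lemma E_ring: "ring E"
proof (rule ringI)
  show "abelian_group E"
  proof (rule abelian_groupI)
    show "\<And>x y. x \<in> carrier E \<Longrightarrow> y \<in> carrier E \<Longrightarrow> x \<oplus>\<^bsub>E\<^esub> y \<in> carrier E"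
      "\<zero>\<^bsub>E\<^esub> \<in> carrier E"
      "\<And>x y z. x \<in> carrier E \<Longrightarrow> y \<in> carrier E \<Longrightarrow> z \<in> carrier E \<Longrightarrow> x \<oplus>\<^bsub>E\<^esub> y \<oplus>\<^bsub>E\<^esub> z = x \<oplus>\<^bsub>E\<^esub> (y \<oplus>\<^bsub>E\<^esub> z)"
      "\<And>x y. x \<in> carrier E \<Longrightarrow> y \<in> carrier E \<Longrightarrow> x \<oplus>\<^bsub>E\<^esub> y = y \<oplus>\<^bsub>E\<^esub> x"
      "\<And>x. x \<in> carrier E \<Longrightarrow> \<zero>\<^bsub>E\<^esub> \<oplus>\<^bsub>E\<^esub> x = x"
    proof (simp_all only: E_simps mem_Collect_eq)
    show "\<And>x y. lin A M M x \<Longrightarrow> lin A M M y \<Longrightarrow> lin A M M (\<lambda>xa\<in>mcar M. madd M (x xa) (y xa))"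
      by (rule lin_addf)
    show "lin A M M (\<lambda>x\<in>mcar M. mzero M)" by (rule lin_zerof)
    show "\<And>x y z. lin A M M x \<Longrightarrow> lin A M M y \<Longrightarrow> lin A M M z \<Longrightarrow>
      (\<lambda>xa\<in>mcar M. madd M ((\<lambda>xa\<in>mcar M. madd M (x xa) (y xa)) xa) (z xa)) =
      (\<lambda>xa\<in>mcar M. madd M (x xa) ((\<lambda>x\<in>mcar M. madd M (y x) (z x)) xa))"
      by (rule restrict_ext) (simp add: lin_closed add_assoc)
    show "\<And>f g. lin A M M f \<Longrightarrow> lin A M M g \<Longrightarrow>
      (\<lambda>xa\<in>mcar M. madd M (f xa) (g xa)) = (\<lambda>x\<in>mcar M. madd M (g x) (f x))"
      by (rule restrict_ext) (simp add: lin_closed add_comm)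
    show "\<And>x. lin A M M x \<Longrightarrow> (\<lambda>xa\<in>mcar M. madd M ((\<lambda>x\<in>mcar M. mzero M) xa) (x xa)) = x"
      by (rule extensionalityI[where A="mcar M"]) (auto simp: lin_closed lin_def)
    qed
    show "\<And>x. x \<in> carrier E \<Longrightarrow> \<exists>y\<in>carrier E. y \<oplus>\<^bsub>E\<^esub> x = \<zero>\<^bsub>E\<^esub>"
    proof -
      fix f assume "f \<in> carrier E"
      then have f: "lin A M M f" by (simp add: E_simps)
      have "(\<lambda>x\<in>mcar M. mneg (f x)) \<oplus>\<^bsub>E\<^esub> f = \<zero>\<^bsub>E\<^esub>"
        unfolding E_simps by (rule restrict_ext) (simp add: lin_closed[OF f])
      moreover have "(\<lambda>x\<in>mcar M. mneg (f x)) \<in> carrier E" using lin_negf[OF f] by (simp add: E_simps)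
      ultimately show "\<exists>y\<in>carrier E. y \<oplus>\<^bsub>E\<^esub> f = \<zero>\<^bsub>E\<^esub>" by blast
    qed
  qed
  show "monoid E"
  proof (rule monoidI, simp_all only: E_simps mem_Collect_eq)
    show "\<And>x y. lin A M M x \<Longrightarrow> lin A M M y \<Longrightarrow> lin A M M (\<lambda>xa\<in>mcar M. y (x xa))" by (rule lin_comp)
    show "lin A M M (\<lambda>x\<in>mcar M. x)" by (rule lin_id)
    show "\<And>x y z. lin A M M x \<Longrightarrow> lin A M M y \<Longrightarrow> lin A M M z \<Longrightarrow>
      (\<lambda>xa\<in>mcar M. z ((\<lambda>xa\<in>mcar M. y (x xa)) xa)) = (\<lambda>xa\<in>mcar M. (\<lambda>x\<in>mcar M. z (y x)) (x xa))"
      by (rule restrict_ext) (simp add: lin_closed)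
    show "\<And>x. lin A M M x \<Longrightarrow> (\<lambda>xa\<in>mcar M. x ((\<lambda>x\<in>mcar M. x) xa)) = x"
      by (rule extensionalityI[where A="mcar M"]) (auto simp: lin_def)
    show "\<And>x. lin A M M x \<Longrightarrow> (\<lambda>xa\<in>mcar M. (\<lambda>x\<in>mcar M. x) (x xa)) = x"
      by (rule extensionalityI[where A="mcar M"]) (auto simp: lin_def)
  qed
  show "\<And>x y z. x \<in> carrier E \<Longrightarrow> y \<in> carrier E \<Longrightarrow> z \<in> carrier E \<Longrightarrow>
     (x \<oplus>\<^bsub>E\<^esub> y) \<otimes>\<^bsub>E\<^esub> z = x \<otimes>\<^bsub>E\<^esub> z \<oplus>\<^bsub>E\<^esub> y \<otimes>\<^bsub>E\<^esub> z"
    by (simp only: E_simps mem_Collect_eq) (rule restrict_ext, simp add: lin_closed lin_add)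
  show "\<And>x y z. x \<in> carrier E \<Longrightarrow> y \<in> carrier E \<Longrightarrow> z \<in> carrier E \<Longrightarrow>
     z \<otimes>\<^bsub>E\<^esub> (x \<oplus>\<^bsub>E\<^esub> y) = z \<otimes>\<^bsub>E\<^esub> x \<oplus>\<^bsub>E\<^esub> z \<otimes>\<^bsub>E\<^esub> y"
    by (simp only: E_simps mem_Collect_eq) (rule restrict_ext, simp add: lin_closed)
qed

sublocale ER: ring E by (rule E_ring)

lemma E_finsum_eval:
  assumes f: "f \<in> I \<rightarrow> carrier E" and x: "x \<in> mcar M"
  shows "finsum E f I x = finprod (agrp M) (\<lambda>i. f i x) I"
  using f
proof (induct I rule: infinite_finite_induct)
  case (infinite I)
  then show ?case using x by (simp add: ER.finsum_infinite E_simps)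
next
  case empty
  then show ?case using x by (simp add: ER.finsum_empty E_simps)
next
  case (insert i I)
  have "finsum E f (insert i I) = f i \<oplus>\<^bsub>E\<^esub> finsum E f I"
    using insert by (intro ER.finsum_insert) auto
  moreover have "finprod (agrp M) (\<lambda>i. f i x) (insert i I) = madd M (f i x) (finprod (agrp M) (\<lambda>i. f i x) I)"
    using insert x by (subst G.finprod_insert) (auto simp: Pi_iff E_simps lin_closed)
  ultimately show ?case using insert x by (simp add: E_simps)
qed

end


definition ev :: "'a ring \<Rightarrow> nat \<Rightarrow> nat \<Rightarrow> (nat \<Rightarrow> 'a)" where
  "ev A n j = (\<lambda>k. if k < n then (if k = j then \<one>\<^bsub>A\<^esub> else \<zero>\<^bsub>A\<^esub>) else \<zero>\<^bsub>A\<^esub>)"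

locale rng = ring R for R :: "'a ring"
begin

lemma freemod_lmod: "is_lmod R (freemod R n)"
  unfolding is_lmod_def freemod_def
  apply (simp add: ring_axioms)
  apply (intro conjI allI impI ballI)
  apply (auto simp: a_assoc r_distr l_distr m_assoc)
  apply (rule ext, simp add: a_comm)
  subgoal for x
    by (rule exI[of _ "\<lambda>i. if i < n then \<ominus>\<^bsub>R\<^esub> x i else \<zero>\<^bsub>R\<^esub>"]) (auto simp: r_neg)
  done

lemma ev_mem: "ev R n j \<in> mcar (freemod R n)"
  unfolding ev_def freemod_def by auto

lemma freemod_finprod_eval:
  assumes g: "g \<in> I \<rightarrow> mcar (freemod R n)" and k: "k < n"
  shows "finprod (agrp (freemod R n)) g I k = finsum R (\<lambda>j. g j k) I"
  using g
proof (induct I rule: infinite_finite_induct)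
  case (infinite I)
  interpret F: comm_group "agrp (freemod R n)" by (rule lmod_comm_group[OF freemod_lmod])
  have "finprod (agrp (freemod R n)) g I = mzero (freemod R n)" using infinite by (simp add: F.finprod_infinite)
  then show ?case using infinite by (simp add: finsum_infinite freemod_def)
next
  case empty
  interpret F: comm_group "agrp (freemod R n)" by (rule lmod_comm_group[OF freemod_lmod])
  have "finprod (agrp (freemod R n)) g {} = mzero (freemod R n)" by simp
  then show ?case by (simp add: freemod_def)
next
  case (insert i I)
  interpret F: comm_group "agrp (freemod R n)" by (rule lmod_comm_group[OF freemod_lmod])
  have "finprod (agrp (freemod R n)) g (insert i I) = madd (freemod R n) (g i) (finprod (agrp (freemod R n)) g I)"
    using insert by (subst F.finprod_insert) auto
  moreover have "finsum R (\<lambda>j. g j k) (insert i I) = g i k \<oplus>\<^bsub>R\<^esub> finsum R (\<lambda>j. g j k) I"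
    using insert k by (subst finsum_insert) (auto simp: freemod_def Pi_iff)
  ultimately show ?case using insert k by (simp add: freemod_def)
qed

lemma freemod_decomp:
  assumes v: "v \<in> mcar (freemod R n)"
  shows "v = finprod (agrp (freemod R n)) (\<lambda>j. msmul (freemod R n) (v j) (ev R n j)) {..<n}"
proof -
  interpret F: lmodule R "freemod R n" by (rule lmodule.intro[OF freemod_lmod])
  have vc: "\<And>j. j < n \<Longrightarrow> v j \<in> carrier R" using v by (simp add: freemod_def)
  have fc: "(\<lambda>j. msmul (freemod R n) (v j) (ev R n j)) \<in> {..<n} \<rightarrow> mcar (freemod R n)"
    using vc ev_mem by auto
  show ?thesis
  proof (rule ext)
    fix k
    show "v k = finprod (agrp (freemod R n)) (\<lambda>j. msmul (freemod R n) (v j) (ev R n j)) {..<n} k"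
    proof (cases "k < n")
      case True
      have "finprod (agrp (freemod R n)) (\<lambda>j. msmul (freemod R n) (v j) (ev R n j)) {..<n} k
          = finsum R (\<lambda>j. msmul (freemod R n) (v j) (ev R n j) k) {..<n}"
        by (rule freemod_finprod_eval[OF fc True])
      also have "\<dots> = finsum R (\<lambda>j. if k = j then v j else \<zero>\<^bsub>R\<^esub>) {..<n}"
        using True vc by (intro finsum_cong') (auto simp: freemod_def ev_def)
      also have "\<dots> = v k" using True vc by (subst add.finprod_singleton) auto
      finally show ?thesis by simp
    next
      case False
      have fc': "(\<lambda>j. msmul (freemod R n) (v j) (ev R n j)) \<in> {..<n} \<rightarrow> carrier (agrp (freemod R n))"
        using fc by simp
      have "finprod (agrp (freemod R n)) (\<lambda>j. msmul (freemod R n) (v j) (ev R n j)) {..<n} \<in> mcar (freemod R n)"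
        using F.G.finprod_closed[OF fc'] by simp
      then show ?thesis using False v by (simp add: freemod_def)
    qed
  qed
qed

lemma lin_freemod_decomp:
  assumes N: "is_lmod R N" and f: "lin R (freemod R n) N f" and v: "v \<in> mcar (freemod R n)"
  shows "f v = finprod (agrp N) (\<lambda>j. msmul N (v j) (f (ev R n j))) {..<n}"
proof -
  interpret F: lmodule R "freemod R n" by (rule lmodule.intro[OF freemod_lmod])
  interpret NN: lmodule R N by (rule lmodule.intro[OF N])
  have vc: "\<And>j. j < n \<Longrightarrow> v j \<in> carrier R" using v by (simp add: freemod_def)
  have fc: "(\<lambda>j. msmul (freemod R n) (v j) (ev R n j)) \<in> {..<n} \<rightarrow> carrier (agrp (freemod R n))"
    using vc ev_mem by auto
  have "f v = finprod (agrp N) (\<lambda>j. f (msmul (freemod R n) (v j) (ev R n j))) {..<n}"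
    by (subst freemod_decomp[OF v]) (rule hom_finprod_gen[OF F.G.comm_group_axioms NN.G.comm_group_axioms lin_hom[OF f] fc])
  also have "\<dots> = finprod (agrp N) (\<lambda>j. msmul N (v j) (f (ev R n j))) {..<n}"
    using vc ev_mem by (intro NN.G.finprod_cong') (auto simp: lin_smul[OF f] lin_closed[OF f])
  finally show ?thesis .
qed

end


lemma restr_mod_simps[simp]:
  "mcar (restr_mod A B l) = carrier B"
  "madd (restr_mod A B l) = (\<lambda>x y. x \<oplus>\<^bsub>B\<^esub> y)"
  "mzero (restr_mod A B l) = \<zero>\<^bsub>B\<^esub>"
  "msmul (restr_mod A B l) = (\<lambda>a x. l a \<otimes>\<^bsub>B\<^esub> x)"
  unfolding restr_mod_def by simp_all

lemma regmod_simps[simp]: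
  "mcar (regmod A) = carrier A"
  "madd (regmod A) = (\<lambda>x y. x \<oplus>\<^bsub>A\<^esub> y)"
  "mzero (regmod A) = \<zero>\<^bsub>A\<^esub>"
  "msmul (regmod A) = (\<lambda>a x. a \<otimes>\<^bsub>A\<^esub> x)"
  unfolding regmod_def by simp_all

lemma agrp_restr: "agrp (restr_mod A (B::'b ring) l) = add_monoid B"
  unfolding agrp_def restr_mod_def by simp

lemma agrp_reg: "agrp (regmod (A::'a ring)) = add_monoid A"
  unfolding agrp_def regmod_def by simp

lemma restr_lmod:
  assumes A: "ring A" and B: "ring B" and h: "l \<in> ring_hom A B"
  shows "is_lmod A (restr_mod A B l)"
proof -
  interpret A: ring A by (rule A)
  interpret B: ring B by (rule B)
  have lc: "\<And>a. a \<in> carrier A \<Longrightarrow> l a \<in> carrier B" using h by (auto simp: ring_hom_def)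
  have la: "\<And>a b. a \<in> carrier A \<Longrightarrow> b \<in> carrier A \<Longrightarrow> l (a \<oplus>\<^bsub>A\<^esub> b) = l a \<oplus>\<^bsub>B\<^esub> l b" using h by (auto simp: ring_hom_def)
  have lm: "\<And>a b. a \<in> carrier A \<Longrightarrow> b \<in> carrier A \<Longrightarrow> l (a \<otimes>\<^bsub>A\<^esub> b) = l a \<otimes>\<^bsub>B\<^esub> l b" using h by (auto simp: ring_hom_def)
  have l1: "l \<one>\<^bsub>A\<^esub> = \<one>\<^bsub>B\<^esub>" using h by (auto simp: ring_hom_def)
  have inv: "\<forall>x\<in>carrier B. \<exists>y\<in>carrier B. x \<oplus>\<^bsub>B\<^esub> y = \<zero>\<^bsub>B\<^esub>"
    using B.r_neg B.a_inv_closed by blast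
  show ?thesis unfolding is_lmod_def
    using inv by (auto simp: A B lc la lm l1 B.a_ac B.r_distr B.l_distr B.m_assoc)
qed

locale frs = tens R S l W for R :: "'r ring" and S :: "'s ring" and l and W :: "('r,'w) lmod" +
  fixes \<psi> :: "'s \<Rightarrow> 's \<Rightarrow> 'r" and m :: nat and p :: "(nat \<Rightarrow> 'r) \<Rightarrow> 's" and i :: "'s \<Rightarrow> nat \<Rightarrow> 'r"
  assumes ringR: "ring R"
    and psi_bij: "bij_betw \<psi> (carrier S) {\<phi>. lin R (restr_mod R S l) (regmod R) \<phi>}"
    and psi_bimod: "\<And>s x r. s \<in> carrier S \<Longrightarrow> x \<in> carrier S \<Longrightarrow> r \<in> carrier R \<Longrightarrow>
        \<psi> (s \<otimes>\<^bsub>S\<^esub> x \<otimes>\<^bsub>S\<^esub> l r) = (\<lambda>y\<in>carrier S. \<psi> x (y \<otimes>\<^bsub>S\<^esub> s) \<otimes>\<^bsub>R\<^esub> r)"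
    and cp_p: "lin R (freemod R m) (restr_mod R S l) p"
    and cp_i: "lin R (restr_mod R S l) (freemod R m) i"
    and cp_pr: "\<And>v r. v \<in> mcar (freemod R m) \<Longrightarrow> r \<in> carrier R \<Longrightarrow> p (freemod_rsmul R m v r) = p v \<otimes>\<^bsub>S\<^esub> l r"
    and cp_ir: "\<And>x r. x \<in> carrier S \<Longrightarrow> r \<in> carrier R \<Longrightarrow> i (x \<otimes>\<^bsub>S\<^esub> l r) = freemod_rsmul R m (i x) r"
    and cp_pi: "\<And>x. x \<in> carrier S \<Longrightarrow> p (i x) = x"
begin

sublocale RG: ring R by (rule ringR)
lemma rngR: "rng R" by (rule rng.intro[OF ringR])
lemmas ev_mem = rng.ev_mem[OF rngR]
lemmas lin_freemod_decomp = rng.lin_freemod_decomp[OF rngR]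

definition Etr :: "'s \<Rightarrow> 'r" where "Etr = \<psi> \<one>\<^bsub>S\<^esub>"
definition cc :: "nat \<Rightarrow> 's" where "cc j = p (ev R m j)"
definition al :: "nat \<Rightarrow> 's \<Rightarrow> 'r" where "al j s = i s j"
definition xk :: "nat \<Rightarrow> 's" where "xk j = inv_into (carrier S) \<psi> (\<lambda>y\<in>carrier S. al j y)"

lemma restrS_lmod: "is_lmod R (restr_mod R S l)"
  by (rule restr_lmod[OF ringR ringS lhom])

lemma al_closed[simp,intro]: "j < m \<Longrightarrow> s \<in> carrier S \<Longrightarrow> al j s \<in> carrier R"
  using lin_closed[OF cp_i, of s] by (simp add: al_def freemod_def)

lemma al_add: "j < m \<Longrightarrow> s \<in> carrier S \<Longrightarrow> s' \<in> carrier S \<Longrightarrow> al j (s \<oplus>\<^bsub>S\<^esub> s') = al j s \<oplus>\<^bsub>R\<^esub> al j s'"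
  using lin_add[OF cp_i, of s s'] by (simp add: al_def freemod_def)

lemma al_lmul: "j < m \<Longrightarrow> r \<in> carrier R \<Longrightarrow> s \<in> carrier S \<Longrightarrow> al j (l r \<otimes>\<^bsub>S\<^esub> s) = r \<otimes>\<^bsub>R\<^esub> al j s"
  using lin_smul[OF cp_i, of r s] by (simp add: al_def freemod_def)

lemma al_rmul: "j < m \<Longrightarrow> r \<in> carrier R \<Longrightarrow> s \<in> carrier S \<Longrightarrow> al j (s \<otimes>\<^bsub>S\<^esub> l r) = al j s \<otimes>\<^bsub>R\<^esub> r"
  using cp_ir[of s r] by (simp add: al_def freemod_rsmul_def)

lemma cc_closed[simp,intro]: "cc j \<in> carrier S"
  using lin_closed[OF cp_p ev_mem] by (simp add: cc_def)

lemma cc_comm: "j < m \<Longrightarrow> r \<in> carrier R \<Longrightarrow> cc j \<otimes>\<^bsub>S\<^esub> l r = l r \<otimes>\<^bsub>S\<^esub> cc j"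
proof -
  assume j: "j < m" and r: "r \<in> carrier R"
  have "freemod_rsmul R m (ev R m j) r = msmul (freemod R m) r (ev R m j)"
    using r by (auto simp: freemod_rsmul_def freemod_def ev_def)
  then have "p (freemod_rsmul R m (ev R m j) r) = l r \<otimes>\<^bsub>S\<^esub> cc j"
    using lin_smul[OF cp_p r ev_mem] by (simp add: cc_def)
  then show ?thesis using cp_pr[OF ev_mem r] by (simp add: cc_def)
qed

lemma S1: "s \<in> carrier S \<Longrightarrow> s = finsum S (\<lambda>j. l (al j s) \<otimes>\<^bsub>S\<^esub> cc j) {..<m}"
proof -
  assume s: "s \<in> carrier S"
  have "s = p (i s)" using cp_pi[OF s] by simp
  also have "\<dots> = finprod (agrp (restr_mod R S l)) (\<lambda>j. msmul (restr_mod R S l) (i s j) (p (ev R m j))) {..<m}"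
    by (rule lin_freemod_decomp[OF restrS_lmod cp_p lin_closed[OF cp_i]]) (simp add: s)
  also have "\<dots> = finsum S (\<lambda>j. l (al j s) \<otimes>\<^bsub>S\<^esub> cc j) {..<m}"
    by (simp add: agrp_restr finsum_def al_def cc_def)
  finally show ?thesis .
qed

lemma E_lin: "lin R (restr_mod R S l) (regmod R) Etr"
  using bij_betwE[OF psi_bij] by (simp add: Etr_def)

lemma E_closed[simp,intro]: "y \<in> carrier S \<Longrightarrow> Etr y \<in> carrier R"
  using lin_closed[OF E_lin] by simp

lemma E_add: "y \<in> carrier S \<Longrightarrow> y' \<in> carrier S \<Longrightarrow> Etr (y \<oplus>\<^bsub>S\<^esub> y') = Etr y \<oplus>\<^bsub>R\<^esub> Etr y'"
  using lin_add[OF E_lin] by simp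

lemma E_lmul: "r \<in> carrier R \<Longrightarrow> y \<in> carrier S \<Longrightarrow> Etr (l r \<otimes>\<^bsub>S\<^esub> y) = r \<otimes>\<^bsub>R\<^esub> Etr y"
  using lin_smul[OF E_lin] by simp

lemma psi_E: "x \<in> carrier S \<Longrightarrow> y \<in> carrier S \<Longrightarrow> \<psi> x y = Etr (y \<otimes>\<^bsub>S\<^esub> x)"
proof -
  assume x: "x \<in> carrier S" and y: "y \<in> carrier S"
  have "\<psi> (x \<otimes>\<^bsub>S\<^esub> \<one>\<^bsub>S\<^esub> \<otimes>\<^bsub>S\<^esub> l \<one>\<^bsub>R\<^esub>) = (\<lambda>y\<in>carrier S. \<psi> \<one>\<^bsub>S\<^esub> (y \<otimes>\<^bsub>S\<^esub> x) \<otimes>\<^bsub>R\<^esub> \<one>\<^bsub>R\<^esub>)"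
    using psi_bimod[OF x S.one_closed W.R.one_closed] .
  then have "\<psi> x y = \<psi> \<one>\<^bsub>S\<^esub> (y \<otimes>\<^bsub>S\<^esub> x) \<otimes>\<^bsub>R\<^esub> \<one>\<^bsub>R\<^esub>" using x y by simp
  then show ?thesis using x y E_closed[of "y \<otimes>\<^bsub>S\<^esub> x"] by (simp add: Etr_def)
qed

lemma E_rmul: "r \<in> carrier R \<Longrightarrow> y \<in> carrier S \<Longrightarrow> Etr (y \<otimes>\<^bsub>S\<^esub> l r) = Etr y \<otimes>\<^bsub>R\<^esub> r"
proof -
  assume r: "r \<in> carrier R" and y: "y \<in> carrier S"
  have "\<psi> (\<one>\<^bsub>S\<^esub> \<otimes>\<^bsub>S\<^esub> \<one>\<^bsub>S\<^esub> \<otimes>\<^bsub>S\<^esub> l r) = (\<lambda>y\<in>carrier S. \<psi> \<one>\<^bsub>S\<^esub> (y \<otimes>\<^bsub>S\<^esub> \<one>\<^bsub>S\<^esub>) \<otimes>\<^bsub>R\<^esub> r)"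
    using psi_bimod[OF S.one_closed S.one_closed r] .
  then have e: "\<psi> (l r) y = \<psi> \<one>\<^bsub>S\<^esub> y \<otimes>\<^bsub>R\<^esub> r" using r y by simp
  have "\<psi> (l r) y = Etr (y \<otimes>\<^bsub>S\<^esub> l r)" by (rule psi_E) (use r y in auto)
  then show ?thesis using e by (simp add: Etr_def)
qed

lemma psi_inj: "x \<in> carrier S \<Longrightarrow> x' \<in> carrier S \<Longrightarrow> (\<And>y. y \<in> carrier S \<Longrightarrow> Etr (y \<otimes>\<^bsub>S\<^esub> x) = Etr (y \<otimes>\<^bsub>S\<^esub> x')) \<Longrightarrow> x = x'"
proof -
  assume x: "x \<in> carrier S" and x': "x' \<in> carrier S" and e: "\<And>y. y \<in> carrier S \<Longrightarrow> Etr (y \<otimes>\<^bsub>S\<^esub> x) = Etr (y \<otimes>\<^bsub>S\<^esub> x')"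
  have l1: "lin R (restr_mod R S l) (regmod R) (\<psi> x)" "lin R (restr_mod R S l) (regmod R) (\<psi> x')"
    using bij_betwE[OF psi_bij] x x' by auto
  have "\<psi> x = \<psi> x'" by (rule lin_ext[OF l1]) (simp add: psi_E x x' e)
  then show ?thesis using bij_betw_imp_inj_on[OF psi_bij] x x' by (auto dest: inj_onD)
qed

lemma al_lin: "j < m \<Longrightarrow> lin R (restr_mod R S l) (regmod R) (\<lambda>y\<in>carrier S. al j y)"
  by (rule linI) (auto simp: al_add al_lmul)

lemma xk_closed[simp,intro]: "j < m \<Longrightarrow> xk j \<in> carrier S"
  unfolding xk_def using al_lin bij_betw_imp_surj_on[OF psi_bij]
  by (metis (no_types, lifting) inv_into_into mem_Collect_eq)

lemma psi_xk: "j < m \<Longrightarrow> \<psi> (xk j) = (\<lambda>y\<in>carrier S. al j y)"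
  unfolding xk_def using al_lin bij_betw_imp_surj_on[OF psi_bij]
  by (metis (no_types, lifting) f_inv_into_f mem_Collect_eq)

lemma E_xk: "j < m \<Longrightarrow> y \<in> carrier S \<Longrightarrow> Etr (y \<otimes>\<^bsub>S\<^esub> xk j) = al j y"
  using psi_xk[of j] psi_E[of "xk j" y] by (metis restrict_apply' xk_closed)

lemma xk_comm: "j < m \<Longrightarrow> r \<in> carrier R \<Longrightarrow> xk j \<otimes>\<^bsub>S\<^esub> l r = l r \<otimes>\<^bsub>S\<^esub> xk j"
proof -
  assume j: "j < m" and r: "r \<in> carrier R"
  show ?thesis
  proof (rule psi_inj)
    show "xk j \<otimes>\<^bsub>S\<^esub> l r \<in> carrier S" "l r \<otimes>\<^bsub>S\<^esub> xk j \<in> carrier S" using j r by auto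
    fix y assume y: "y \<in> carrier S"
    have "Etr (y \<otimes>\<^bsub>S\<^esub> (xk j \<otimes>\<^bsub>S\<^esub> l r)) = Etr (y \<otimes>\<^bsub>S\<^esub> xk j) \<otimes>\<^bsub>R\<^esub> r"
      using j r y by (simp add: S.m_assoc[symmetric] E_rmul)
    also have "\<dots> = al j y \<otimes>\<^bsub>R\<^esub> r" using j y by (simp add: E_xk)
    also have "\<dots> = al j (y \<otimes>\<^bsub>S\<^esub> l r)" using j r y by (simp add: al_rmul)
    also have "\<dots> = Etr (y \<otimes>\<^bsub>S\<^esub> (l r \<otimes>\<^bsub>S\<^esub> xk j))" using j r y by (simp add: S.m_assoc[symmetric] E_xk)
    finally show "Etr (y \<otimes>\<^bsub>S\<^esub> (xk j \<otimes>\<^bsub>S\<^esub> l r)) = Etr (y \<otimes>\<^bsub>S\<^esub> (l r \<otimes>\<^bsub>S\<^esub> xk j))" .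
  qed
qed

lemma E_finsum: "f \<in> A \<rightarrow> carrier S \<Longrightarrow> Etr (finsum S f A) = finsum R (\<lambda>a. Etr (f a)) A"
proof -
  assume f: "f \<in> A \<rightarrow> carrier S"
  have G1: "comm_group (agrp (restr_mod R S l))" by (rule lmod_comm_group[OF restrS_lmod])
  have G2: "comm_group (agrp (regmod R))" using W.R.a_comm_group by (simp add: agrp_reg)
  have "Etr (finprod (agrp (restr_mod R S l)) f A) = finprod (agrp (regmod R)) (\<lambda>a. Etr (f a)) A"
    by (rule hom_finprod_gen[OF G1 G2 lin_hom[OF E_lin]]) (use f in simp)
  then show ?thesis by (simp add: agrp_restr agrp_reg finsum_def)
qed

lemma F5: "s \<in> carrier S \<Longrightarrow> s = finsum S (\<lambda>k. xk k \<otimes>\<^bsub>S\<^esub> l (Etr (cc k \<otimes>\<^bsub>S\<^esub> s))) {..<m}"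
proof -
  assume s: "s \<in> carrier S"
  let ?z = "finsum S (\<lambda>k. xk k \<otimes>\<^bsub>S\<^esub> l (Etr (cc k \<otimes>\<^bsub>S\<^esub> s))) {..<m}"
  show ?thesis
  proof (rule psi_inj)
    show "s \<in> carrier S" by (rule s)
    show "?z \<in> carrier S" using s by (auto intro!: S.finsum_closed)
    fix y assume y: "y \<in> carrier S"
    have "Etr (y \<otimes>\<^bsub>S\<^esub> ?z) = Etr (finsum S (\<lambda>k. y \<otimes>\<^bsub>S\<^esub> (xk k \<otimes>\<^bsub>S\<^esub> l (Etr (cc k \<otimes>\<^bsub>S\<^esub> s)))) {..<m})"
      using s y by (subst S.finsum_rdistr) auto
    also have "\<dots> = finsum R (\<lambda>k. Etr (y \<otimes>\<^bsub>S\<^esub> (xk k \<otimes>\<^bsub>S\<^esub> l (Etr (cc k \<otimes>\<^bsub>S\<^esub> s))))) {..<m}"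
      using s y by (intro E_finsum) auto
    also have "\<dots> = finsum R (\<lambda>k. al k y \<otimes>\<^bsub>R\<^esub> Etr (cc k \<otimes>\<^bsub>S\<^esub> s)) {..<m}"
      using s y by (intro W.R.finsum_cong') (auto simp: S.m_assoc[symmetric] E_rmul E_xk)
    also have "\<dots> = finsum R (\<lambda>k. Etr (l (al k y) \<otimes>\<^bsub>S\<^esub> cc k \<otimes>\<^bsub>S\<^esub> s)) {..<m}"
      using s y by (intro W.R.finsum_cong') (auto simp: S.m_assoc E_lmul)
    also have "\<dots> = Etr (finsum S (\<lambda>k. l (al k y) \<otimes>\<^bsub>S\<^esub> cc k \<otimes>\<^bsub>S\<^esub> s) {..<m})"
      using s y by (intro E_finsum[symmetric]) auto
    also have "finsum S (\<lambda>k. l (al k y) \<otimes>\<^bsub>S\<^esub> cc k \<otimes>\<^bsub>S\<^esub> s) {..<m} = finsum S (\<lambda>k. l (al k y) \<otimes>\<^bsub>S\<^esub> cc k) {..<m} \<otimes>\<^bsub>S\<^esub> s"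
      using s y by (subst S.finsum_ldistr) auto
    also have "finsum S (\<lambda>k. l (al k y) \<otimes>\<^bsub>S\<^esub> cc k) {..<m} = y" using S1[OF y] by simp
    finally show "Etr (y \<otimes>\<^bsub>S\<^esub> s) = Etr (y \<otimes>\<^bsub>S\<^esub> ?z)" by simp
  qed
qed

end


lemma (in lmodule) smulM_hom: "a \<in> carrier A \<Longrightarrow> msmul M a \<in> hom (agrp M) (agrp M)"
  by (rule homI) (auto simp: smul_add)

context frs begin

sublocale TMm: lmodule S TM by (rule lmodule.intro[OF TM_lmod])

abbreviation "T0 \<equiv> endring R W"
abbreviation "G0 \<equiv> endring S TM"
abbreviation "rho \<equiv> tensor_rho R S l W"

lemma ctxI:
  assumes "comm_group H"
    and "\<And>a. a \<in> carrier S \<times> mcar W \<Longrightarrow> F a \<in> carrier H"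
    and "\<And>s s' w. s \<in> carrier S \<Longrightarrow> s' \<in> carrier S \<Longrightarrow> w \<in> mcar W \<Longrightarrow>
        F (s \<oplus>\<^bsub>S\<^esub> s', w) = F (s, w) \<otimes>\<^bsub>H\<^esub> F (s', w)"
    and "\<And>s w w'. s \<in> carrier S \<Longrightarrow> w \<in> mcar W \<Longrightarrow> w' \<in> mcar W \<Longrightarrow>
        F (s, madd W w w') = F (s, w) \<otimes>\<^bsub>H\<^esub> F (s, w')"
    and "\<And>s r w. s \<in> carrier S \<Longrightarrow> r \<in> carrier R \<Longrightarrow> w \<in> mcar W \<Longrightarrow>
        F (s \<otimes>\<^bsub>S\<^esub> l r, w) = F (s, msmul W r w)"
  shows "tlift_ctx R S l W H F"
  by (intro tlift_ctx.intro tens_axioms tlift_ctx_axioms.intro assms)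

lemma tt_zero: "w \<in> mcar W \<Longrightarrow> tt (\<zero>\<^bsub>S\<^esub>, w) = mzero TM"
proof -
  assume w: "w \<in> mcar W"
  have "tt (\<zero>\<^bsub>S\<^esub>, w) = madd TM (tt (\<zero>\<^bsub>S\<^esub>, w)) (tt (\<zero>\<^bsub>S\<^esub>, w))"
    using tt_add_left[of "\<zero>\<^bsub>S\<^esub>" "\<zero>\<^bsub>S\<^esub>" w] w by simp
  then show ?thesis using T.l_cancel_one'[of "tt (\<zero>\<^bsub>S\<^esub>, w)" "tt (\<zero>\<^bsub>S\<^esub>, w)"] w by simp
qed

lemma tt_finsum:
  assumes f: "f \<in> A \<rightarrow> carrier S" and fin: "finite A" and w: "w \<in> mcar W"
  shows "tt (finsum S f A, w) = finprod (agrp TM) (\<lambda>a. tt (f a, w)) A"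
  using fin f
proof (induct A rule: finite_induct)
  case empty then show ?case using w by (simp add: tt_zero)
next
  case (insert a A)
  have "finsum S f (insert a A) = f a \<oplus>\<^bsub>S\<^esub> finsum S f A" using insert by (intro S.finsum_insert) auto
  then have "tt (finsum S f (insert a A), w) = madd TM (tt (f a, w)) (tt (finsum S f A, w))"
    using insert w by (simp add: tt_add_left S.finsum_closed)
  also have "\<dots> = finprod (agrp TM) (\<lambda>a. tt (f a, w)) (insert a A)"
    using insert w by (subst T.finprod_insert) (auto simp: Pi_iff)
  finally show ?case .
qed

lemma tt_right_hom: "c \<in> carrier S \<Longrightarrow> (\<lambda>w. tt (c, w)) \<in> hom (agrp W) (agrp TM)"
  by (rule homI) (auto simp: tt_add_right)

definition eps :: "('s \<times> 'w \<Rightarrow> int) set \<Rightarrow> 'w" where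
  "eps = tlift (agrp W) (\<lambda>(s,w). msmul W (Etr s) w)"

definition pij :: "nat \<Rightarrow> ('s \<times> 'w \<Rightarrow> int) set \<Rightarrow> 'w" where
  "pij j = tlift (agrp W) (\<lambda>(s,w). msmul W (al j s) w)"

lemma eps_ctx: "tlift_ctx R S l W (agrp W) (\<lambda>(s,w). msmul W (Etr s) w)"
  by (rule ctxI) (auto simp: W.G.comm_group_axioms E_add W.add_smul W.smul_add E_rmul W.mult_smul)

lemma pij_ctx: "j < m \<Longrightarrow> tlift_ctx R S l W (agrp W) (\<lambda>(s,w). msmul W (al j s) w)"
  by (rule ctxI) (auto simp: W.G.comm_group_axioms al_add W.add_smul W.smul_add al_rmul W.mult_smul)

lemma eps_hom: "eps \<in> hom (agrp TM) (agrp W)"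
  unfolding eps_def by (rule tlift_ctx.tlift_hom[OF eps_ctx])

lemma pij_hom: "j < m \<Longrightarrow> pij j \<in> hom (agrp TM) (agrp W)"
  unfolding pij_def by (rule tlift_ctx.tlift_hom[OF pij_ctx])

lemma eps_tt: "s \<in> carrier S \<Longrightarrow> w \<in> mcar W \<Longrightarrow> eps (tt (s,w)) = msmul W (Etr s) w"
  unfolding eps_def using tlift_ctx.tlift_tt[OF eps_ctx, of "(s,w)"] by simp

lemma pij_tt: "j < m \<Longrightarrow> s \<in> carrier S \<Longrightarrow> w \<in> mcar W \<Longrightarrow> pij j (tt (s,w)) = msmul W (al j s) w"
  unfolding pij_def using tlift_ctx.tlift_tt[OF pij_ctx, of j "(s,w)"] by simp

lemma eps_closed[simp,intro]: "X \<in> mcar TM \<Longrightarrow> eps X \<in> mcar W"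
  using eps_hom unfolding hom_def by auto

lemma pij_closed[simp,intro]: "j < m \<Longrightarrow> X \<in> mcar TM \<Longrightarrow> pij j X \<in> mcar W"
  using pij_hom unfolding hom_def by auto

lemma eps_add: "X \<in> mcar TM \<Longrightarrow> Y \<in> mcar TM \<Longrightarrow> eps (madd TM X Y) = madd W (eps X) (eps Y)"
  using eps_hom unfolding hom_def by auto

lemma pij_add: "j < m \<Longrightarrow> X \<in> mcar TM \<Longrightarrow> Y \<in> mcar TM \<Longrightarrow> pij j (madd TM X Y) = madd W (pij j X) (pij j Y)"
  using pij_hom unfolding hom_def by auto

lemma eps_lmul:
  assumes r: "r \<in> carrier R" and X: "X \<in> mcar TM"
  shows "eps (msmul TM (l r) X) = msmul W r (eps X)"
proof (rule hom_ext[of "agrp W" "\<lambda>X. eps (msmul TM (l r) X)" "\<lambda>X. msmul W r (eps X)", OF W.G.comm_group_axioms _ _ _ X])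
  show "(\<lambda>X. eps (msmul TM (l r) X)) \<in> hom (agrp TM) (agrp W)"
    by (rule hom_comp_gen[OF TMm.smulM_hom eps_hom]) (use r in simp)
  show "(\<lambda>X. msmul W r (eps X)) \<in> hom (agrp TM) (agrp W)"
    by (rule hom_comp_gen[OF eps_hom W.smulM_hom[OF r]])
  fix a assume a: "a \<in> carrier S \<times> mcar W"
  then show "eps (msmul TM (l r) (tt a)) = msmul W r (eps (tt a))"
    using r by (auto simp: smul_tt phS_def eps_tt E_lmul W.mult_smul)
qed

lemma pij_lmul:
  assumes j: "j < m" and r: "r \<in> carrier R" and X: "X \<in> mcar TM"
  shows "pij j (msmul TM (l r) X) = msmul W r (pij j X)"
proof (rule hom_ext[of "agrp W" "\<lambda>X. pij j (msmul TM (l r) X)" "\<lambda>X. msmul W r (pij j X)", OF W.G.comm_group_axioms _ _ _ X])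
  show "(\<lambda>X. pij j (msmul TM (l r) X)) \<in> hom (agrp TM) (agrp W)"
    by (rule hom_comp_gen[OF TMm.smulM_hom pij_hom[OF j]]) (use r in simp)
  show "(\<lambda>X. msmul W r (pij j X)) \<in> hom (agrp TM) (agrp W)"
    by (rule hom_comp_gen[OF pij_hom[OF j] W.smulM_hom[OF r]])
  fix a assume a: "a \<in> carrier S \<times> mcar W"
  then show "pij j (msmul TM (l r) (tt a)) = msmul W r (pij j (tt a))"
    using r j by (auto simp: smul_tt phS_def pij_tt al_lmul W.mult_smul)
qed

lemma tt_one_l: "r \<in> carrier R \<Longrightarrow> w \<in> mcar W \<Longrightarrow> tt (\<one>\<^bsub>S\<^esub>, msmul W r w) = msmul TM (l r) (tt (\<one>\<^bsub>S\<^esub>, w))"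
proof -
  assume r: "r \<in> carrier R" and w: "w \<in> mcar W"
  have "tt (\<one>\<^bsub>S\<^esub>, msmul W r w) = tt (\<one>\<^bsub>S\<^esub> \<otimes>\<^bsub>S\<^esub> l r, w)"
    using tt_bal[of "\<one>\<^bsub>S\<^esub>" r w] r w by simp
  also have "\<dots> = tt (l r, w)" using r by simp
  also have "\<dots> = msmul TM (l r) (tt (\<one>\<^bsub>S\<^esub>, w))" using r w by (simp add: smul_tt phS_def)
  finally show ?thesis .
qed

lemma K1: assumes Y: "Y \<in> mcar TM" shows "Y = finprod (agrp TM) (\<lambda>j. tt (cc j, pij j Y)) {..<m}"
proof (rule hom_ext[of "agrp TM" "\<lambda>Y. Y", OF T.comm_group_axioms _ _ _ Y])
  show "(\<lambda>Y. Y) \<in> hom (agrp TM) (agrp TM)" by (rule homI) auto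
  show "(\<lambda>Y. finprod (agrp TM) (\<lambda>j. tt (cc j, pij j Y)) {..<m}) \<in> hom (agrp TM) (agrp TM)"
    by (rule hom_finprod_fun[OF T.comm_group_axioms T.is_group])
       (auto intro!: hom_comp_gen[OF pij_hom tt_right_hom])
  fix a assume a: "a \<in> carrier S \<times> mcar W"
  then obtain s w where a: "a = (s,w)" and s: "s \<in> carrier S" and w: "w \<in> mcar W" by auto
  have "finprod (agrp TM) (\<lambda>j. tt (cc j, pij j (tt a))) {..<m} = finprod (agrp TM) (\<lambda>j. tt (l (al j s) \<otimes>\<^bsub>S\<^esub> cc j, w)) {..<m}"
  proof (rule T.finprod_cong')
    show "(\<lambda>j. tt (l (al j s) \<otimes>\<^bsub>S\<^esub> cc j, w)) \<in> {..<m} \<rightarrow> carrier (agrp TM)" using s w by auto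
    fix j assume "j \<in> {..<m}"
    then have j: "j < m" by simp
    have "tt (cc j, pij j (tt a)) = tt (cc j, msmul W (al j s) w)" using a s w j by (simp add: pij_tt)
    also have "\<dots> = tt (cc j \<otimes>\<^bsub>S\<^esub> l (al j s), w)" using s w j by (simp add: tt_bal)
    also have "cc j \<otimes>\<^bsub>S\<^esub> l (al j s) = l (al j s) \<otimes>\<^bsub>S\<^esub> cc j" using s j by (simp add: cc_comm)
    finally show "tt (cc j, pij j (tt a)) = tt (l (al j s) \<otimes>\<^bsub>S\<^esub> cc j, w)" .
  qed simp
  also have "\<dots> = tt (finsum S (\<lambda>j. l (al j s) \<otimes>\<^bsub>S\<^esub> cc j) {..<m}, w)"
    using s w by (intro tt_finsum[symmetric]) auto
  also have "finsum S (\<lambda>j. l (al j s) \<otimes>\<^bsub>S\<^esub> cc j) {..<m} = s" using S1[OF s] by simp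
  finally show "tt a = finprod (agrp TM) (\<lambda>j. tt (cc j, pij j (tt a))) {..<m}" using a by simp
qed

lemma K2: assumes Y: "Y \<in> mcar TM" shows "Y = finprod (agrp TM) (\<lambda>k. tt (xk k, eps (msmul TM (cc k) Y))) {..<m}"
proof (rule hom_ext[of "agrp TM" "\<lambda>Y. Y", OF T.comm_group_axioms _ _ _ Y])
  show "(\<lambda>Y. Y) \<in> hom (agrp TM) (agrp TM)" by (rule homI) auto
  show "(\<lambda>Y. finprod (agrp TM) (\<lambda>k. tt (xk k, eps (msmul TM (cc k) Y))) {..<m}) \<in> hom (agrp TM) (agrp TM)"
    by (rule hom_finprod_fun[OF T.comm_group_axioms T.is_group])
       (auto intro!: hom_comp_gen[OF hom_comp_gen[OF TMm.smulM_hom eps_hom] tt_right_hom])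
  fix a assume a: "a \<in> carrier S \<times> mcar W"
  then obtain s w where a: "a = (s,w)" and s: "s \<in> carrier S" and w: "w \<in> mcar W" by auto
  have "finprod (agrp TM) (\<lambda>k. tt (xk k, eps (msmul TM (cc k) (tt a)))) {..<m} = finprod (agrp TM) (\<lambda>k. tt (xk k \<otimes>\<^bsub>S\<^esub> l (Etr (cc k \<otimes>\<^bsub>S\<^esub> s)), w)) {..<m}"
  proof (rule T.finprod_cong')
    show "(\<lambda>k. tt (xk k \<otimes>\<^bsub>S\<^esub> l (Etr (cc k \<otimes>\<^bsub>S\<^esub> s)), w)) \<in> {..<m} \<rightarrow> carrier (agrp TM)" using s w by auto
    fix k assume "k \<in> {..<m}"
    then have k: "k < m" by simp
    have "tt (xk k, eps (msmul TM (cc k) (tt a))) = tt (xk k, msmul W (Etr (cc k \<otimes>\<^bsub>S\<^esub> s)) w)"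
      using a s w k by (simp add: smul_tt phS_def eps_tt)
    also have "\<dots> = tt (xk k \<otimes>\<^bsub>S\<^esub> l (Etr (cc k \<otimes>\<^bsub>S\<^esub> s)), w)" using s w k by (simp add: tt_bal)
    finally show "tt (xk k, eps (msmul TM (cc k) (tt a))) = tt (xk k \<otimes>\<^bsub>S\<^esub> l (Etr (cc k \<otimes>\<^bsub>S\<^esub> s)), w)" .
  qed simp
  also have "\<dots> = tt (finsum S (\<lambda>k. xk k \<otimes>\<^bsub>S\<^esub> l (Etr (cc k \<otimes>\<^bsub>S\<^esub> s))) {..<m}, w)"
    using s w by (intro tt_finsum[symmetric]) auto
  also have "finsum S (\<lambda>k. xk k \<otimes>\<^bsub>S\<^esub> l (Etr (cc k \<otimes>\<^bsub>S\<^esub> s))) {..<m} = s" using F5[OF s] by simp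
  finally show "tt a = finprod (agrp TM) (\<lambda>k. tt (xk k, eps (msmul TM (cc k) (tt a)))) {..<m}" using a by simp
qed


lemma rho_coset: "lin R W W f \<Longrightarrow> g \<in> TF \<Longrightarrow> rho f (tcoset N g) = tcoset N (push (phW f) g)"
  unfolding tensor_rho_def tact_W_push phW_def[symmetric]
  by (simp, rule coset_push) (auto intro: push_trel phW_gens)

lemma rho_tt: "lin R W W f \<Longrightarrow> s \<in> carrier S \<Longrightarrow> w \<in> mcar W \<Longrightarrow> rho f (tt (s,w)) = tt (s, f w)"
  by (simp add: rho_coset tfree_dlt push_dlt phW_def)

lemma rho_hom: "lin R W W f \<Longrightarrow> rho f \<in> hom (agrp TM) (agrp TM)"
proof (rule homI)
  fix X assume f: "lin R W W f" and "X \<in> carrier (agrp TM)"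
  then have "X \<in> mcar TM" by simp
  then obtain g where "g \<in> TF" "X = tcoset N g" using TM_ex by blast
  then show "rho f X \<in> carrier (agrp TM)" using f
    by (simp add: rho_coset push_tfree phW_closed)
next
  fix X Y assume f: "lin R W W f" and "X \<in> carrier (agrp TM)" "Y \<in> carrier (agrp TM)"
  then have "X \<in> mcar TM" "Y \<in> mcar TM" by simp_all
  then obtain g h where g: "g \<in> TF" "X = tcoset N g" and h: "h \<in> TF" "Y = tcoset N h"
    using TM_ex by blast
  have "push (phW f) (\<lambda>x. g x + h x) = (\<lambda>y. push (phW f) g y + push (phW f) h y)"
    using g h by (intro push_add) (auto simp: tfree_iff)
  then show "rho f (X \<otimes>\<^bsub>agrp TM\<^esub> Y) = rho f X \<otimes>\<^bsub>agrp TM\<^esub> rho f Y"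
    using g h f by (simp add: TM_add rho_coset tfree_add)
qed

lemma rho_closed[simp,intro]: "lin R W W f \<Longrightarrow> X \<in> mcar TM \<Longrightarrow> rho f X \<in> mcar TM"
  using rho_hom unfolding hom_def by auto

lemma rho_lin: "lin R W W f \<Longrightarrow> lin S TM TM (rho f)"
proof (rule linI)
  assume f: "lin R W W f"
  show "\<And>X. X \<in> mcar TM \<Longrightarrow> rho f X \<in> mcar TM" using f by simp
  show "\<And>X. X \<notin> mcar TM \<Longrightarrow> rho f X = undefined" by (simp add: tensor_rho_def)
  show "\<And>X Y. X \<in> mcar TM \<Longrightarrow> Y \<in> mcar TM \<Longrightarrow> rho f (madd TM X Y) = madd TM (rho f X) (rho f Y)"
    using rho_hom[OF f] unfolding hom_def by simp
  fix a X assume a: "a \<in> carrier S" and X: "X \<in> mcar TM"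
  show "rho f (msmul TM a X) = msmul TM a (rho f X)"
  proof (rule hom_ext[of "agrp TM" "\<lambda>X. rho f (msmul TM a X)" "\<lambda>X. msmul TM a (rho f X)", OF T.comm_group_axioms _ _ _ X])
    show "(\<lambda>X. rho f (msmul TM a X)) \<in> hom (agrp TM) (agrp TM)"
      by (rule hom_comp_gen[OF TMm.smulM_hom[OF a] rho_hom[OF f]])
    show "(\<lambda>X. msmul TM a (rho f X)) \<in> hom (agrp TM) (agrp TM)"
      by (rule hom_comp_gen[OF rho_hom[OF f] TMm.smulM_hom[OF a]])
    fix c assume "c \<in> carrier S \<times> mcar W"
    then show "rho f (msmul TM a (tt c)) = msmul TM a (rho f (tt c))"
      using a f by (auto simp: smul_tt phS_def rho_tt lin_closed)
  qed
qed

definition Qm :: "'s \<Rightarrow> ('s \<times> 'w \<Rightarrow> int) set \<Rightarrow> ('s \<times> 'w \<Rightarrow> int) set" where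
  "Qm c = (\<lambda>X\<in>mcar TM. tlift (agrp TM) (\<lambda>(s,w). tt (s \<otimes>\<^bsub>S\<^esub> c, w)) X)"

definition central :: "'s \<Rightarrow> bool" where
  "central c \<longleftrightarrow> c \<in> carrier S \<and> (\<forall>r\<in>carrier R. c \<otimes>\<^bsub>S\<^esub> l r = l r \<otimes>\<^bsub>S\<^esub> c)"

lemma central_cc: "j < m \<Longrightarrow> central (cc j)"
  by (simp add: central_def cc_comm)

lemma central_xk: "j < m \<Longrightarrow> central (xk j)"
  by (simp add: central_def xk_comm)

lemma Q_ctx: "central c \<Longrightarrow> tlift_ctx R S l W (agrp TM) (\<lambda>(s,w). tt (s \<otimes>\<^bsub>S\<^esub> c, w))"
proof (rule ctxI)
  assume c: "central c"
  then have cS: "c \<in> carrier S" by (simp add: central_def)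
  show "comm_group (agrp TM)" by (rule T.comm_group_axioms)
  show "\<And>a. a \<in> carrier S \<times> mcar W \<Longrightarrow> (case a of (s, w) \<Rightarrow> tt (s \<otimes>\<^bsub>S\<^esub> c, w)) \<in> carrier (agrp TM)"
    using cS by auto
  show "\<And>s s' w. s \<in> carrier S \<Longrightarrow> s' \<in> carrier S \<Longrightarrow> w \<in> mcar W \<Longrightarrow>
     (case (s \<oplus>\<^bsub>S\<^esub> s', w) of (s, w) \<Rightarrow> tt (s \<otimes>\<^bsub>S\<^esub> c, w)) =
     (case (s, w) of (s, w) \<Rightarrow> tt (s \<otimes>\<^bsub>S\<^esub> c, w)) \<otimes>\<^bsub>agrp TM\<^esub> (case (s', w) of (s, w) \<Rightarrow> tt (s \<otimes>\<^bsub>S\<^esub> c, w))"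
    using cS by (simp add: S.l_distr tt_add_left)
  show "\<And>s w w'. s \<in> carrier S \<Longrightarrow> w \<in> mcar W \<Longrightarrow> w' \<in> mcar W \<Longrightarrow>
     (case (s, madd W w w') of (s, w) \<Rightarrow> tt (s \<otimes>\<^bsub>S\<^esub> c, w)) =
     (case (s, w) of (s, w) \<Rightarrow> tt (s \<otimes>\<^bsub>S\<^esub> c, w)) \<otimes>\<^bsub>agrp TM\<^esub> (case (s, w') of (s, w) \<Rightarrow> tt (s \<otimes>\<^bsub>S\<^esub> c, w))"
    using cS by (simp add: tt_add_right)
  fix s r w assume s: "s \<in> carrier S" and r: "r \<in> carrier R" and w: "w \<in> mcar W"
  have "s \<otimes>\<^bsub>S\<^esub> l r \<otimes>\<^bsub>S\<^esub> c = s \<otimes>\<^bsub>S\<^esub> c \<otimes>\<^bsub>S\<^esub> l r"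
    using c s r by (simp add: central_def S.m_assoc)
  then show "(case (s \<otimes>\<^bsub>S\<^esub> l r, w) of (s, w) \<Rightarrow> tt (s \<otimes>\<^bsub>S\<^esub> c, w)) =
     (case (s, msmul W r w) of (s, w) \<Rightarrow> tt (s \<otimes>\<^bsub>S\<^esub> c, w))"
    using cS s r w by (simp add: tt_bal)
qed

lemma Q_tt: "central c \<Longrightarrow> s \<in> carrier S \<Longrightarrow> w \<in> mcar W \<Longrightarrow> Qm c (tt (s,w)) = tt (s \<otimes>\<^bsub>S\<^esub> c, w)"
  unfolding Qm_def using tlift_ctx.tlift_tt[OF Q_ctx, of c "(s,w)"] by simp

lemma Q_hom: "central c \<Longrightarrow> Qm c \<in> hom (agrp TM) (agrp TM)"
proof -
  assume c: "central c"
  have "tlift (agrp TM) (\<lambda>(s,w). tt (s \<otimes>\<^bsub>S\<^esub> c, w)) \<in> hom (agrp TM) (agrp TM)"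
    by (rule tlift_ctx.tlift_hom[OF Q_ctx[OF c]])
  then show ?thesis unfolding Qm_def hom_def by auto
qed

lemma Q_lin: "central c \<Longrightarrow> lin S TM TM (Qm c)"
proof (rule linI)
  assume c: "central c"
  then have cS: "c \<in> carrier S" by (simp add: central_def)
  show "\<And>X. X \<in> mcar TM \<Longrightarrow> Qm c X \<in> mcar TM" using Q_hom[OF c] unfolding hom_def by auto
  show "\<And>X. X \<notin> mcar TM \<Longrightarrow> Qm c X = undefined" by (simp add: Qm_def)
  show "\<And>X Y. X \<in> mcar TM \<Longrightarrow> Y \<in> mcar TM \<Longrightarrow> Qm c (madd TM X Y) = madd TM (Qm c X) (Qm c Y)"
    using Q_hom[OF c] unfolding hom_def by simp
  fix a X assume a: "a \<in> carrier S" and X: "X \<in> mcar TM"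
  show "Qm c (msmul TM a X) = msmul TM a (Qm c X)"
  proof (rule hom_ext[of "agrp TM" "\<lambda>X. Qm c (msmul TM a X)" "\<lambda>X. msmul TM a (Qm c X)", OF T.comm_group_axioms _ _ _ X])
    show "(\<lambda>X. Qm c (msmul TM a X)) \<in> hom (agrp TM) (agrp TM)"
      by (rule hom_comp_gen[OF TMm.smulM_hom[OF a] Q_hom[OF c]])
    show "(\<lambda>X. msmul TM a (Qm c X)) \<in> hom (agrp TM) (agrp TM)"
      by (rule hom_comp_gen[OF Q_hom[OF c] TMm.smulM_hom[OF a]])
    fix b assume "b \<in> carrier S \<times> mcar W"
    then show "Qm c (msmul TM a (tt b)) = msmul TM a (Qm c (tt b))"
      using a c cS by (auto simp: smul_tt phS_def Q_tt S.m_assoc)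
  qed
qed

lemma eps_Q: "j < m \<Longrightarrow> Y \<in> mcar TM \<Longrightarrow> eps (Qm (xk j) Y) = pij j Y"
proof -
  assume j: "j < m" and Y: "Y \<in> mcar TM"
  show ?thesis
  proof (rule hom_ext[of "agrp W" "\<lambda>Y. eps (Qm (xk j) Y)" "pij j", OF W.G.comm_group_axioms _ _ _ Y])
    show "(\<lambda>Y. eps (Qm (xk j) Y)) \<in> hom (agrp TM) (agrp W)"
      by (rule hom_comp_gen[OF Q_hom[OF central_xk[OF j]] eps_hom])
    show "pij j \<in> hom (agrp TM) (agrp W)" by (rule pij_hom[OF j])
    fix b assume "b \<in> carrier S \<times> mcar W"
    then show "eps (Qm (xk j) (tt b)) = pij j (tt b)"
      using j by (auto simp: Q_tt central_xk eps_tt pij_tt E_xk)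
  qed
qed

lemma G2:
  assumes g: "lin S TM TM g" and g': "lin S TM TM g'"
    and e: "\<And>w. w \<in> mcar W \<Longrightarrow> g (tt (\<one>\<^bsub>S\<^esub>, w)) = g' (tt (\<one>\<^bsub>S\<^esub>, w))"
  shows "g = g'"
proof (rule lin_ext[OF g g'])
  fix X assume X: "X \<in> mcar TM"
  show "g X = g' X"
  proof (rule hom_ext[of "agrp TM" g g', OF T.comm_group_axioms lin_hom[OF g] lin_hom[OF g'] _ X])
    fix a assume "a \<in> carrier S \<times> mcar W"
    then obtain s w where a: "a = (s,w)" and s: "s \<in> carrier S" and w: "w \<in> mcar W" by auto
    have "tt a = msmul TM s (tt (\<one>\<^bsub>S\<^esub>, w))" using a s w by (simp add: smul_tt phS_def)
    then show "g (tt a) = g' (tt a)" using s w e by (simp add: lin_smul[OF g] lin_smul[OF g'])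
  qed
qed

end


context frs begin

lemma T0_ring: "ring T0" by (rule W.E_ring)
lemma G0_ring: "ring G0" by (rule TMm.E_ring)

lemma T0_car: "f \<in> carrier T0 \<longleftrightarrow> lin R W W f" by (simp add: W.E_simps)
lemma G0_car: "f \<in> carrier G0 \<longleftrightarrow> lin S TM TM f" by (simp add: TMm.E_simps)

lemma G0_mult_ev: "Z \<in> mcar TM \<Longrightarrow> (a \<otimes>\<^bsub>G0\<^esub> b) Z = b (a Z)" by (simp add: TMm.E_simps)
lemma G0_add_ev: "Z \<in> mcar TM \<Longrightarrow> (a \<oplus>\<^bsub>G0\<^esub> b) Z = madd TM (a Z) (b Z)" by (simp add: TMm.E_simps)
lemma G0_one_ev: "Z \<in> mcar TM \<Longrightarrow> \<one>\<^bsub>G0\<^esub> Z = Z" by (simp add: TMm.E_simps)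
lemma T0_mult_ev: "w \<in> mcar W \<Longrightarrow> (a \<otimes>\<^bsub>T0\<^esub> b) w = b (a w)" by (simp add: W.E_simps)
lemma T0_add_ev: "w \<in> mcar W \<Longrightarrow> (a \<oplus>\<^bsub>T0\<^esub> b) w = madd W (a w) (b w)" by (simp add: W.E_simps)

lemma rho_car: "f \<in> carrier T0 \<Longrightarrow> rho f \<in> carrier G0"
  by (simp add: T0_car G0_car rho_lin)

lemma Q_car: "central c \<Longrightarrow> Qm c \<in> carrier G0"
  by (simp add: G0_car Q_lin)

lemma tt1_closed[simp,intro]: "w \<in> mcar W \<Longrightarrow> tt (\<one>\<^bsub>S\<^esub>, w) \<in> mcar TM" by auto

lemma rho_ring_hom: "rho \<in> ring_hom T0 G0"
proof (rule ring_hom_memI)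
  show "\<And>f. f \<in> carrier T0 \<Longrightarrow> rho f \<in> carrier G0" by (rule rho_car)
  fix f g assume f: "f \<in> carrier T0" and g: "g \<in> carrier T0"
  have fl: "lin R W W f" and gl: "lin R W W g" using f g by (simp_all add: T0_car)
  show "rho (f \<otimes>\<^bsub>T0\<^esub> g) = rho f \<otimes>\<^bsub>G0\<^esub> rho g"
  proof (rule G2)
    show "lin S TM TM (rho (f \<otimes>\<^bsub>T0\<^esub> g))" using rho_car[OF W.ER.m_closed[OF f g]] by (simp add: G0_car)
    show "lin S TM TM (rho f \<otimes>\<^bsub>G0\<^esub> rho g)" using TMm.ER.m_closed[OF rho_car[OF f] rho_car[OF g]] by (simp add: G0_car)
    fix w assume w: "w \<in> mcar W"
    have fg: "lin R W W (f \<otimes>\<^bsub>T0\<^esub> g)" using W.ER.m_closed[OF f g] by (simp add: T0_car)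
    show "rho (f \<otimes>\<^bsub>T0\<^esub> g) (tt (\<one>\<^bsub>S\<^esub>, w)) = (rho f \<otimes>\<^bsub>G0\<^esub> rho g) (tt (\<one>\<^bsub>S\<^esub>, w))"
      using w fl gl fg by (simp add: rho_tt G0_mult_ev T0_mult_ev lin_closed)
  qed
  show "rho (f \<oplus>\<^bsub>T0\<^esub> g) = rho f \<oplus>\<^bsub>G0\<^esub> rho g"
  proof (rule G2)
    show "lin S TM TM (rho (f \<oplus>\<^bsub>T0\<^esub> g))" using rho_car[OF W.ER.a_closed[OF f g]] by (simp add: G0_car)
    show "lin S TM TM (rho f \<oplus>\<^bsub>G0\<^esub> rho g)" using TMm.ER.a_closed[OF rho_car[OF f] rho_car[OF g]] by (simp add: G0_car)
    fix w assume w: "w \<in> mcar W"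
    have fg: "lin R W W (f \<oplus>\<^bsub>T0\<^esub> g)" using W.ER.a_closed[OF f g] by (simp add: T0_car)
    show "rho (f \<oplus>\<^bsub>T0\<^esub> g) (tt (\<one>\<^bsub>S\<^esub>, w)) = (rho f \<oplus>\<^bsub>G0\<^esub> rho g) (tt (\<one>\<^bsub>S\<^esub>, w))"
      using w fl gl fg by (simp add: rho_tt G0_add_ev T0_add_ev lin_closed tt_add_right)
  qed
next
  show "rho \<one>\<^bsub>T0\<^esub> = \<one>\<^bsub>G0\<^esub>"
  proof (rule G2)
    show "lin S TM TM (rho \<one>\<^bsub>T0\<^esub>)" using rho_car[OF W.ER.one_closed] by (simp add: G0_car)
    show "lin S TM TM \<one>\<^bsub>G0\<^esub>" using TMm.ER.one_closed by (simp add: G0_car)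
    fix w assume w: "w \<in> mcar W"
    have o: "lin R W W \<one>\<^bsub>T0\<^esub>" using W.ER.one_closed by (simp add: T0_car)
    show "rho \<one>\<^bsub>T0\<^esub> (tt (\<one>\<^bsub>S\<^esub>, w)) = \<one>\<^bsub>G0\<^esub> (tt (\<one>\<^bsub>S\<^esub>, w))"
      using w o by (simp add: rho_tt G0_one_ev) (simp add: W.E_simps)
  qed
qed


definition Pm :: "(nat \<Rightarrow> 'w \<Rightarrow> 'w) \<Rightarrow> ('s \<times> 'w \<Rightarrow> int) set \<Rightarrow> ('s \<times> 'w \<Rightarrow> int) set" where
  "Pm = (\<lambda>v\<in>mcar (freemod T0 m). finsum G0 (\<lambda>j. rho (v j) \<otimes>\<^bsub>G0\<^esub> Qm (cc j)) {..<m})"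

definition Imc :: "(('s \<times> 'w \<Rightarrow> int) set \<Rightarrow> ('s \<times> 'w \<Rightarrow> int) set) \<Rightarrow> nat \<Rightarrow> 'w \<Rightarrow> 'w" where
  "Imc g j = (\<lambda>w\<in>mcar W. pij j (g (tt (\<one>\<^bsub>S\<^esub>, w))))"

definition Im :: "(('s \<times> 'w \<Rightarrow> int) set \<Rightarrow> ('s \<times> 'w \<Rightarrow> int) set) \<Rightarrow> nat \<Rightarrow> 'w \<Rightarrow> 'w" where
  "Im = (\<lambda>g\<in>carrier G0. (\<lambda>j. if j < m then Imc g j else \<zero>\<^bsub>T0\<^esub>))"

lemma rngT0: "rng T0" by (rule rng.intro[OF T0_ring])

lemma fT0_simps:
  "mcar (freemod T0 m) = {v. (\<forall>i<m. v i \<in> carrier T0) \<and> (\<forall>i\<ge>m. v i = \<zero>\<^bsub>T0\<^esub>)}"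
  "madd (freemod T0 m) = (\<lambda>v w i. if i < m then v i \<oplus>\<^bsub>T0\<^esub> w i else \<zero>\<^bsub>T0\<^esub>)"
  "msmul (freemod T0 m) = (\<lambda>a v i. if i < m then a \<otimes>\<^bsub>T0\<^esub> v i else \<zero>\<^bsub>T0\<^esub>)"
  unfolding freemod_def by simp_all

lemma restrG_simps:
  "mcar (restr_mod T0 G0 rho) = carrier G0"
  "madd (restr_mod T0 G0 rho) = (\<lambda>x y. x \<oplus>\<^bsub>G0\<^esub> y)"
  "msmul (restr_mod T0 G0 rho) = (\<lambda>a x. rho a \<otimes>\<^bsub>G0\<^esub> x)"
  by simp_all

lemma Imc_lin: "g \<in> carrier G0 \<Longrightarrow> j < m \<Longrightarrow> lin R W W (Imc g j)"
proof (rule linI)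
  assume g: "g \<in> carrier G0" and j: "j < m"
  have gl: "lin S TM TM g" using g by (simp add: G0_car)
  show "\<And>w. w \<in> mcar W \<Longrightarrow> Imc g j w \<in> mcar W" using gl j by (simp add: Imc_def lin_closed)
  show "\<And>w. w \<notin> mcar W \<Longrightarrow> Imc g j w = undefined" by (simp add: Imc_def)
  show "\<And>w w'. w \<in> mcar W \<Longrightarrow> w' \<in> mcar W \<Longrightarrow> Imc g j (madd W w w') = madd W (Imc g j w) (Imc g j w')"
    using gl j by (simp add: Imc_def tt_add_right lin_add lin_closed pij_add)
  show "\<And>r w. r \<in> carrier R \<Longrightarrow> w \<in> mcar W \<Longrightarrow> Imc g j (msmul W r w) = msmul W r (Imc g j w)"
    using gl j by (simp add: Imc_def tt_one_l lin_smul lin_closed pij_lmul)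
qed

lemma Im_mem: "g \<in> carrier G0 \<Longrightarrow> Im g \<in> mcar (freemod T0 m)"
  using Imc_lin by (simp add: Im_def fT0_simps T0_car)

lemma Pm_val: "v \<in> mcar (freemod T0 m) \<Longrightarrow> Pm v = finsum G0 (\<lambda>j. rho (v j) \<otimes>\<^bsub>G0\<^esub> Qm (cc j)) {..<m}"
  by (simp add: Pm_def)

lemma Pm_fc: "v \<in> mcar (freemod T0 m) \<Longrightarrow> (\<lambda>j. rho (v j) \<otimes>\<^bsub>G0\<^esub> Qm (cc j)) \<in> {..<m} \<rightarrow> carrier G0"
  by (auto simp: fT0_simps intro!: TMm.ER.m_closed rho_car Q_car central_cc)

lemma Pm_closed: "v \<in> mcar (freemod T0 m) \<Longrightarrow> Pm v \<in> carrier G0"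
  using Pm_fc by (simp add: Pm_val TMm.ER.finsum_closed)

lemma Pm_lin: "lin T0 (freemod T0 m) (restr_mod T0 G0 rho) Pm"
proof (rule linI)
  interpret F: lmodule T0 "freemod T0 m" by (rule lmodule.intro[OF rng.freemod_lmod[OF rngT0]])
  show "\<And>v. v \<in> mcar (freemod T0 m) \<Longrightarrow> Pm v \<in> mcar (restr_mod T0 G0 rho)" by (simp add: Pm_closed)
  show "\<And>v. v \<notin> mcar (freemod T0 m) \<Longrightarrow> Pm v = undefined" by (simp add: Pm_def)
  fix v w assume v: "v \<in> mcar (freemod T0 m)" and w: "w \<in> mcar (freemod T0 m)"
  have vc: "\<And>j. j < m \<Longrightarrow> v j \<in> carrier T0" and wc: "\<And>j. j < m \<Longrightarrow> w j \<in> carrier T0"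
    using v w by (auto simp: fT0_simps)
  have "Pm (madd (freemod T0 m) v w) = finsum G0 (\<lambda>j. rho (madd (freemod T0 m) v w j) \<otimes>\<^bsub>G0\<^esub> Qm (cc j)) {..<m}"
    using F.add_closed[OF v w] by (simp add: Pm_val)
  also have "\<dots> = finsum G0 (\<lambda>j. rho (v j) \<otimes>\<^bsub>G0\<^esub> Qm (cc j) \<oplus>\<^bsub>G0\<^esub> rho (w j) \<otimes>\<^bsub>G0\<^esub> Qm (cc j)) {..<m}"
  proof (rule TMm.ER.finsum_cong')
    show "(\<lambda>j. rho (v j) \<otimes>\<^bsub>G0\<^esub> Qm (cc j) \<oplus>\<^bsub>G0\<^esub> rho (w j) \<otimes>\<^bsub>G0\<^esub> Qm (cc j)) \<in> {..<m} \<rightarrow> carrier G0"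
      using vc wc by (auto intro!: TMm.ER.a_closed TMm.ER.m_closed rho_car Q_car central_cc)
    fix j assume "j \<in> {..<m}"
    then have j: "j < m" by simp
    show "rho (madd (freemod T0 m) v w j) \<otimes>\<^bsub>G0\<^esub> Qm (cc j) = rho (v j) \<otimes>\<^bsub>G0\<^esub> Qm (cc j) \<oplus>\<^bsub>G0\<^esub> rho (w j) \<otimes>\<^bsub>G0\<^esub> Qm (cc j)"
      using j vc[OF j] wc[OF j]
      by (simp add: fT0_simps ring_hom_add[OF rho_ring_hom] TMm.ER.l_distr rho_car Q_car central_cc)
  qed simp
  also have "\<dots> = Pm v \<oplus>\<^bsub>G0\<^esub> Pm w"
    using Pm_fc[OF v] Pm_fc[OF w] v w by (simp add: Pm_val TMm.ER.finsum_addf)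
  finally show "Pm (madd (freemod T0 m) v w) = madd (restr_mod T0 G0 rho) (Pm v) (Pm w)" by simp
next
  interpret F: lmodule T0 "freemod T0 m" by (rule lmodule.intro[OF rng.freemod_lmod[OF rngT0]])
  fix a v assume a: "a \<in> carrier T0" and v: "v \<in> mcar (freemod T0 m)"
  have vc: "\<And>j. j < m \<Longrightarrow> v j \<in> carrier T0" using v by (auto simp: fT0_simps)
  have "Pm (msmul (freemod T0 m) a v) = finsum G0 (\<lambda>j. rho (msmul (freemod T0 m) a v j) \<otimes>\<^bsub>G0\<^esub> Qm (cc j)) {..<m}"
    using F.smul_closed[OF a v] by (simp add: Pm_val)
  also have "\<dots> = finsum G0 (\<lambda>j. rho a \<otimes>\<^bsub>G0\<^esub> (rho (v j) \<otimes>\<^bsub>G0\<^esub> Qm (cc j))) {..<m}"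
  proof (rule TMm.ER.finsum_cong')
    show "(\<lambda>j. rho a \<otimes>\<^bsub>G0\<^esub> (rho (v j) \<otimes>\<^bsub>G0\<^esub> Qm (cc j))) \<in> {..<m} \<rightarrow> carrier G0"
      using vc a by (auto intro!: TMm.ER.m_closed rho_car Q_car central_cc)
    fix j assume "j \<in> {..<m}"
    then have j: "j < m" by simp
    show "rho (msmul (freemod T0 m) a v j) \<otimes>\<^bsub>G0\<^esub> Qm (cc j) = rho a \<otimes>\<^bsub>G0\<^esub> (rho (v j) \<otimes>\<^bsub>G0\<^esub> Qm (cc j))"
      using j vc[OF j] a
      by (simp add: fT0_simps ring_hom_mult[OF rho_ring_hom] TMm.ER.m_assoc rho_car Q_car central_cc)
  qed simp
  also have "\<dots> = rho a \<otimes>\<^bsub>G0\<^esub> Pm v"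
    using Pm_fc[OF v] v a by (simp add: Pm_val TMm.ER.finsum_rdistr rho_car)
  finally show "Pm (msmul (freemod T0 m) a v) = msmul (restr_mod T0 G0 rho) a (Pm v)" by simp
qed

lemma Im_lin: "lin T0 (restr_mod T0 G0 rho) (freemod T0 m) Im"
proof (rule linI)
  show "\<And>g. g \<in> mcar (restr_mod T0 G0 rho) \<Longrightarrow> Im g \<in> mcar (freemod T0 m)" by (simp add: Im_mem)
  show "\<And>g. g \<notin> mcar (restr_mod T0 G0 rho) \<Longrightarrow> Im g = undefined" by (simp add: Im_def)
  fix g g' assume g: "g \<in> mcar (restr_mod T0 G0 rho)" and g': "g' \<in> mcar (restr_mod T0 G0 rho)"
  have gl: "lin S TM TM g" "lin S TM TM g'" using g g' by (simp_all add: G0_car)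
  have gg: "g \<oplus>\<^bsub>G0\<^esub> g' \<in> carrier G0" using g g' by (simp add: TMm.ER.a_closed)
  show "Im (madd (restr_mod T0 G0 rho) g g') = madd (freemod T0 m) (Im g) (Im g')"
  proof (rule ext)
    fix j
    show "Im (madd (restr_mod T0 G0 rho) g g') j = madd (freemod T0 m) (Im g) (Im g') j"
    proof (cases "j < m")
      case True
      have "Imc (g \<oplus>\<^bsub>G0\<^esub> g') j = Imc g j \<oplus>\<^bsub>T0\<^esub> Imc g' j"
        unfolding Imc_def W.E_simps by (rule restrict_ext) (use gl True in \<open>simp add: G0_add_ev pij_add lin_closed\<close>)
      then show ?thesis using True g g' gg by (simp add: Im_def fT0_simps)
    next
      case False
      then show ?thesis using g g' gg by (simp add: Im_def fT0_simps)
    qed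
  qed
next
  fix a g assume a: "a \<in> carrier T0" and g: "g \<in> mcar (restr_mod T0 G0 rho)"
  have gl: "lin S TM TM g" using g by (simp add: G0_car)
  have al: "lin R W W a" using a by (simp add: T0_car)
  have ag: "rho a \<otimes>\<^bsub>G0\<^esub> g \<in> carrier G0" using g a by (simp add: TMm.ER.m_closed rho_car)
  show "Im (msmul (restr_mod T0 G0 rho) a g) = msmul (freemod T0 m) a (Im g)"
  proof (rule ext)
    fix j
    show "Im (msmul (restr_mod T0 G0 rho) a g) j = msmul (freemod T0 m) a (Im g) j"
    proof (cases "j < m")
      case True
      have "Imc (rho a \<otimes>\<^bsub>G0\<^esub> g) j = a \<otimes>\<^bsub>T0\<^esub> Imc g j"
        unfolding Imc_def W.E_simps by (rule restrict_ext) (use gl al True in \<open>simp add: G0_mult_ev rho_tt lin_closed\<close>)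
      then show ?thesis using True g ag by (simp add: Im_def fT0_simps)
    next
      case False
      then show ?thesis using g ag by (simp add: Im_def fT0_simps)
    qed
  qed
qed

lemma finsum_G0_ev: "f \<in> A \<rightarrow> carrier G0 \<Longrightarrow> Z \<in> mcar TM \<Longrightarrow> finsum G0 f A Z = finprod (agrp TM) (\<lambda>j. f j Z) A"
  by (rule TMm.E_finsum_eval)

lemma Pm_Im: "g \<in> carrier G0 \<Longrightarrow> Pm (Im g) = g"
proof -
  assume g: "g \<in> carrier G0"
  have gl: "lin S TM TM g" using g by (simp add: G0_car)
  have Imm: "Im g \<in> mcar (freemod T0 m)" by (rule Im_mem[OF g])
  show ?thesis
  proof (rule G2)
    show "lin S TM TM (Pm (Im g))" using Pm_closed[OF Imm] by (simp add: G0_car)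
    show "lin S TM TM g" by (rule gl)
    fix w assume w: "w \<in> mcar W"
    let ?Y = "g (tt (\<one>\<^bsub>S\<^esub>, w))"
    have Y: "?Y \<in> mcar TM" using gl w by (simp add: lin_closed)
    have "Pm (Im g) (tt (\<one>\<^bsub>S\<^esub>, w)) = finprod (agrp TM) (\<lambda>j. (rho (Im g j) \<otimes>\<^bsub>G0\<^esub> Qm (cc j)) (tt (\<one>\<^bsub>S\<^esub>, w))) {..<m}"
      using Pm_fc[OF Imm] w by (simp add: Pm_val[OF Imm] finsum_G0_ev)
    also have "\<dots> = finprod (agrp TM) (\<lambda>j. tt (cc j, pij j ?Y)) {..<m}"
    proof (rule T.finprod_cong')
      show "(\<lambda>j. tt (cc j, pij j ?Y)) \<in> {..<m} \<rightarrow> carrier (agrp TM)" using Y by auto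
      fix j assume "j \<in> {..<m}"
      then have j: "j < m" by simp
      have l1: "lin R W W (Imc g j)" by (rule Imc_lin[OF g j])
      have "(rho (Im g j) \<otimes>\<^bsub>G0\<^esub> Qm (cc j)) (tt (\<one>\<^bsub>S\<^esub>, w)) = Qm (cc j) (rho (Imc g j) (tt (\<one>\<^bsub>S\<^esub>, w)))"
        using j g w by (simp add: G0_mult_ev Im_def)
      also have "\<dots> = tt (cc j, pij j ?Y)"
        using j w l1 by (simp add: rho_tt lin_closed Q_tt central_cc) (simp add: Imc_def w)
      finally show "(rho (Im g j) \<otimes>\<^bsub>G0\<^esub> Qm (cc j)) (tt (\<one>\<^bsub>S\<^esub>, w)) = tt (cc j, pij j ?Y)" .
    qed simp
    also have "\<dots> = ?Y" using K1[OF Y] by simp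
    finally show "Pm (Im g) (tt (\<one>\<^bsub>S\<^esub>, w)) = g (tt (\<one>\<^bsub>S\<^esub>, w))" .
  qed
qed

lemma fg_proj_G: "fg_proj T0 (restr_mod T0 G0 rho)"
  unfolding fg_proj_def
  by (rule exI[of _ m], rule exI[of _ Pm], rule exI[of _ Im])
     (simp add: Pm_lin Im_lin Pm_Im)


lemma eps_rho: "lin R W W f \<Longrightarrow> Z \<in> mcar TM \<Longrightarrow> eps (rho f Z) = f (eps Z)"
proof -
  assume f: "lin R W W f" and Z: "Z \<in> mcar TM"
  show ?thesis
  proof (rule hom_ext[of "agrp W" "\<lambda>Z. eps (rho f Z)" "\<lambda>Z. f (eps Z)", OF W.G.comm_group_axioms _ _ _ Z])
    show "(\<lambda>Z. eps (rho f Z)) \<in> hom (agrp TM) (agrp W)" by (rule hom_comp_gen[OF rho_hom[OF f] eps_hom])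
    show "(\<lambda>Z. f (eps Z)) \<in> hom (agrp TM) (agrp W)" by (rule hom_comp_gen[OF eps_hom lin_hom[OF f]])
    fix a assume "a \<in> carrier S \<times> mcar W"
    then show "eps (rho f (tt a)) = f (eps (tt a))"
      using f by (auto simp: rho_tt eps_tt lin_closed lin_smul)
  qed
qed

definition Psi :: "(('s \<times> 'w \<Rightarrow> int) set \<Rightarrow> ('s \<times> 'w \<Rightarrow> int) set) \<Rightarrow>
    (('s \<times> 'w \<Rightarrow> int) set \<Rightarrow> ('s \<times> 'w \<Rightarrow> int) set) \<Rightarrow> 'w \<Rightarrow> 'w" where
  "Psi x = (\<lambda>y\<in>carrier G0. \<lambda>w\<in>mcar W. eps (x (y (tt (\<one>\<^bsub>S\<^esub>, w)))))"

lemma Psi_val_lin: "x \<in> carrier G0 \<Longrightarrow> y \<in> carrier G0 \<Longrightarrow> lin R W W (Psi x y)"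
proof (rule linI)
  assume x: "x \<in> carrier G0" and y: "y \<in> carrier G0"
  have xl: "lin S TM TM x" and yl: "lin S TM TM y" using x y by (simp_all add: G0_car)
  show "\<And>w. w \<in> mcar W \<Longrightarrow> Psi x y w \<in> mcar W" using x y xl yl by (simp add: Psi_def lin_closed)
  show "\<And>w. w \<notin> mcar W \<Longrightarrow> Psi x y w = undefined" using y by (simp add: Psi_def)
  show "\<And>w w'. w \<in> mcar W \<Longrightarrow> w' \<in> mcar W \<Longrightarrow> Psi x y (madd W w w') = madd W (Psi x y w) (Psi x y w')"
    using y xl yl by (simp add: Psi_def tt_add_right lin_add lin_closed eps_add)
  show "\<And>r w. r \<in> carrier R \<Longrightarrow> w \<in> mcar W \<Longrightarrow> Psi x y (msmul W r w) = msmul W r (Psi x y w)"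
    using y xl yl by (simp add: Psi_def tt_one_l lin_smul lin_closed eps_lmul)
qed

lemma Psi_mem: "x \<in> carrier G0 \<Longrightarrow> lin T0 (restr_mod T0 G0 rho) (regmod T0) (Psi x)"
proof (rule linI)
  assume x: "x \<in> carrier G0"
  have xl: "lin S TM TM x" using x by (simp add: G0_car)
  show "\<And>y. y \<in> mcar (restr_mod T0 G0 rho) \<Longrightarrow> Psi x y \<in> mcar (regmod T0)"
    using Psi_val_lin[OF x] by (simp add: T0_car)
  show "\<And>y. y \<notin> mcar (restr_mod T0 G0 rho) \<Longrightarrow> Psi x y = undefined" by (simp add: Psi_def)
  fix y y' assume y: "y \<in> mcar (restr_mod T0 G0 rho)" and y': "y' \<in> mcar (restr_mod T0 G0 rho)"
  have yl: "lin S TM TM y" "lin S TM TM y'" using y y' by (simp_all add: G0_car)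
  have yy: "y \<oplus>\<^bsub>G0\<^esub> y' \<in> carrier G0" using y y' by (simp add: TMm.ER.a_closed)
  show "Psi x (madd (restr_mod T0 G0 rho) y y') = madd (regmod T0) (Psi x y) (Psi x y')"
    using y y' yy unfolding restr_mod_simps regmod_simps Psi_def W.E_simps
    by (simp, intro restrict_ext) (simp add: G0_add_ev lin_add[OF xl] lin_closed[OF yl(1)] lin_closed[OF yl(2)] eps_add lin_closed[OF xl])
next
  fix a y assume a: "a \<in> carrier T0" and y: "y \<in> mcar (restr_mod T0 G0 rho)"
  assume x: "x \<in> carrier G0"
  have yl: "lin S TM TM y" using y by (simp add: G0_car)
  have al: "lin R W W a" using a by (simp add: T0_car)
  have ay: "rho a \<otimes>\<^bsub>G0\<^esub> y \<in> carrier G0" using a y by (simp add: TMm.ER.m_closed rho_car)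
  show "Psi x (msmul (restr_mod T0 G0 rho) a y) = msmul (regmod T0) a (Psi x y)"
    using y ay unfolding restr_mod_simps regmod_simps Psi_def W.E_simps
    by (simp, intro restrict_ext) (simp add: G0_mult_ev rho_tt al lin_closed[OF al])
qed

lemma Psi_add: "x \<in> carrier G0 \<Longrightarrow> x' \<in> carrier G0 \<Longrightarrow>
   Psi (x \<oplus>\<^bsub>G0\<^esub> x') = (\<lambda>y\<in>carrier G0. Psi x y \<oplus>\<^bsub>T0\<^esub> Psi x' y)"
proof (rule ext)
  fix y assume x: "x \<in> carrier G0" and x': "x' \<in> carrier G0"
  have xl: "lin S TM TM x" "lin S TM TM x'" using x x' by (simp_all add: G0_car)
  show "Psi (x \<oplus>\<^bsub>G0\<^esub> x') y = (\<lambda>y\<in>carrier G0. Psi x y \<oplus>\<^bsub>T0\<^esub> Psi x' y) y"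
  proof (cases "y \<in> carrier G0")
    case True
    then have yl: "lin S TM TM y" by (simp add: G0_car)
    show ?thesis using True unfolding Psi_def W.E_simps
      by (simp, intro restrict_ext) (simp add: G0_add_ev lin_closed[OF yl] eps_add lin_closed[OF xl(1)] lin_closed[OF xl(2)])
  next
    case False then show ?thesis by (simp add: Psi_def)
  qed
qed

lemma Psi_bimod: "s \<in> carrier G0 \<Longrightarrow> x \<in> carrier G0 \<Longrightarrow> r \<in> carrier T0 \<Longrightarrow>
   Psi (s \<otimes>\<^bsub>G0\<^esub> x \<otimes>\<^bsub>G0\<^esub> rho r) = (\<lambda>y\<in>carrier G0. Psi x (y \<otimes>\<^bsub>G0\<^esub> s) \<otimes>\<^bsub>T0\<^esub> r)"
proof (rule ext)
  fix y assume s: "s \<in> carrier G0" and x: "x \<in> carrier G0" and r: "r \<in> carrier T0"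
  have sl: "lin S TM TM s" and xl: "lin S TM TM x" using s x by (simp_all add: G0_car)
  have rl: "lin R W W r" using r by (simp add: T0_car)
  show "Psi (s \<otimes>\<^bsub>G0\<^esub> x \<otimes>\<^bsub>G0\<^esub> rho r) y = (\<lambda>y\<in>carrier G0. Psi x (y \<otimes>\<^bsub>G0\<^esub> s) \<otimes>\<^bsub>T0\<^esub> r) y"
  proof (cases "y \<in> carrier G0")
    case True
    then have yl: "lin S TM TM y" by (simp add: G0_car)
    have ys: "y \<otimes>\<^bsub>G0\<^esub> s \<in> carrier G0" using True s by (simp add: TMm.ER.m_closed)
    show ?thesis using True ys unfolding Psi_def W.E_simps
      by (simp, intro restrict_ext)
         (simp add: G0_mult_ev lin_closed[OF yl] lin_closed[OF sl] lin_closed[OF xl] eps_rho[OF rl])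
  next
    case False then show ?thesis by (simp add: Psi_def)
  qed
qed

lemma Psi_inj: "inj_on Psi (carrier G0)"
proof (rule inj_onI)
  fix x x' assume x: "x \<in> carrier G0" and x': "x' \<in> carrier G0" and e: "Psi x = Psi x'"
  have xl: "lin S TM TM x" "lin S TM TM x'" using x x' by (simp_all add: G0_car)
  show "x = x'"
  proof (rule G2[OF xl])
    fix w assume w: "w \<in> mcar W"
    let ?X = "x (tt (\<one>\<^bsub>S\<^esub>, w))" and ?X' = "x' (tt (\<one>\<^bsub>S\<^esub>, w))"
    have X: "?X \<in> mcar TM" "?X' \<in> mcar TM" using w xl by (simp_all add: lin_closed)
    have key: "\<And>z k. lin S TM TM z \<Longrightarrow> k < m \<Longrightarrow> z \<in> carrier G0 \<Longrightarrow>
        Psi z (Qm (cc k)) w = eps (msmul TM (cc k) (z (tt (\<one>\<^bsub>S\<^esub>, w))))"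
    proof -
      fix z k assume zl: "lin S TM TM z" and k: "k < m" and z: "z \<in> carrier G0"
      have "tt (cc k, w) = msmul TM (cc k) (tt (\<one>\<^bsub>S\<^esub>, w))" using w by (simp add: smul_tt phS_def)
      then show "Psi z (Qm (cc k)) w = eps (msmul TM (cc k) (z (tt (\<one>\<^bsub>S\<^esub>, w))))"
        using w k by (simp add: Psi_def Q_car central_cc Q_tt lin_smul[OF zl])
    qed
    have ek: "\<And>k. k < m \<Longrightarrow> eps (msmul TM (cc k) ?X) = eps (msmul TM (cc k) ?X')"
      using key[OF xl(1) _ x] key[OF xl(2) _ x'] e by metis
    have "?X = finprod (agrp TM) (\<lambda>k. tt (xk k, eps (msmul TM (cc k) ?X))) {..<m}" by (rule K2[OF X(1)])
    also have "\<dots> = finprod (agrp TM) (\<lambda>k. tt (xk k, eps (msmul TM (cc k) ?X'))) {..<m}"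
      using X ek by (intro T.finprod_cong') auto
    also have "\<dots> = ?X'" by (rule K2[OF X(2), symmetric])
    finally show "?X = ?X'" .
  qed
qed

lemma phi_finsum:
  assumes phi: "lin T0 (restr_mod T0 G0 rho) (regmod T0) \<phi>" and f: "f \<in> A \<rightarrow> carrier G0"
  shows "\<phi> (finsum G0 f A) = finsum T0 (\<lambda>a. \<phi> (f a)) A"
proof -
  have G1: "comm_group (agrp (restr_mod T0 G0 rho))" using TMm.ER.a_comm_group by (simp add: agrp_restr)
  have G2': "comm_group (agrp (regmod T0))" using W.ER.a_comm_group by (simp add: agrp_reg)
  have "\<phi> (finprod (agrp (restr_mod T0 G0 rho)) f A) = finprod (agrp (regmod T0)) (\<lambda>a. \<phi> (f a)) A"
    by (rule hom_finprod_gen[OF G1 G2' lin_hom[OF phi]]) (use f in simp)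
  then show ?thesis by (simp add: agrp_restr agrp_reg finsum_def)
qed

lemma Psi_surj:
  assumes phi: "lin T0 (restr_mod T0 G0 rho) (regmod T0) \<phi>"
  shows "\<exists>x\<in>carrier G0. Psi x = \<phi>"
proof -
  define \<tau> where "\<tau> j = \<phi> (Qm (cc j))" for j
  have \<tau>c: "\<And>j. j < m \<Longrightarrow> \<tau> j \<in> carrier T0"
    using lin_closed[OF phi] Q_car[OF central_cc] by (simp add: \<tau>_def)
  have \<tau>l: "\<And>j. j < m \<Longrightarrow> lin R W W (\<tau> j)" using \<tau>c by (simp add: T0_car)
  define x where "x = finsum G0 (\<lambda>j. Qm (xk j) \<otimes>\<^bsub>G0\<^esub> rho (\<tau> j)) {..<m}"
  have xfc: "(\<lambda>j. Qm (xk j) \<otimes>\<^bsub>G0\<^esub> rho (\<tau> j)) \<in> {..<m} \<rightarrow> carrier G0"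
    using \<tau>c by (auto intro!: TMm.ER.m_closed Q_car central_xk rho_car)
  have xc: "x \<in> carrier G0" unfolding x_def using xfc by (rule TMm.ER.finsum_closed)
  have "Psi x = \<phi>"
  proof (rule ext)
    fix y
    show "Psi x y = \<phi> y"
    proof (cases "y \<in> carrier G0")
      case False
      then show ?thesis using lin_extensional[OF phi, of y] by (simp add: Psi_def)
    next
      case True
      then have yl: "lin S TM TM y" by (simp add: G0_car)
      have Imm: "Im y \<in> mcar (freemod T0 m)" by (rule Im_mem[OF True])
      have Imc_c: "\<And>j. j < m \<Longrightarrow> Imc y j \<in> carrier T0" using Imc_lin[OF True] by (simp add: T0_car)
      have "\<phi> y = \<phi> (Pm (Im y))" using Pm_Im[OF True] by simp
      also have "\<dots> = finsum T0 (\<lambda>j. \<phi> (rho (Im y j) \<otimes>\<^bsub>G0\<^esub> Qm (cc j))) {..<m}"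
        by (simp add: Pm_val[OF Imm] phi_finsum[OF phi Pm_fc[OF Imm]])
      also have "\<dots> = finsum T0 (\<lambda>j. Imc y j \<otimes>\<^bsub>T0\<^esub> \<tau> j) {..<m}"
      proof (rule W.ER.finsum_cong')
        show "(\<lambda>j. Imc y j \<otimes>\<^bsub>T0\<^esub> \<tau> j) \<in> {..<m} \<rightarrow> carrier T0"
          using Imc_c \<tau>c by (auto intro!: W.ER.m_closed)
        fix j assume "j \<in> {..<m}"
        then have j: "j < m" by simp
        have "\<phi> (rho (Imc y j) \<otimes>\<^bsub>G0\<^esub> Qm (cc j)) = Imc y j \<otimes>\<^bsub>T0\<^esub> \<phi> (Qm (cc j))"
          using lin_smul[OF phi Imc_c[OF j], of "Qm (cc j)"] Q_car[OF central_cc[OF j]] by simp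
        then show "\<phi> (rho (Im y j) \<otimes>\<^bsub>G0\<^esub> Qm (cc j)) = Imc y j \<otimes>\<^bsub>T0\<^esub> \<tau> j"
          using j True by (simp add: Im_def \<tau>_def)
      qed simp
      finally have phiy: "\<phi> y = finsum T0 (\<lambda>j. Imc y j \<otimes>\<^bsub>T0\<^esub> \<tau> j) {..<m}" .
      have rhs_lin: "lin R W W (finsum T0 (\<lambda>j. Imc y j \<otimes>\<^bsub>T0\<^esub> \<tau> j) {..<m})"
        using W.ER.finsum_closed[of "\<lambda>j. Imc y j \<otimes>\<^bsub>T0\<^esub> \<tau> j" "{..<m}"] Imc_c \<tau>c
        by (auto simp: T0_car[symmetric] intro!: W.ER.m_closed)
      have "Psi x y = finsum T0 (\<lambda>j. Imc y j \<otimes>\<^bsub>T0\<^esub> \<tau> j) {..<m}"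
      proof (rule lin_ext[OF Psi_val_lin[OF xc True] rhs_lin])
        fix w assume w: "w \<in> mcar W"
        let ?Y = "y (tt (\<one>\<^bsub>S\<^esub>, w))"
        have Y: "?Y \<in> mcar TM" using w yl by (simp add: lin_closed)
        have QY: "\<And>j. j < m \<Longrightarrow> Qm (xk j) ?Y \<in> mcar TM"
          using lin_closed[OF Q_lin[OF central_xk] Y] by blast
        have RQY: "\<And>j. j < m \<Longrightarrow> rho (\<tau> j) (Qm (xk j) ?Y) \<in> mcar TM"
          using rho_closed[OF \<tau>l QY] by blast
        have TPY: "\<And>j. j < m \<Longrightarrow> \<tau> j (pij j ?Y) \<in> mcar W"
          using lin_closed[OF \<tau>l pij_closed[OF _ Y]] by blast
        have "Psi x y w = eps (x ?Y)" using True w by (simp add: Psi_def)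
        also have "x ?Y = finprod (agrp TM) (\<lambda>j. rho (\<tau> j) (Qm (xk j) ?Y)) {..<m}"
          unfolding x_def using xfc Y by (simp add: finsum_G0_ev G0_mult_ev)
        also have "eps (finprod (agrp TM) (\<lambda>j. rho (\<tau> j) (Qm (xk j) ?Y)) {..<m}) =
            finprod (agrp W) (\<lambda>j. eps (rho (\<tau> j) (Qm (xk j) ?Y))) {..<m}"
          by (rule hom_finprod_gen[OF T.comm_group_axioms W.G.comm_group_axioms eps_hom]) (simp add: RQY)
        also have "\<dots> = finprod (agrp W) (\<lambda>j. \<tau> j (pij j ?Y)) {..<m}"
        proof (rule W.G.finprod_cong')
          show "(\<lambda>j. \<tau> j (pij j ?Y)) \<in> {..<m} \<rightarrow> carrier (agrp W)" using TPY by simp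
          fix j assume "j \<in> {..<m}"
          then have j: "j < m" by simp
          show "eps (rho (\<tau> j) (Qm (xk j) ?Y)) = \<tau> j (pij j ?Y)"
            using eps_rho[OF \<tau>l[OF j] QY[OF j]] eps_Q[OF j Y] by simp
        qed simp
        also have "\<dots> = finprod (agrp W) (\<lambda>j. (Imc y j \<otimes>\<^bsub>T0\<^esub> \<tau> j) w) {..<m}"
        proof (rule W.G.finprod_cong')
          show "(\<lambda>j. (Imc y j \<otimes>\<^bsub>T0\<^esub> \<tau> j) w) \<in> {..<m} \<rightarrow> carrier (agrp W)"
            using TPY w by (simp add: T0_mult_ev Imc_def)
          fix j assume "j \<in> {..<m}"
          show "\<tau> j (pij j ?Y) = (Imc y j \<otimes>\<^bsub>T0\<^esub> \<tau> j) w" using w by (simp add: T0_mult_ev Imc_def)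
        qed simp
        also have "\<dots> = finsum T0 (\<lambda>j. Imc y j \<otimes>\<^bsub>T0\<^esub> \<tau> j) {..<m} w"
          by (rule W.E_finsum_eval[symmetric]) (use w Imc_c \<tau>c W.ER.m_closed in auto)
        finally show "Psi x y w = finsum T0 (\<lambda>j. Imc y j \<otimes>\<^bsub>T0\<^esub> \<tau> j) {..<m} w" .
      qed
      then show ?thesis using phiy by simp
    qed
  qed
  then show ?thesis using xc by blast
qed

lemma frob_G: "frobenius_ext T0 G0 rho"
  unfolding frobenius_ext_def
proof (intro conjI exI[of _ Psi])
  show "ring T0" by (rule T0_ring)
  show "ring G0" by (rule G0_ring)
  show "rho \<in> ring_hom T0 G0" by (rule rho_ring_hom)
  show "fg_proj T0 (restr_mod T0 G0 rho)" by (rule fg_proj_G)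
  show "bij_betw Psi (carrier G0) {\<phi>. lin T0 (restr_mod T0 G0 rho) (regmod T0) \<phi>}"
    unfolding bij_betw_def
  proof
    show "inj_on Psi (carrier G0)" by (rule Psi_inj)
    show "Psi ` carrier G0 = {\<phi>. lin T0 (restr_mod T0 G0 rho) (regmod T0) \<phi>}"
      using Psi_mem Psi_surj by blast
  qed
  show "\<forall>x\<in>carrier G0. \<forall>y\<in>carrier G0. Psi (x \<oplus>\<^bsub>G0\<^esub> y) = (\<lambda>z\<in>carrier G0. Psi x z \<oplus>\<^bsub>T0\<^esub> Psi y z)"
    by (simp add: Psi_add)
  show "\<forall>s\<in>carrier G0. \<forall>x\<in>carrier G0. \<forall>r\<in>carrier T0.
      Psi (s \<otimes>\<^bsub>G0\<^esub> x \<otimes>\<^bsub>G0\<^esub> rho r) = (\<lambda>y\<in>carrier G0. Psi x (y \<otimes>\<^bsub>G0\<^esub> s) \<otimes>\<^bsub>T0\<^esub> r)"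
    by (simp add: Psi_bimod)
qed

end


theorem theorem3p5:
  fixes R :: "'r ring" and S :: "'s ring" and l :: "'r \<Rightarrow> 's"
    and \<omega> :: "('r, 'w) lmod"
    and k :: nat and P :: "nat \<Rightarrow> ('w \<Rightarrow> 'w, 'p) lmod"
    and d :: "nat \<Rightarrow> 'p \<Rightarrow> 'p" and \<epsilon> :: "'p \<Rightarrow> 'w"
  assumes "two_sided_noetherian R" and "two_sided_noetherian S"
    and "frobenius_ext R S l"
    and "centrally_projective R S l"
    and "wakamatsu_tilting R \<omega>"
    and "pd_le (opring (endring R \<omega>)) (right_end_mod R \<omega>) k P d \<epsilon>"
  shows "frobenius_ext (endring R \<omega>) (endring S (tensor_mod R S l \<omega>)) (tensor_rho R S l \<omega>)"
proof -
  from assms(3) obtain \<psi> where rR: "ring R" and rS: "ring S" and lh: "l \<in> ring_hom R S"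
    and pb: "bij_betw \<psi> (carrier S) {\<phi>. lin R (restr_mod R S l) (regmod R) \<phi>}"
    and pm: "\<forall>s\<in>carrier S. \<forall>x\<in>carrier S. \<forall>r\<in>carrier R.
            \<psi> (s \<otimes>\<^bsub>S\<^esub> x \<otimes>\<^bsub>S\<^esub> l r) = (\<lambda>y\<in>carrier S. \<psi> x (y \<otimes>\<^bsub>S\<^esub> s) \<otimes>\<^bsub>R\<^esub> r)"
    unfolding frobenius_ext_def by blast
  from assms(4) obtain n p i where
    cp: "lin R (freemod R n) (restr_mod R S l) p" "lin R (restr_mod R S l) (freemod R n) i"
      "\<forall>v\<in>mcar (freemod R n). \<forall>r\<in>carrier R. p (freemod_rsmul R n v r) = p v \<otimes>\<^bsub>S\<^esub> l r"
      "\<forall>x\<in>carrier S. \<forall>r\<in>carrier R. i (x \<otimes>\<^bsub>S\<^esub> l r) = freemod_rsmul R n (i x) r"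
      "\<forall>x\<in>carrier S. p (i x) = x"
    unfolding centrally_projective_def by blast
  have wm: "is_lmod R \<omega>" using assms(5) by (simp add: wakamatsu_tilting_def)
  interpret frs R S l \<omega> \<psi> n p i
    by (intro frs.intro tens.intro frs_axioms.intro rS lh wm rR pb) (use pm cp in auto)
  show ?thesis by (rule frob_G)
qed


end
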